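(* Let $\mathcal A$ be a finite alphabet. For each type $\diamond\in\{0,*,\omega,\infty\}$ take the monad $T$, endofunctor $F$ on $\mathbf{Meas}$ and measurable space $\Omega$ as follows: type $0$: $T=\mathbb S$, $F=\mathcal A\times\mathrm{Id}$, $\Omega=(\emptyset,\{\emptyset\})$; type $*$: $T=\mathbb S$, $F=\mathcal A\times\mathrm{Id}+\mathbf 1$, $\Omega=(\mathcal A^*,\sigma(\mathcal S_* ))$; type $\omega$: $T=\mathbb P$, $F=\mathcal A\times\mathrm{Id}$, $\Omega=(\mathcal A^\omega,\sigma(\mathcal S_\omega))$; type $\infty$: $T=\mathbb P$, $F=\mathcal A\times\mathrm{Id}+\mathbf 1$, $\Omega=(\mathcal A^\infty,\sigma(\mathcal S_\infty))$. Let $\overline F$ be the lifting of $F$ to $\mathcal{K}\ell(T)$ induced by the distributive law $\lambda$ below, and let $\kappa=\eta_{F\Omega}\circ\phi$, where for $\diamond\in\{*,\omega,\infty\}$, $\phi$ is the restriction of $\phi:\mathcal A^\infty\to\mathcal A\times\mathcal A^\infty+\mathbf 1$, $\epsilon\mapsto\checkmark$, $au\mapsto(a,u)$ to $\Omega$ (with codomain $\phi(\Omega)=F\Omega$), and for $\diamond=0$, $\phi:\emptyset\to\mathcal A\times\emptyset$ is the empty function. Then $(\Omega,\kappa)$ is a final $\overline F$-coalgebra in $\mathcal{K}\ell(T)$. Moreover, a $\diamond$-PTS $(\mathcal A,X,\alpha)$ is exactly an $\overline F$-coalgebra $(X,\alpha)$ in $\mathcal{K}\ell(T)$, and the unique $\overline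 F$-coalgebra homomorphism from $(X,\alpha)$ to $(\Omega,\kappa)$ is the trace map $\mathbf{tr}:X\to T\Omega$, $x\mapsto\mathbf{tr}(x)$ (the unique extension to $\sigma(\mathcal S_\diamond)$ of the trace pre-measure defined in the context).
   Context: $\mathbf{Meas}$ is the category of measurable spaces and measurable maps. $\mathbf 1=\{\checkmark\}$. Products $X\times Y$ carry the product $\sigma$-algebra, disjoint unions $X+Y$ carry $\{S_X+S_Y: S_X\in\Sigma_X,S_Y\in\Sigma_Y\}$; $\mathcal A$ carries $\mathcal P(\mathcal A)$. For a measurable space $X$, $\mathbb S(X)$ (resp. $\mathbb P(X)$) is the set of sub-probability (resp. probability) measures on $\Sigma_X$, with the smallest $\sigma$-algebra making all evaluation maps $p_S(P)=P(S)$, $S\in\Sigma_X$, Borel measurable; for measurable $f$, $T(f)(P)=P\circ f^{-1}$. Unit $\eta_X(x)=\delta_x$ (Dirac measure), multiplication $\mu_X(P)(S)=\int p_S\,dP$. The Kleisli category $\mathcal{K}\ell(T)$ has measurable spaces as objects, arrows $X\to Y$ are measurable maps $X\to TY$, composition $g\circ_T f=\mu_Z\circ T(g)\circ f$, identities $\eta_X$. Given a distributive law $\lambda:FT\Rightarrow TF$, the lifting $\overline F$ acts as $F$ on objects and as $\overline F(f)=\lambda_Y\circ F(f)$ on Kleisli arrows $f:X\to TY$. An $\overline F$-coalgebra is $(X,\alpha)$ with $\alpha:X\to TFX$ measurable; a homomorphism $(X,\alpha)\to(Y,\beta)$ is a Kleisli arrow $h$ with $\beta\circ_T h=\overline F(h)\circ_T\alpha$;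 final means every coalgebra has exactly one homomorphism into it. The distributive laws: for $F=\mathcal A\times\mathrm{Id}$, $\lambda_X(a,P)=\delta_a\otimes P$ (product measure); for $F=\mathcal A\times\mathrm{Id}+\mathbf 1$, $\lambda_X(a,P)=\delta_a\odot P$ where $(\delta_a\odot P)(S)=(\delta_a\otimes P)(S\cap(\mathcal A\times X))$, and $\lambda_X(\checkmark)=\delta_\checkmark$. Words: $\mathcal A^*$ finite words, $\mathcal A^\omega$ infinite words, $\mathcal A^\infty=\mathcal A^*\cup\mathcal A^\omega$, $\sqsubseteq$ the prefix relation. For $u\in\mathcal A^*$: $C_\omega(u)=\{v\in\mathcal A^\omega:u\sqsubseteq v\}$, $C_\infty(u)=\{v\in\mathcal A^\infty:u\sqsubseteq v\}$. $\mathcal S_0=\{\emptyset\}$, $\mathcal S_*=\{\emptyset\}\cup\{\{u\}:u\in\mathcal A^*\}$, $\mathcal S_\omega=\{\emptyset\}\cup\{C_\omega(u):u\in\mathcal A^*\}$, $\mathcal S_\infty=\{\emptyset\}\cup\{\{u\}:u\in\mathcal A^*\}\cup\{C_\infty(u):u\in\mathcal A^*\}$. A PTS of type $\diamond$ is $(\mathcal A,X,\alpha)$ with $X$ a measurable space and $\alpha$ a measurable map $X\to\mathbb S(\mathcal A\times X)$ (type $0$), $X\to\mathbb S(\mathcal A\times X+\mathbf 1)$ (type $*$), $X\to\mathbb P(\mathcal A\times X)$ (type $\omega$), $X\to\mathbb P(\mathcal A\times X+\mathbf 1)$ (type $\infty$). Put $\mathbf P_a(x,S)=\alpha(x)(\{a\}\times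 S)$. The trace pre-measure $\mathbf{tr}(x):\mathcal S_\diamond\to[0,1]$ is defined by $\mathbf{tr}(x)(\emptyset)=0$; for $\diamond\in\{*,\infty\}$: $\mathbf{tr}(x)(\{\epsilon\})=\alpha(x)(\mathbf 1)$ and $\mathbf{tr}(x)(\{au\})=\int_{x'\in X}\mathbf{tr}(x')(\{u\})\,d\mathbf P_a(x,x')$; for $\diamond\in\{\omega,\infty\}$: $\mathbf{tr}(x)(C_\diamond(\epsilon))=1$ and $\mathbf{tr}(x)(C_\diamond(au))=\int_{x'\in X}\mathbf{tr}(x')(C_\diamond(u))\,d\mathbf P_a(x,x')$, for all $a\in\mathcal A,u\in\mathcal A^*$. *)

theory Defs
  imports "HOL-Probability.Probability" "HOL-Library.Stream"
begin

definition SP :: "'a measure \<Rightarrow> 'a measure measure" where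
  "SP K = (SUP A \<in> sets K. vimage_algebra
      {M. sets M = sets K \<and> emeasure M (space M) \<le> 1} (\<lambda>M. emeasure M A) borel)"

definition PP :: "'a measure \<Rightarrow> 'a measure measure" where
  "PP K = (SUP A \<in> sets K. vimage_algebra
      {M. sets M = sets K \<and> emeasure M (space M) = 1} (\<lambda>M. emeasure M A) borel)"

definition kmu :: "'c measure \<Rightarrow> 'c measure measure \<Rightarrow> 'c measure" where
  "kmu Z Q = measure_of (space Z) (sets Z) (\<lambda>S. \<integral>\<^sup>+ M. emeasure M S \<partial>Q)"

text \<open>Kleisli composition g o_T f = mu_Z o T(g) o f, with T(g)(P) = P o g^{-1};
  TZ is the measurable space T Z.\<close>
definition kcomp :: "'c measure measure \<Rightarrow> 'c measure \<Rightarrow> ('b \<Rightarrow> 'c measure)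
    \<Rightarrow> ('a \<Rightarrow> 'b measure) \<Rightarrow> 'a \<Rightarrow> 'c measure" where
  "kcomp TZ Z g f = (\<lambda>x. kmu Z (distr (f x) TZ g))"

abbreviation Alph :: "'a measure" where "Alph \<equiv> count_space UNIV"

definition sum_meas :: "'a measure \<Rightarrow> 'b measure \<Rightarrow> ('a + 'b) measure" where
  "sum_meas M N = measure_of (Inl ` space M \<union> Inr ` space N)
     {Inl ` A \<union> Inr ` B | A B. A \<in> sets M \<and> B \<in> sets N} (\<lambda>_. 0)"

text \<open>The one-point space 1 = {check}, represented by unit.\<close>
abbreviation One :: "unit measure" where "One \<equiv> count_space UNIV"

definition Fp :: "'x measure \<Rightarrow> ('a::finite \<times> 'x) measure" where
  "Fp X = Alph \<Otimes>\<^sub>M X"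

definition Fs :: "'x measure \<Rightarrow> (('a::finite \<times> 'x) + unit) measure" where
  "Fs X = sum_meas (Alph \<Otimes>\<^sub>M X) One"

definition lam_p :: "'a::finite \<times> 'y measure \<Rightarrow> ('a \<times> 'y) measure" where
  "lam_p p = return Alph (fst p) \<Otimes>\<^sub>M snd p"

definition Fmap_p :: "('x \<Rightarrow> 'z) \<Rightarrow> 'a \<times> 'x \<Rightarrow> 'a \<times> 'z" where
  "Fmap_p h p = (fst p, h (snd p))"

definition lift_p :: "('x \<Rightarrow> 'y measure) \<Rightarrow> ('a::finite \<times> 'x) \<Rightarrow> ('a \<times> 'y) measure" where
  "lift_p h = (\<lambda>p. lam_p (Fmap_p h p))"

definition lam_s :: "'y measure \<Rightarrow> ('a::finite \<times> 'y measure) + unit \<Rightarrow> (('a \<times> 'y) + unit) measure" where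
  "lam_s Y q = (case q of
      Inl p \<Rightarrow> distr (return Alph (fst p) \<Otimes>\<^sub>M snd p) (Fs Y) Inl
    | Inr _ \<Rightarrow> return (Fs Y) (Inr ()))"

definition Fmap_s :: "('x \<Rightarrow> 'z) \<Rightarrow> ('a \<times> 'x) + unit \<Rightarrow> ('a \<times> 'z) + unit" where
  "Fmap_s h q = (case q of Inl p \<Rightarrow> Inl (fst p, h (snd p)) | Inr u \<Rightarrow> Inr u)"

definition lift_s :: "'y measure \<Rightarrow> ('x \<Rightarrow> 'y measure) \<Rightarrow> (('a::finite \<times> 'x) + unit) \<Rightarrow> (('a \<times> 'y) + unit) measure" where
  "lift_s Y h = (\<lambda>q. lam_s Y (Fmap_s h q))"

text \<open>TY = T Y, FY = F Y, TFY = T (F Y), lift = the lifting of F applied to arrows into Y.\<close>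
definition is_hom :: "'y measure measure \<Rightarrow> 'fy measure \<Rightarrow> 'fy measure measure
    \<Rightarrow> (('x \<Rightarrow> 'y measure) \<Rightarrow> 'fx \<Rightarrow> 'fy measure)
    \<Rightarrow> 'x measure \<Rightarrow> ('x \<Rightarrow> 'fx measure) \<Rightarrow> ('y \<Rightarrow> 'fy measure) \<Rightarrow> ('x \<Rightarrow> 'y measure) \<Rightarrow> bool" where
  "is_hom TY FY TFY lift X \<alpha> \<beta> h \<longleftrightarrow>
     h \<in> measurable X TY \<and>
     (\<forall>x\<in>space X. kcomp TFY FY \<beta> h x = kcomp TFY FY (lift h) \<alpha> x)"

datatype 'a iword = Fin "'a list" | Inf "'a stream"

definition prefix_s :: "'a list \<Rightarrow> 'a stream \<Rightarrow> bool" where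
  "prefix_s u v \<longleftrightarrow> stake (length u) v = u"

fun prefix_i :: "'a list \<Rightarrow> 'a iword \<Rightarrow> bool" where
  "prefix_i u (Fin w) \<longleftrightarrow> prefix u w"
| "prefix_i u (Inf s) \<longleftrightarrow> prefix_s u s"

definition C_omega :: "'a list \<Rightarrow> 'a stream set" where
  "C_omega u = {v. prefix_s u v}"

definition C_inf :: "'a list \<Rightarrow> 'a iword set" where
  "C_inf u = {v. prefix_i u v}"

definition S_star :: "'a list set set" where
  "S_star = {{}} \<union> {{u} | u. True}"

definition S_omega :: "'a stream set set" where
  "S_omega = {{}} \<union> {C_omega u | u. True}"

definition S_inf :: "'a iword set set" where
  "S_inf = {{}} \<union> {{Fin u} | u. True} \<union> {C_inf u | u. True}"

text \<open>Type 0: the empty measurable space (carrier type unit, empty space).\<close>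
definition Omega0 :: "unit measure" where "Omega0 = sigma {} {{}}"
definition Omega_star :: "'a list measure" where "Omega_star = sigma UNIV S_star"
definition Omega_omega :: "'a stream measure" where "Omega_omega = sigma UNIV S_omega"
definition Omega_inf :: "'a iword measure" where "Omega_inf = sigma UNIV S_inf"

definition phi0 :: "unit \<Rightarrow> 'a \<times> unit" where "phi0 = (\<lambda>_. undefined)"

fun phi_star :: "'a list \<Rightarrow> ('a \<times> 'a list) + unit" where
  "phi_star [] = Inr ()"
| "phi_star (a # u) = Inl (a, u)"

definition phi_omega :: "'a stream \<Rightarrow> 'a \<times> 'a stream" where
  "phi_omega s = (shd s, stl s)"

fun phi_inf :: "'a iword \<Rightarrow> ('a \<times> 'a iword) + unit" where
  "phi_inf (Fin []) = Inr ()"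
| "phi_inf (Fin (a # u)) = Inl (a, Fin u)"
| "phi_inf (Inf s) = Inl (shd s, Inf (stl s))"

definition kappa0 :: "unit \<Rightarrow> ('a::finite \<times> unit) measure" where
  "kappa0 w = return (Fp Omega0) (phi0 w)"
definition kappa_star :: "'a::finite list \<Rightarrow> (('a \<times> 'a list) + unit) measure" where
  "kappa_star w = return (Fs Omega_star) (phi_star w)"
definition kappa_omega :: "'a::finite stream \<Rightarrow> ('a \<times> 'a stream) measure" where
  "kappa_omega w = return (Fp Omega_omega) (phi_omega w)"
definition kappa_inf :: "'a::finite iword \<Rightarrow> (('a \<times> 'a iword) + unit) measure" where
  "kappa_inf w = return (Fs Omega_inf) (phi_inf w)"

definition Pa_p :: "'x measure \<Rightarrow> ('x \<Rightarrow> ('a \<times> 'x) measure) \<Rightarrow> 'a \<Rightarrow> 'x \<Rightarrow> 'x measure" where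
  "Pa_p X \<alpha> a x = measure_of (space X) (sets X) (\<lambda>S. emeasure (\<alpha> x) ({a} \<times> S))"

definition Pa_s :: "'x measure \<Rightarrow> ('x \<Rightarrow> (('a \<times> 'x) + unit) measure) \<Rightarrow> 'a \<Rightarrow> 'x \<Rightarrow> 'x measure" where
  "Pa_s X \<alpha> a x = measure_of (space X) (sets X) (\<lambda>S. emeasure (\<alpha> x) (Inl ` ({a} \<times> S)))"

text \<open>tr(x)({u}) for types * and infinity.\<close>
primrec tr_single :: "'x measure \<Rightarrow> ('x \<Rightarrow> (('a \<times> 'x) + unit) measure) \<Rightarrow> 'a list \<Rightarrow> 'x \<Rightarrow> ennreal" where
  "tr_single X \<alpha> [] x = emeasure (\<alpha> x) {Inr ()}"
| "tr_single X \<alpha> (a # u) x = (\<integral>\<^sup>+ x'. tr_single X \<alpha> u x' \<partial>(Pa_s X \<alpha> a x))"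

text \<open>tr(x)(C(u)) for type omega.\<close>
primrec tr_cyl_p :: "'x measure \<Rightarrow> ('x \<Rightarrow> ('a \<times> 'x) measure) \<Rightarrow> 'a list \<Rightarrow> 'x \<Rightarrow> ennreal" where
  "tr_cyl_p X \<alpha> [] x = 1"
| "tr_cyl_p X \<alpha> (a # u) x = (\<integral>\<^sup>+ x'. tr_cyl_p X \<alpha> u x' \<partial>(Pa_p X \<alpha> a x))"

text \<open>tr(x)(C(u)) for type infinity.\<close>
primrec tr_cyl_s :: "'x measure \<Rightarrow> ('x \<Rightarrow> (('a \<times> 'x) + unit) measure) \<Rightarrow> 'a list \<Rightarrow> 'x \<Rightarrow> ennreal" where
  "tr_cyl_s X \<alpha> [] x = 1"
| "tr_cyl_s X \<alpha> (a # u) x = (\<integral>\<^sup>+ x'. tr_cyl_s X \<alpha> u x' \<partial>(Pa_s X \<alpha> a x))"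

end

theory Submission
  imports Defs
begin

lemma space_SP: "space (SP K) = {M. sets M = sets K \<and> emeasure M (space M) \<le> 1}"
  unfolding SP_def by (subst space_Sup_eq_UN) auto

lemma space_PP: "space (PP K) = {M. sets M = sets K \<and> emeasure M (space M) = 1}"
  unfolding PP_def by (subst space_Sup_eq_UN) auto

lemma SP_eq: assumes "space K \<noteq> {}" shows "SP K = subprob_algebra K"
proof -
  have "{M. sets M = sets K \<and> emeasure M (space M) \<le> 1} = {M. subprob_space M \<and> sets M = sets K}"
    using assms by (auto dest: sets_eq_imp_space_eq subprob_space.emeasure_space_le_1 intro!: subprob_spaceI)
  then show ?thesis unfolding SP_def subprob_algebra_def by simp
qed

lemma space_PP': "space (PP K) = space (prob_algebra K)"
  unfolding space_PP space_prob_algebra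
  by (auto intro: prob_spaceI dest: prob_space.emeasure_space_1)

lemma id_PP1: "(\<lambda>x. x) \<in> measurable (PP K) (prob_algebra K)"
proof (rule measurable_prob_algebraI)
  fix x assume "x \<in> space (PP K)" then show "prob_space x"
    by (auto simp: space_PP intro: prob_spaceI)
next
  show "(\<lambda>x. x) \<in> measurable (PP K) (subprob_algebra K)"
  proof (rule measurable_subprob_algebra)
    fix a assume "a \<in> space (PP K)" then show "subprob_space a" "sets a = sets K"
      by (auto simp: space_PP intro!: subprob_spaceI dest: sets_eq_imp_space_eq)
  next
    fix A assume A: "A \<in> sets K"
    show "(\<lambda>a. emeasure a A) \<in> borel_measurable (PP K)"
      unfolding PP_def
      by (rule measurable_Sup1[where m="vimage_algebra {M. sets M = sets K \<and> emeasure M (space M) = 1} (\<lambda>M. emeasure M A) borel"])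
         (use A in \<open>auto intro!: measurable_vimage_algebra1\<close>)
  qed
qed

lemma id_PP2: "(\<lambda>x. x) \<in> measurable (prob_algebra K) (PP K)"
  unfolding PP_def
proof (rule measurable_Sup2)
  fix m assume "m \<in> (\<lambda>A. vimage_algebra {M. sets M = sets K \<and> emeasure M (space M) = 1} (\<lambda>M. emeasure M A) borel) ` sets K"
  then obtain A where A: "A \<in> sets K" and m: "m = vimage_algebra {M. sets M = sets K \<and> emeasure M (space M) = 1} (\<lambda>M. emeasure M A) borel" by auto
  show "(\<lambda>x. x) \<in> measurable (prob_algebra K) m" unfolding m
  proof (rule measurable_vimage_algebra2)
    show "(\<lambda>x. x) \<in> space (prob_algebra K) \<rightarrow> {M. sets M = sets K \<and> emeasure M (space M) = 1}"
      by (auto simp: space_prob_algebra dest: prob_space.emeasure_space_1)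
    show "(\<lambda>x. emeasure x A) \<in> borel_measurable (prob_algebra K)"
      unfolding prob_algebra_def using A by (intro measurable_restrict_space1) measurable
  qed
qed auto

lemma sets_PP: "sets (PP K) = sets (prob_algebra K)"
proof -
  have sp: "space (PP K) = space (prob_algebra K)" by (rule space_PP')
  show ?thesis
  proof
    show "sets (PP K) \<subseteq> sets (prob_algebra K)"
    proof
      fix A assume "A \<in> sets (PP K)"
      with measurable_sets[OF id_PP2 this] sets.sets_into_space[OF this] sp
      show "A \<in> sets (prob_algebra K)" by (simp add: Int_absorb2)
    qed
    show "sets (prob_algebra K) \<subseteq> sets (PP K)"
    proof
      fix A assume "A \<in> sets (prob_algebra K)"
      with measurable_sets[OF id_PP1 this] sets.sets_into_space[OF this] sp
      show "A \<in> sets (PP K)" by (simp add: Int_absorb2)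
    qed
  qed
qed

lemma measurable_PP: "measurable M (PP K) = measurable M (prob_algebra K)"
  by (rule measurable_cong_sets[OF refl sets_PP])


section \<open>Sum of measurable spaces\<close>

lemma sum_meas_closed:
  "{Inl ` A \<union> Inr ` B | A B. A \<in> sets M \<and> B \<in> sets N} \<subseteq> Pow (Inl ` space M \<union> Inr ` space N)"
proof
  fix S assume "S \<in> {Inl ` A \<union> Inr ` B | A B. A \<in> sets M \<and> B \<in> sets N}"
  then obtain A B where "S = Inl ` A \<union> Inr ` B" "A \<in> sets M" "B \<in> sets N" by blast
  then show "S \<in> Pow (Inl ` space M \<union> Inr ` space N)"
    using sets.sets_into_space[of A M] sets.sets_into_space[of B N] by blast
qed

lemma space_sum_meas: "space (sum_meas M N) = Inl ` space M \<union> Inr ` space N"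
  unfolding sum_meas_def using sum_meas_closed by (rule space_measure_of)

lemma sets_sum_meas: "sets (sum_meas M N) = sigma_sets (Inl ` space M \<union> Inr ` space N)
     {Inl ` A \<union> Inr ` B | A B. A \<in> sets M \<and> B \<in> sets N}"
  unfolding sum_meas_def using sum_meas_closed by (rule sets_measure_of)

lemma sum_measI: "A \<in> sets M \<Longrightarrow> B \<in> sets N \<Longrightarrow> Inl ` A \<union> Inr ` B \<in> sets (sum_meas M N)"
  unfolding sets_sum_meas by (rule sigma_sets.Basic) blast

lemma sum_measI1: "A \<in> sets M \<Longrightarrow> Inl ` A \<in> sets (sum_meas M N)"
  using sum_measI[of A M "{}" N] by simp

lemma sum_measI2: "B \<in> sets N \<Longrightarrow> Inr ` B \<in> sets (sum_meas M N)"
  using sum_measI[of "{}" M B N] by simp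

lemma measurable_sum_meas1:
  assumes f: "(\<lambda>x. f (Inl x)) \<in> measurable M K" and g: "(\<lambda>x. f (Inr x)) \<in> measurable N K"
  shows "f \<in> measurable (sum_meas M N) K"
  unfolding measurable_def
proof (intro CollectI conjI ballI)
  show "f \<in> space (sum_meas M N) \<rightarrow> space K"
    using measurable_space[OF f] measurable_space[OF g] by (auto simp: space_sum_meas)
  fix B assume B: "B \<in> sets K"
  have "f -` B \<inter> space (sum_meas M N) =
      Inl ` ((\<lambda>x. f (Inl x)) -` B \<inter> space M) \<union> Inr ` ((\<lambda>x. f (Inr x)) -` B \<inter> space N)"
    by (auto simp: space_sum_meas)
  also have "\<dots> \<in> sets (sum_meas M N)"
    by (intro sum_measI measurable_sets[OF f B] measurable_sets[OF g B])
  finally show "f -` B \<inter> space (sum_meas M N) \<in> sets (sum_meas M N)" .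
qed

lemma measurable_sum_meas2:
  assumes sp: "f \<in> space K \<rightarrow> Inl ` space M \<union> Inr ` space N"
    and pre: "\<And>A B. A \<in> sets M \<Longrightarrow> B \<in> sets N \<Longrightarrow> f -` (Inl ` A \<union> Inr ` B) \<inter> space K \<in> sets K"
  shows "f \<in> measurable K (sum_meas M N)"
  unfolding sum_meas_def by (rule measurable_measure_of[OF sum_meas_closed sp]) (auto intro: pre)

lemma measurable_Inl_sum[measurable]: "Inl \<in> measurable M (sum_meas M N)"
proof (rule measurable_sum_meas2)
  fix A B assume "A \<in> sets M" "B \<in> sets N"
  moreover have "Inl -` (Inl ` A \<union> Inr ` B) \<inter> space M = A \<inter> space M" by auto
  ultimately show "Inl -` (Inl ` A \<union> Inr ` B) \<inter> space M \<in> sets M" by auto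
qed auto

lemma measurable_Inr_sum[measurable]: "Inr \<in> measurable N (sum_meas M N)"
proof (rule measurable_sum_meas2)
  fix A B assume "A \<in> sets M" "B \<in> sets N"
  moreover have "Inr -` (Inl ` A \<union> Inr ` B) \<inter> space N = B \<inter> space N" by auto
  ultimately show "Inr -` (Inl ` A \<union> Inr ` B) \<inter> space N \<in> sets N" by auto
qed auto

lemma space_Fs: "space (Fs X) = Inl ` (UNIV \<times> space X) \<union> Inr ` UNIV"
  unfolding Fs_def space_sum_meas by (simp add: space_pair_measure)

lemma space_Fp: "space (Fp X) = UNIV \<times> space X"
  unfolding Fp_def by (simp add: space_pair_measure)

section \<open>Kleisli composition\<close>

lemma kmu_distr:
  assumes g: "g \<in> measurable M T"
    and em: "\<And>S. S \<in> sets Z \<Longrightarrow> (\<lambda>N. emeasure N S) \<in> borel_measurable T"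
  shows "kmu Z (distr M T g) = measure_of (space Z) (sets Z) (\<lambda>S. \<integral>\<^sup>+ y. emeasure (g y) S \<partial>M)"
  unfolding kmu_def
  by (rule measure_of_eq[OF sets.space_closed])
     (simp add: sets.sigma_sets_eq nn_integral_distr[OF g] em)

lemma kcomp_bind:
  assumes g: "g \<in> measurable (f x) T" and g': "g \<in> measurable (f x) (subprob_algebra Z)"
    and em: "\<And>S. S \<in> sets Z \<Longrightarrow> (\<lambda>N. emeasure N S) \<in> borel_measurable T"
    and ne: "space (f x) \<noteq> {}"
  shows "kcomp T Z g f x = bind (f x) g"
proof -
  have "bind (f x) g = join (distr (f x) (subprob_algebra Z) g)"
    by (rule bind_nonempty''[OF g' ne])
  also have "\<dots> = kmu Z (distr (f x) (subprob_algebra Z) g)"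
    unfolding join_def kmu_def by simp
  also have "\<dots> = kcomp T Z g f x"
    unfolding kcomp_def using kmu_distr[OF g em] kmu_distr[OF g' measurable_emeasure_subprob_algebra] by simp
  finally show ?thesis ..
qed

lemma measurable_PP1: "measurable (PP K) M = measurable (prob_algebra K) M"
  by (rule measurable_cong_sets[OF sets_PP refl])

lemma em_PP: "S \<in> sets Z \<Longrightarrow> (\<lambda>N. emeasure N S) \<in> borel_measurable (PP Z)"
  unfolding measurable_PP1 prob_algebra_def
  by (intro measurable_restrict_space1) measurable

lemma em_SP: "space Z \<noteq> {} \<Longrightarrow> S \<in> sets Z \<Longrightarrow> (\<lambda>N. emeasure N S) \<in> borel_measurable (SP Z)"
  by (simp add: SP_eq)

lemma Pa_p_conv:
  assumes ax: "sets (\<alpha> x) = sets (Fp X)" and f: "f \<in> borel_measurable X"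
  shows "(\<integral>\<^sup>+ y. f y \<partial>Pa_p X \<alpha> a x) = (\<integral>\<^sup>+ p. indicator {a} (fst p) * f (snd p) \<partial>\<alpha> x)"
proof -
  let ?D = "density (\<alpha> x) (\<lambda>p. indicator {a} (fst p))"
  have spx: "space (\<alpha> x) = UNIV \<times> space X"
    using sets_eq_imp_space_eq[OF ax] by (simp add: space_Fp)
  have ms: "measurable (\<alpha> x) = measurable (Fp X)" "measurable K (\<alpha> x) = measurable K (Fp X)" for K
    using ax by (auto intro!: measurable_cong_sets)
  have snd: "snd \<in> measurable (\<alpha> x) X" unfolding ms Fp_def by measurable
  have ind: "(\<lambda>p. indicator {a} (fst p) :: ennreal) \<in> borel_measurable (\<alpha> x)"
    unfolding ms Fp_def by measurable
  have eq: "Pa_p X \<alpha> a x = distr ?D X snd"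
    unfolding Pa_p_def distr_def
  proof (rule measure_of_eq[OF sets.space_closed])
    fix S assume "S \<in> sigma_sets (space X) (sets X)"
    then have S: "S \<in> sets X" by (simp add: sets.sigma_sets_eq)
    then have S': "snd -` S \<inter> space (\<alpha> x) = UNIV \<times> S"
      using sets.sets_into_space[OF S] spx by auto
    have SS: "UNIV \<times> S \<in> sets (\<alpha> x)" using S ax by (simp add: Fp_def)
    have aS: "{a} \<times> S \<in> sets (\<alpha> x)" using S ax by (simp add: Fp_def)
    have "emeasure ?D (snd -` S \<inter> space ?D) = emeasure ?D (UNIV \<times> S)" using S' by simp
    also have "\<dots> = (\<integral>\<^sup>+ p. indicator {a} (fst p) * indicator (UNIV \<times> S) p \<partial>\<alpha> x)"
      by (rule emeasure_density[OF ind SS])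
    also have "\<dots> = (\<integral>\<^sup>+ p. indicator ({a} \<times> S) p \<partial>\<alpha> x)"
      by (intro nn_integral_cong) (auto split: split_indicator)
    also have "\<dots> = emeasure (\<alpha> x) ({a} \<times> S)" using aS by simp
    finally show "emeasure (\<alpha> x) ({a} \<times> S) = emeasure ?D (snd -` S \<inter> space ?D)" ..
  qed
  have snd': "snd \<in> measurable ?D X" using snd by simp
  show ?thesis unfolding eq
    by (simp add: nn_integral_distr[OF snd'] f nn_integral_density[OF ind] measurable_compose[OF snd f])
qed

lemma Pa_s_conv:
  assumes ax: "sets (\<alpha> x) = sets (Fs X)" and f: "f \<in> borel_measurable X"
  shows "(\<integral>\<^sup>+ y. f y \<partial>Pa_s X \<alpha> a x) =
     (\<integral>\<^sup>+ q. (case q of Inl p \<Rightarrow> indicator {a} (fst p) * f (snd p) | Inr u \<Rightarrow> 0) \<partial>\<alpha> x)"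
proof (cases "space X = {}")
  case True
  have "space (Pa_s X \<alpha> a x) = {}" unfolding Pa_s_def using True by (simp add: space_measure_of_conv)
  then have l: "(\<integral>\<^sup>+ y. f y \<partial>Pa_s X \<alpha> a x) = 0" by (rule nn_integral_empty)
  have spx: "space (\<alpha> x) = Inr ` UNIV"
    using sets_eq_imp_space_eq[OF ax] True by (simp add: space_Fs)
  have "(\<integral>\<^sup>+ q. (case q of Inl p \<Rightarrow> indicator {a} (fst p) * f (snd p) | Inr u \<Rightarrow> 0) \<partial>\<alpha> x) = (\<integral>\<^sup>+ q. 0 \<partial>\<alpha> x)"
    by (intro nn_integral_cong) (auto simp: spx)
  then show ?thesis using l by simp
next
  case False
  then obtain y0 where y0: "y0 \<in> space X" by auto
  let ?i = "\<lambda>q. (case q of Inl p \<Rightarrow> indicator {a} (fst p) | Inr (u::unit) \<Rightarrow> 0) :: ennreal"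
  let ?\<pi> = "\<lambda>q. (case q of Inl p \<Rightarrow> snd p | Inr (u::unit) \<Rightarrow> y0)"
  let ?D = "density (\<alpha> x) ?i"
  have spx: "space (\<alpha> x) = Inl ` (UNIV \<times> space X) \<union> Inr ` UNIV"
    using sets_eq_imp_space_eq[OF ax] by (simp add: space_Fs)
  have ms: "measurable (\<alpha> x) = measurable (Fs X)" using ax by (auto intro!: measurable_cong_sets)
  have pim: "?\<pi> \<in> measurable (\<alpha> x) X" unfolding ms Fs_def
    by (rule measurable_sum_meas1) (auto simp: y0)
  have ind: "?i \<in> borel_measurable (\<alpha> x)" unfolding ms Fs_def
    by (rule measurable_sum_meas1) auto
  have eq: "Pa_s X \<alpha> a x = distr ?D X ?\<pi>"
    unfolding Pa_s_def distr_def
  proof (rule measure_of_eq[OF sets.space_closed])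
    fix S assume "S \<in> sigma_sets (space X) (sets X)"
    then have S: "S \<in> sets X" by (simp add: sets.sigma_sets_eq)
    have Ssub: "S \<subseteq> space X" using sets.sets_into_space[OF S] .
    have pre: "?\<pi> -` S \<inter> space (\<alpha> x) \<in> sets (\<alpha> x)" using measurable_sets[OF pim S] .
    have aS: "Inl ` ({a} \<times> S) \<in> sets (\<alpha> x)" unfolding ax Fs_def
      using S by (intro sum_measI1) auto
    have "emeasure ?D (?\<pi> -` S \<inter> space ?D) = (\<integral>\<^sup>+ q. ?i q * indicator (?\<pi> -` S \<inter> space (\<alpha> x)) q \<partial>\<alpha> x)"
      by (simp add: emeasure_density[OF ind pre])
    also have "\<dots> = (\<integral>\<^sup>+ q. indicator (Inl ` ({a} \<times> S)) q \<partial>\<alpha> x)"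
      using Ssub by (intro nn_integral_cong) (auto simp: spx split: split_indicator sum.split)
    also have "\<dots> = emeasure (\<alpha> x) (Inl ` ({a} \<times> S))" using aS by simp
    finally show "emeasure (\<alpha> x) (Inl ` ({a} \<times> S)) = emeasure ?D (?\<pi> -` S \<inter> space ?D)" ..
  qed
  have pim': "?\<pi> \<in> measurable ?D X" using pim by simp
  have "(\<integral>\<^sup>+ y. f y \<partial>Pa_s X \<alpha> a x) = (\<integral>\<^sup>+ q. ?i q * f (?\<pi> q) \<partial>\<alpha> x)"
    unfolding eq
    by (simp add: nn_integral_distr[OF pim'] f nn_integral_density[OF ind] measurable_compose[OF pim f])
  also have "\<dots> = (\<integral>\<^sup>+ q. (case q of Inl p \<Rightarrow> indicator {a} (fst p) * f (snd p) | Inr u \<Rightarrow> 0) \<partial>\<alpha> x)"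
    by (intro nn_integral_cong) (auto split: sum.split)
  finally show ?thesis .
qed


definition enumA :: "'a::finite list" where
  "enumA = (SOME L. set L = UNIV \<and> distinct L)"

lemma enumA: "set (enumA :: 'a::finite list) = UNIV" "distinct (enumA :: 'a::finite list)"
proof -
  have "\<exists>L. set L = (UNIV :: 'a set) \<and> distinct L" by (rule finite_distinct_list) simp
  then have "set (enumA :: 'a list) = UNIV \<and> distinct (enumA :: 'a list)"
    unfolding enumA_def by (rule someI_ex)
  then show "set (enumA :: 'a::finite list) = UNIV" "distinct (enumA :: 'a::finite list)" by auto
qed

fun off :: "'a list \<Rightarrow> ('a \<Rightarrow> real) \<Rightarrow> 'a \<Rightarrow> real" where
  "off [] w a = 0"
| "off (b # bs) w a = (if b = a then 0 else w b + off bs w a)"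

fun pick :: "'a list \<Rightarrow> ('a \<Rightarrow> real) \<Rightarrow> real \<Rightarrow> 'a" where
  "pick [] w t = undefined"
| "pick (b # bs) w t = (if t < w b then b else pick bs w (t - w b))"

lemma off_nn: "(\<And>b. 0 \<le> w b) \<Longrightarrow> 0 \<le> off L w a"
  by (induction L) auto

lemma off_le: "a \<in> set L \<Longrightarrow> (\<And>b. 0 \<le> w b) \<Longrightarrow> off L w a + w a \<le> sum_list (map w L)"
proof (induction L)
  case (Cons b bs)
  have "0 \<le> sum_list (map w bs)" using Cons.prems(2) by (induction bs) (auto intro: add_nonneg_nonneg)
  with Cons show ?case by auto
qed simp

lemma pick_off: "a \<in> set L \<Longrightarrow> (\<And>b. 0 \<le> w b) \<Longrightarrow> off L w a \<le> t \<Longrightarrow> t < off L w a + w a \<Longrightarrow> pick L w t = a"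
proof (induction L arbitrary: t)
  case (Cons b bs)
  show ?case
  proof (cases "b = a")
    case True with Cons.prems show ?thesis by simp
  next
    case False
    with Cons.prems have "a \<in> set bs" "w b + off bs w a \<le> t" "t < w b + off bs w a + w a" by auto
    moreover have "0 \<le> off bs w a" using Cons.prems(2) by (rule off_nn)
    ultimately show ?thesis using Cons.IH[of "t - w b"] Cons.prems(2) by auto
  qed
qed simp

lemma pick_ex: "distinct L \<Longrightarrow> (\<And>b. 0 \<le> w b) \<Longrightarrow> 0 \<le> t \<Longrightarrow> t < sum_list (map w L) \<Longrightarrow>
   pick L w t \<in> set L \<and> off L w (pick L w t) \<le> t \<and> t < off L w (pick L w t) + w (pick L w t)"
proof (induction L arbitrary: t)
  case (Cons b bs)
  show ?case
  proof (cases "t < w b")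
    case True then show ?thesis using Cons.prems by simp
  next
    case False
    then have "0 \<le> t - w b" "t - w b < sum_list (map w bs)" using Cons.prems by auto
    with Cons.IH[of "t - w b"] Cons.prems
    have *: "pick bs w (t - w b) \<in> set bs \<and> off bs w (pick bs w (t - w b)) \<le> t - w b \<and>
      t - w b < off bs w (pick bs w (t - w b)) + w (pick bs w (t - w b))" by auto
    then have "pick bs w (t - w b) \<noteq> b" using Cons.prems(1) by auto
    with * False show ?thesis by auto
  qed
qed simp

primrec loR :: "('a::finite list \<Rightarrow> real) \<Rightarrow> ('a list \<Rightarrow> real) \<Rightarrow> 'a list \<Rightarrow> real" where
  "loR c d [] = 0"
| "loR c d (a # r) = loR c d r + d (rev r) + off enumA (\<lambda>b. c (rev r @ [b])) a"

definition lo :: "('a::finite list \<Rightarrow> real) \<Rightarrow> ('a list \<Rightarrow> real) \<Rightarrow> 'a list \<Rightarrow> real" where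
  "lo c d u = loR c d (rev u)"

lemma lo_Nil[simp]: "lo c d [] = 0" by (simp add: lo_def)
lemma lo_snoc[simp]: "lo c d (u @ [a]) = lo c d u + d u + off enumA (\<lambda>b. c (u @ [b])) a"
  by (simp add: lo_def)

definition nxt :: "('a::finite list \<Rightarrow> real) \<Rightarrow> ('a list \<Rightarrow> real) \<Rightarrow> 'a list \<Rightarrow> real \<Rightarrow> 'a" where
  "nxt c d u t = pick enumA (\<lambda>b. c (u @ [b])) (t - lo c d u - d u)"

primrec pre :: "('a::finite list \<Rightarrow> real) \<Rightarrow> ('a list \<Rightarrow> real) \<Rightarrow> nat \<Rightarrow> real \<Rightarrow> 'a list" where
  "pre c d 0 t = []"
| "pre c d (Suc n) t = pre c d n t @ [nxt c d (pre c d n t) t]"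

definition stp :: "('a::finite list \<Rightarrow> real) \<Rightarrow> ('a list \<Rightarrow> real) \<Rightarrow> nat \<Rightarrow> real \<Rightarrow> bool" where
  "stp c d n t \<longleftrightarrow> lo c d (pre c d n t) \<le> t \<and> t < lo c d (pre c d n t) + d (pre c d n t)"

definition sw :: "('a::finite list \<Rightarrow> real) \<Rightarrow> ('a list \<Rightarrow> real) \<Rightarrow> real \<Rightarrow> 'a stream" where
  "sw c d t = smap (\<lambda>n. nxt c d (pre c d n t) t) nats"

definition gw :: "('a::finite list \<Rightarrow> real) \<Rightarrow> ('a list \<Rightarrow> real) \<Rightarrow> real \<Rightarrow> 'a iword" where
  "gw c d t = (if \<exists>n. stp c d n t then Fin (pre c d (LEAST n. stp c d n t) t) else Inf (sw c d t))"

lemma stake_fromN: "stake n (fromN m) = [m..<m+n]"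
  by (induction n arbitrary: m) (auto simp: upt_conv_Cons)

lemma length_pre[simp]: "length (pre c d n t) = n"
  by (induction n) auto

lemma snth_sw: "sw c d t !! n = nxt c d (pre c d n t) t"
proof -
  have "fromN 0 !! n = n" by (induction n) (simp_all add: snth_siterate)
  then show ?thesis by (simp add: sw_def)
qed

lemma stake_sw: "stake n (sw c d t) = pre c d n t"
proof (induction n)
  case (Suc n)
  have "stake (Suc n) (sw c d t) = stake n (sw c d t) @ [sw c d t !! n]" by (rule stake_Suc)
  then show ?case using Suc by (simp only: snth_sw pre.simps)
qed simp

lemma take_pre: "m \<le> n \<Longrightarrow> take m (pre c d n t) = pre c d m t"
proof (induction n)
  case (Suc n)
  then show ?case by (cases "m = Suc n") auto
qed simp

locale intv =
  fixes c d :: "'a::finite list \<Rightarrow> real"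
  assumes c_nn: "\<And>u. 0 \<le> c u" and d_nn: "\<And>u. 0 \<le> d u" and c_Nil: "c [] = 1"
    and split_le: "\<And>u. d u + (\<Sum>b\<in>UNIV. c (u @ [b])) \<le> c u"
begin

lemma eA: "set (enumA::'a list) = UNIV" "distinct (enumA::'a list)" by (rule enumA)+

abbreviation "I u \<equiv> {lo c d u ..< lo c d u + c u}"
abbreviation "J u \<equiv> {lo c d u ..< lo c d u + d u}"

lemma sumL: "sum_list (map (\<lambda>b. c (u @ [b])) enumA) = (\<Sum>b\<in>UNIV. c (u @ [b]))"
  using sum_list_distinct_conv_sum_set[OF eA(2), of "\<lambda>b. c (u @ [b])"] eA(1) by simp

lemma K1a: "lo c d u + d u \<le> lo c d (u @ [a])"
  using off_nn[of "\<lambda>b. c (u @ [b])"] c_nn by simp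

lemma K1b: "lo c d (u @ [a]) + c (u @ [a]) \<le> lo c d u + c u"
proof -
  have a: "a \<in> set enumA" using eA(1) by simp
  have "off enumA (\<lambda>b. c (u @ [b])) a + c (u @ [a]) \<le> (\<Sum>b\<in>UNIV. c (u @ [b]))"
    using off_le[OF a, of "\<lambda>b. c (u @ [b])"] c_nn sumL by simp
  then show ?thesis using split_le[of u] by simp
qed

lemma K1: "I (u @ [a]) \<subseteq> I u"
  using K1a[of u a] K1b[of u a] d_nn[of u] by auto

lemma K1'': "J u \<inter> I (u @ [a]) = {}"
  using K1a[of u a] by auto

lemma Jsub: "J u \<subseteq> I u"
proof -
  have "0 \<le> (\<Sum>b\<in>UNIV. c (u @ [b]))" using c_nn by (simp add: sum_nonneg)
  then show ?thesis using split_le[of u] by auto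
qed

lemma K2: "I u \<subseteq> I (take m u)"
proof (induction u rule: rev_induct)
  case (snoc a v)
  show ?case
  proof (cases "m \<le> length v")
    case True
    then have "take m (v @ [a]) = take m v" by simp
    then show ?thesis using snoc K1[of v a] by auto
  qed simp
qed simp

lemma I_01: "I u \<subseteq> {0..<1}"
  using K2[of u 0] c_Nil by simp

lemma J_01: "J u \<subseteq> {0..<1}"
  using I_01 Jsub by blast

lemma K4: "t \<in> I u \<Longrightarrow> pre c d (length u) t = u"
proof (induction u rule: rev_induct)
  case (snoc a v)
  then have v: "pre c d (length v) t = v" using K1 by blast
  have "off enumA (\<lambda>b. c (v @ [b])) a \<le> t - lo c d v - d v"
       "t - lo c d v - d v < off enumA (\<lambda>b. c (v @ [b])) a + c (v @ [a])"
    using snoc.prems by auto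
  then have "nxt c d v t = a" unfolding nxt_def
    by (intro pick_off) (auto simp: enumA c_nn)
  then show ?case using v by simp
qed simp

lemma nostop_before: "t \<in> I u \<Longrightarrow> m < length u \<Longrightarrow> \<not> stp c d m t"
proof
  assume t: "t \<in> I u" and m: "m < length u" and s: "stp c d m t"
  have "t \<in> I (take m u)" using K2 t by blast
  then have "pre c d m t = take m u" using K4[of t "take m u"] m by simp
  then have tJ: "t \<in> J (take m u)" using s by (simp add: stp_def)
  have "take (Suc m) u = take m u @ [u ! m]" using m by (simp add: take_Suc_conv_app_nth)
  then have "t \<in> I (take m u @ [u ! m])" using K2[of u "Suc m"] t by auto
  then show False using tJ K1''[of "take m u" "u ! m"] by blast
qed

lemma R1: "gw c d t = Fin u \<longleftrightarrow> t \<in> J u"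
proof
  assume g: "gw c d t = Fin u"
  then have ex: "\<exists>n. stp c d n t" by (auto simp: gw_def split: if_splits)
  then have u: "u = pre c d (LEAST n. stp c d n t) t" using g by (simp add: gw_def)
  have "stp c d (LEAST n. stp c d n t) t" using ex by (rule LeastI_ex)
  then show "t \<in> J u" unfolding u stp_def by simp
next
  assume tJ: "t \<in> J u"
  then have tI: "t \<in> I u" using Jsub by blast
  have p: "pre c d (length u) t = u" using K4[OF tI] .
  have s: "stp c d (length u) t" using tJ by (simp add: stp_def p)
  have "(LEAST n. stp c d n t) = length u"
  proof (rule Least_equality)
    show "stp c d (length u) t" by (rule s)
    fix m assume "stp c d m t"
    then show "length u \<le> m" using nostop_before[OF tI, of m] by (cases "m < length u") auto
  qed
  then show "gw c d t = Fin u" using s p by (auto simp: gw_def)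
qed

end

locale intv_eq = intv +
  assumes split_eq: "\<And>u. d u + (\<Sum>b\<in>UNIV. c (u @ [b])) = c u"
begin

lemma inv: "t \<in> {0..<1} \<Longrightarrow> (\<forall>m<n. \<not> stp c d m t) \<Longrightarrow> t \<in> I (pre c d n t)"
proof (induction n)
  case 0 then show ?case using c_Nil by simp
next
  case (Suc n)
  let ?v = "pre c d n t"
  have tv: "t \<in> I ?v" using Suc by auto
  have ns: "\<not> stp c d n t" using Suc.prems by auto
  then have ge: "lo c d ?v + d ?v \<le> t" using tv by (auto simp: stp_def)
  have "t - lo c d ?v - d ?v < sum_list (map (\<lambda>b. c (?v @ [b])) enumA)"
    using tv split_eq[of ?v] sumL by simp
  then have "pick enumA (\<lambda>b. c (?v @ [b])) (t - lo c d ?v - d ?v) \<in> set enumA \<and>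
    off enumA (\<lambda>b. c (?v @ [b])) (pick enumA (\<lambda>b. c (?v @ [b])) (t - lo c d ?v - d ?v)) \<le> t - lo c d ?v - d ?v \<and>
    t - lo c d ?v - d ?v < off enumA (\<lambda>b. c (?v @ [b])) (pick enumA (\<lambda>b. c (?v @ [b])) (t - lo c d ?v - d ?v))
       + c (?v @ [pick enumA (\<lambda>b. c (?v @ [b])) (t - lo c d ?v - d ?v)])"
    using ge by (intro pick_ex) (auto simp: enumA c_nn)
  then show ?case by (simp add: nxt_def)
qed

lemma R2: assumes t: "t \<in> {0..<1}" shows "gw c d t \<in> C_inf u \<longleftrightarrow> t \<in> I u"
proof
  assume g: "gw c d t \<in> C_inf u"
  show "t \<in> I u"
  proof (cases "\<exists>n. stp c d n t")
    case True
    then obtain w where w: "gw c d t = Fin w" by (simp add: gw_def)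
    then have "prefix u w" using g by (simp add: C_inf_def)
    then have tk: "take (length u) w = u" by (auto simp: prefix_def)
    have "t \<in> J w" using w R1 by simp
    then have "t \<in> I (take (length u) w)" using Jsub K2 by blast
    then show ?thesis using tk by simp
  next
    case False
    then have "gw c d t = Inf (sw c d t)" by (simp add: gw_def)
    then have "stake (length u) (sw c d t) = u" using g by (simp add: C_inf_def prefix_s_def)
    then have "pre c d (length u) t = u" by (simp add: stake_sw)
    moreover have "t \<in> I (pre c d (length u) t)" using inv[OF t] False by auto
    ultimately show ?thesis by simp
  qed
next
  assume tI: "t \<in> I u"
  have p: "pre c d (length u) t = u" using K4[OF tI] .
  show "gw c d t \<in> C_inf u"
  proof (cases "\<exists>n. stp c d n t")
    case True
    let ?N = "LEAST n. stp c d n t"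
    have sN: "stp c d ?N t" using True by (rule LeastI_ex)
    then have "length u \<le> ?N" using nostop_before[OF tI, of ?N] by (cases "?N < length u") auto
    then have "take (length u) (pre c d ?N t) = u" using take_pre p by metis
    then have "prefix u (pre c d ?N t)" by (metis take_is_prefix)
    then show ?thesis using True by (simp add: gw_def C_inf_def)
  next
    case False
    then show ?thesis using p by (simp add: gw_def C_inf_def prefix_s_def stake_sw)
  qed
qed

end


lemma sets_Pa_p[simp]: "sets (Pa_p X \<alpha> a x) = sets X"
  unfolding Pa_p_def by (simp add: sets_measure_of[OF sets.space_closed] sets.sigma_sets_eq)
lemma space_Pa_p[simp]: "space (Pa_p X \<alpha> a x) = space X"
  unfolding Pa_p_def by (simp add: space_measure_of[OF sets.space_closed])
lemma sets_Pa_s[simp]: "sets (Pa_s X \<alpha> a x) = sets X"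
  unfolding Pa_s_def by (simp add: sets_measure_of[OF sets.space_closed] sets.sigma_sets_eq)
lemma space_Pa_s[simp]: "space (Pa_s X \<alpha> a x) = space X"
  unfolding Pa_s_def by (simp add: space_measure_of[OF sets.space_closed])

lemma meas_Pa_p: "f \<in> borel_measurable X \<Longrightarrow> f \<in> borel_measurable (Pa_p X \<alpha> a x)"
  by (simp cong: measurable_cong_sets)
lemma meas_Pa_s: "f \<in> borel_measurable X \<Longrightarrow> f \<in> borel_measurable (Pa_s X \<alpha> a x)"
  by (simp cong: measurable_cong_sets)

lemma sum_ind: "(\<Sum>b\<in>UNIV. indicator {b} (a::'a::finite) :: ennreal) = 1"
proof -
  have "(\<Sum>b\<in>UNIV. indicator {b} a :: ennreal) = (\<Sum>b\<in>UNIV. if b = a then 1 else 0)"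
    by (intro sum.cong) (auto simp: indicator_def)
  then show ?thesis by simp
qed

context
  fixes X :: "'x measure" and \<alpha> :: "'x \<Rightarrow> ('a::finite \<times> 'x) measure"
  assumes \<alpha>: "\<alpha> \<in> measurable X (subprob_algebra (Fp X))"
begin

lemma \<alpha>_sets: "x \<in> space X \<Longrightarrow> sets (\<alpha> x) = sets (Fp X)"
  using sets_kernel[OF \<alpha>] .

lemma \<alpha>_sub: "x \<in> space X \<Longrightarrow> subprob_space (\<alpha> x)"
  using subprob_space_kernel[OF \<alpha>] .

lemma p_conv: "x \<in> space X \<Longrightarrow> f \<in> borel_measurable X \<Longrightarrow>
   (\<integral>\<^sup>+ y. f y \<partial>Pa_p X \<alpha> a x) = (\<integral>\<^sup>+ p. indicator {a} (fst p) * f (snd p) \<partial>\<alpha> x)"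
  by (rule Pa_p_conv[where \<alpha>=\<alpha> and x=x]) (simp_all add: \<alpha>_sets)

lemma p_meas: "(\<lambda>x. tr_cyl_p X \<alpha> u x) \<in> borel_measurable X"
proof (induction u)
  case Nil then show ?case by simp
next
  case (Cons a u)
  have F: "(\<lambda>p. indicator {a} (fst p) * tr_cyl_p X \<alpha> u (snd p)) \<in> borel_measurable (Fp X)"
    unfolding Fp_def using Cons by measurable
  have "(\<lambda>x. \<integral>\<^sup>+ p. indicator {a} (fst p) * tr_cyl_p X \<alpha> u (snd p) \<partial>\<alpha> x) \<in> borel_measurable X"
    by (rule measurable_compose[OF \<alpha> nn_integral_measurable_subprob_algebra[OF F]])
  moreover have eq: "tr_cyl_p X \<alpha> (a # u) x = (\<integral>\<^sup>+ p. indicator {a} (fst p) * tr_cyl_p X \<alpha> u (snd p) \<partial>\<alpha> x)"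
    if x: "x \<in> space X" for x
    using p_conv[OF x Cons] by simp
  ultimately show ?case
    by (subst measurable_cong[where g="\<lambda>x. \<integral>\<^sup>+ p. indicator {a} (fst p) * tr_cyl_p X \<alpha> u (snd p) \<partial>\<alpha> x"]) auto
qed

lemma p_le1: "x \<in> space X \<Longrightarrow> tr_cyl_p X \<alpha> u x \<le> 1"
proof (induction u arbitrary: x)
  case (Cons a u)
  have "tr_cyl_p X \<alpha> (a # u) x \<le> (\<integral>\<^sup>+ y. 1 \<partial>Pa_p X \<alpha> a x)"
    unfolding tr_cyl_p.simps by (rule nn_integral_mono) (use Cons in auto)
  also have "\<dots> = (\<integral>\<^sup>+ p. indicator {a} (fst p) * 1 \<partial>\<alpha> x)"
    by (rule p_conv[OF Cons.prems]) simp
  also have "\<dots> \<le> (\<integral>\<^sup>+ p. 1 \<partial>\<alpha> x)"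
    by (intro nn_integral_mono) (auto split: split_indicator)
  also have "\<dots> = emeasure (\<alpha> x) (space (\<alpha> x))" by simp
  also have "\<dots> \<le> 1" using \<alpha>_sub[OF Cons.prems] by (rule subprob_space.emeasure_space_le_1)
  finally show ?case .
qed simp

lemma p_split:
  assumes prob: "\<And>x. x \<in> space X \<Longrightarrow> prob_space (\<alpha> x)"
  shows "x \<in> space X \<Longrightarrow> (\<Sum>b\<in>UNIV. tr_cyl_p X \<alpha> (u @ [b]) x) = tr_cyl_p X \<alpha> u x"
proof (induction u arbitrary: x)
  case Nil
  have "(\<Sum>b\<in>UNIV. tr_cyl_p X \<alpha> ([] @ [b]) x) = (\<Sum>b\<in>UNIV. \<integral>\<^sup>+ p. indicator {b} (fst p) * 1 \<partial>\<alpha> x)"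
  proof -
    have "tr_cyl_p X \<alpha> [b] x = (\<integral>\<^sup>+ p. indicator {b} (fst p) * 1 \<partial>\<alpha> x)" for b
      using p_conv[OF Nil, of "\<lambda>_. 1" b] by simp
    then show ?thesis by simp
  qed
  also have "\<dots> = (\<integral>\<^sup>+ p. (\<Sum>b\<in>UNIV. indicator {b} (fst p) * 1) \<partial>\<alpha> x)"
    by (rule nn_integral_sum[symmetric]) (simp add: \<alpha>_sets[OF Nil] Fp_def cong: measurable_cong_sets)
  also have "\<dots> = (\<integral>\<^sup>+ p. 1 \<partial>\<alpha> x)"
    by (intro nn_integral_cong) (simp add: indicator_def)
  also have "\<dots> = 1" using prob[OF Nil] by (simp add: prob_space.emeasure_space_1)
  finally show ?case by simp
next
  case (Cons a u)
  have m: "(\<lambda>y. tr_cyl_p X \<alpha> (u @ [b]) y) \<in> borel_measurable (Pa_p X \<alpha> a x)" for b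
    by (rule meas_Pa_p[OF p_meas])
  have "(\<Sum>b\<in>UNIV. tr_cyl_p X \<alpha> ((a # u) @ [b]) x) = (\<Sum>b\<in>UNIV. \<integral>\<^sup>+ y. tr_cyl_p X \<alpha> (u @ [b]) y \<partial>Pa_p X \<alpha> a x)"
    by simp
  also have "\<dots> = (\<integral>\<^sup>+ y. (\<Sum>b\<in>UNIV. tr_cyl_p X \<alpha> (u @ [b]) y) \<partial>Pa_p X \<alpha> a x)"
    by (rule nn_integral_sum[symmetric]) (rule m)
  also have "\<dots> = (\<integral>\<^sup>+ y. tr_cyl_p X \<alpha> u y \<partial>Pa_p X \<alpha> a x)"
    by (intro nn_integral_cong) (simp add: Cons.IH)
  finally show ?case by simp
qed

end

definition Fa :: "'a \<Rightarrow> ('x \<Rightarrow> ennreal) \<Rightarrow> ('a \<times> 'x) + unit \<Rightarrow> ennreal" where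
  "Fa a f q = (case q of Inl p \<Rightarrow> indicator {a} (fst p) * f (snd p) | Inr u \<Rightarrow> 0)"

lemma Fa_meas: "f \<in> borel_measurable X \<Longrightarrow> Fa a f \<in> borel_measurable (Fs X)"
  unfolding Fa_def Fs_def by (rule measurable_sum_meas1) auto

context
  fixes X :: "'x measure" and \<alpha> :: "'x \<Rightarrow> (('a::finite \<times> 'x) + unit) measure"
  assumes \<alpha>: "\<alpha> \<in> measurable X (subprob_algebra (Fs X))"
begin

lemma s\<alpha>_sets: "x \<in> space X \<Longrightarrow> sets (\<alpha> x) = sets (Fs X)"
  using sets_kernel[OF \<alpha>] .

lemma s\<alpha>_sub: "x \<in> space X \<Longrightarrow> subprob_space (\<alpha> x)"
  using subprob_space_kernel[OF \<alpha>] .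

lemma s_conv: "x \<in> space X \<Longrightarrow> f \<in> borel_measurable X \<Longrightarrow> (\<integral>\<^sup>+ y. f y \<partial>Pa_s X \<alpha> a x) = (\<integral>\<^sup>+ q. Fa a f q \<partial>\<alpha> x)"
  unfolding Fa_def by (rule Pa_s_conv[OF s\<alpha>_sets])

lemma s_int_meas: "f \<in> borel_measurable X \<Longrightarrow> (\<lambda>x. \<integral>\<^sup>+ y. f y \<partial>Pa_s X \<alpha> a x) \<in> borel_measurable X"
proof -
  assume f: "f \<in> borel_measurable X"
  have "(\<lambda>x. \<integral>\<^sup>+ q. Fa a f q \<partial>\<alpha> x) \<in> borel_measurable X"
    by (rule measurable_compose[OF \<alpha> nn_integral_measurable_subprob_algebra[OF Fa_meas[OF f]]])
  then show ?thesis
    by (rule measurable_cong[THEN iffD1, rotated]) (simp add: s_conv f)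
qed

lemma s_meas_single: "(\<lambda>x. tr_single X \<alpha> u x) \<in> borel_measurable X"
proof (induction u)
  case Nil
  have "Inr ` {()} \<in> sets (sum_meas (Alph \<Otimes>\<^sub>M X) One)" by (rule sum_measI2) simp
  then have "{Inr ()} \<in> sets (Fs X)" unfolding Fs_def by simp
  then show ?case by (simp add: measurable_emeasure_kernel[OF \<alpha> \<open>{Inr ()} \<in> sets (Fs X)\<close>])
next
  case (Cons a u) then show ?case by (simp add: s_int_meas)
qed

lemma s_meas_cyl: "(\<lambda>x. tr_cyl_s X \<alpha> u x) \<in> borel_measurable X"
  by (induction u) (simp_all add: s_int_meas)

lemma Fa_le: "(\<And>y. y \<in> space X \<Longrightarrow> f y \<le> g y) \<Longrightarrow> q \<in> space (Fs X) \<Longrightarrow> Fa a f q \<le> Fa a g q"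
  by (auto simp: Fa_def space_Fs split: split_indicator)

lemma s_cyl_le1: "x \<in> space X \<Longrightarrow> tr_cyl_s X \<alpha> u x \<le> 1"
proof (induction u arbitrary: x)
  case (Cons a u)
  have "tr_cyl_s X \<alpha> (a # u) x \<le> (\<integral>\<^sup>+ y. 1 \<partial>Pa_s X \<alpha> a x)"
    unfolding tr_cyl_s.simps by (rule nn_integral_mono) (use Cons in auto)
  also have "\<dots> = (\<integral>\<^sup>+ q. Fa a (\<lambda>_. 1) q \<partial>\<alpha> x)"
    by (rule s_conv[OF Cons.prems]) simp
  also have "\<dots> \<le> (\<integral>\<^sup>+ q. 1 \<partial>\<alpha> x)"
    by (intro nn_integral_mono) (auto simp: Fa_def split: split_indicator sum.split)
  also have "\<dots> = emeasure (\<alpha> x) (space (\<alpha> x))" by simp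
  also have "\<dots> \<le> 1" using s\<alpha>_sub[OF Cons.prems] by (rule subprob_space.emeasure_space_le_1)
  finally show ?case .
qed simp

lemma s_split_le:
  "x \<in> space X \<Longrightarrow> tr_single X \<alpha> u x + (\<Sum>b\<in>UNIV. tr_cyl_s X \<alpha> (u @ [b]) x) \<le> tr_cyl_s X \<alpha> u x
     \<and> ((\<forall>x\<in>space X. prob_space (\<alpha> x)) \<longrightarrow>
        tr_single X \<alpha> u x + (\<Sum>b\<in>UNIV. tr_cyl_s X \<alpha> (u @ [b]) x) = tr_cyl_s X \<alpha> u x)"
proof (induction u arbitrary: x)
  case Nil
  have sx: "sets (\<alpha> x) = sets (Fs X)" using s\<alpha>_sets[OF Nil] .
  have "Inr ` {()} \<in> sets (sum_meas (Alph \<Otimes>\<^sub>M X) One)" by (rule sum_measI2) simp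
  then have inr: "{Inr ()} \<in> sets (\<alpha> x)" unfolding sx Fs_def by simp
  have mF: "Fa b (\<lambda>_. 1) \<in> borel_measurable (\<alpha> x)" for b
    using Fa_meas[of "\<lambda>_. 1" X b] sx by (simp cong: measurable_cong_sets)
  have "tr_single X \<alpha> [] x + (\<Sum>b\<in>UNIV. tr_cyl_s X \<alpha> ([] @ [b]) x)
     = (\<integral>\<^sup>+ q. indicator {Inr ()} q \<partial>\<alpha> x) + (\<Sum>b\<in>UNIV. \<integral>\<^sup>+ q. Fa b (\<lambda>_. 1) q \<partial>\<alpha> x)"
  proof -
    have "tr_cyl_s X \<alpha> [b] x = (\<integral>\<^sup>+ q. Fa b (\<lambda>_. 1) q \<partial>\<alpha> x)" for b
      using s_conv[OF Nil, of "\<lambda>_. 1" b] by simp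
    then show ?thesis using inr by simp
  qed
  also have "\<dots> = (\<integral>\<^sup>+ q. indicator {Inr ()} q \<partial>\<alpha> x) + (\<integral>\<^sup>+ q. (\<Sum>b\<in>UNIV. Fa b (\<lambda>_. 1) q) \<partial>\<alpha> x)"
    by (subst nn_integral_sum) (auto intro: mF)
  also have "\<dots> = (\<integral>\<^sup>+ q. indicator {Inr ()} q + (\<Sum>b\<in>UNIV. Fa b (\<lambda>_. 1) q) \<partial>\<alpha> x)"
    by (rule nn_integral_add[symmetric]) (auto intro!: borel_measurable_sum mF borel_measurable_indicator inr)
  also have "\<dots> = (\<integral>\<^sup>+ q. 1 \<partial>\<alpha> x)"
  proof (intro nn_integral_cong)
    fix q :: "('a \<times> 'x) + unit"
    show "indicator {Inr ()} q + (\<Sum>b\<in>UNIV. Fa b (\<lambda>_. 1) q) = 1"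
      by (cases q) (auto simp: Fa_def sum_ind)
  qed
  also have "\<dots> = emeasure (\<alpha> x) (space (\<alpha> x))" by simp
  finally have eq: "tr_single X \<alpha> [] x + (\<Sum>b\<in>UNIV. tr_cyl_s X \<alpha> ([] @ [b]) x) = emeasure (\<alpha> x) (space (\<alpha> x))" .
  show ?case
    using eq subprob_space.emeasure_space_le_1[OF s\<alpha>_sub[OF Nil]] prob_space.emeasure_space_1 Nil
    by auto
next
  case (Cons a u)
  have m1: "(\<lambda>y. tr_single X \<alpha> u y) \<in> borel_measurable (Pa_s X \<alpha> a x)"
    by (rule meas_Pa_s[OF s_meas_single])
  have m2: "(\<lambda>y. tr_cyl_s X \<alpha> (u @ [b]) y) \<in> borel_measurable (Pa_s X \<alpha> a x)" for b
    by (rule meas_Pa_s[OF s_meas_cyl])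
  have m3: "(\<lambda>y. \<Sum>b\<in>UNIV. tr_cyl_s X \<alpha> (u @ [b]) y) \<in> borel_measurable (Pa_s X \<alpha> a x)"
    using m2 by measurable
  have "tr_single X \<alpha> (a # u) x + (\<Sum>b\<in>UNIV. tr_cyl_s X \<alpha> ((a # u) @ [b]) x)
     = (\<integral>\<^sup>+ y. tr_single X \<alpha> u y \<partial>Pa_s X \<alpha> a x) + (\<Sum>b\<in>UNIV. \<integral>\<^sup>+ y. tr_cyl_s X \<alpha> (u @ [b]) y \<partial>Pa_s X \<alpha> a x)"
    by simp
  also have "\<dots> = (\<integral>\<^sup>+ y. tr_single X \<alpha> u y + (\<Sum>b\<in>UNIV. tr_cyl_s X \<alpha> (u @ [b]) y) \<partial>Pa_s X \<alpha> a x)"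
    by (simp add: nn_integral_sum[OF m2] nn_integral_add[OF m1 m3])
  finally have eq: "tr_single X \<alpha> (a # u) x + (\<Sum>b\<in>UNIV. tr_cyl_s X \<alpha> ((a # u) @ [b]) x) =
     (\<integral>\<^sup>+ y. tr_single X \<alpha> u y + (\<Sum>b\<in>UNIV. tr_cyl_s X \<alpha> (u @ [b]) y) \<partial>Pa_s X \<alpha> a x)" .
  have le: "\<dots> \<le> tr_cyl_s X \<alpha> (a # u) x"
    using Cons.IH by (auto intro!: nn_integral_mono)
  have "(\<forall>x\<in>space X. prob_space (\<alpha> x)) \<longrightarrow>
     (\<integral>\<^sup>+ y. tr_single X \<alpha> u y + (\<Sum>b\<in>UNIV. tr_cyl_s X \<alpha> (u @ [b]) y) \<partial>Pa_s X \<alpha> a x) = tr_cyl_s X \<alpha> (a # u) x"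
    using Cons.IH by (auto intro!: nn_integral_cong)
  with eq le show ?case by simp
qed

end


lemma iso_distr:
  assumes phi: "phi \<in> measurable A B" and psi: "psi \<in> measurable B A"
    and inv2: "\<And>q. q \<in> space B \<Longrightarrow> phi (psi q) = q"
    and sR: "sets R = sets B" and M: "M = distr R A psi"
  shows "distr M B phi = R"
proof -
  have psi': "psi \<in> measurable R A" using psi sR by (simp cong: measurable_cong_sets)
  have "distr M B phi = distr R B (phi \<circ> psi)" unfolding M by (rule distr_distr[OF phi psi'])
  also have "\<dots> = distr R B (\<lambda>q. q)"
    by (rule distr_cong) (auto simp: inv2 sets_eq_imp_space_eq[OF sR])
  also have "\<dots> = R" by (rule distr_id2) (simp add: sR)
  finally show ?thesis .
qed

lemma iso_eval:
  assumes phi: "phi \<in> measurable A B" and psi: "psi \<in> measurable B A"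
    and inv1: "\<And>w. w \<in> space A \<Longrightarrow> psi (phi w) = w"
    and sM: "sets M = sets A" and S: "S \<in> sets A"
  shows "emeasure M S = emeasure (distr M B phi) (psi -` S \<inter> space B)"
proof -
  have phi': "phi \<in> measurable M B" using phi sM by (simp cong: measurable_cong_sets)
  have sp: "space M = space A" using sets_eq_imp_space_eq[OF sM] .
  have "phi -` (psi -` S \<inter> space B) \<inter> space M = S"
    using sets.sets_into_space[OF S] measurable_space[OF phi] inv1 sp by force
  moreover have "psi -` S \<inter> space B \<in> sets B" using measurable_sets[OF psi S] .
  ultimately show ?thesis by (simp add: emeasure_distr[OF phi'])
qed

lemma emeasure_return_pair:
  assumes "subprob_space N" "S \<in> sets N"
  shows "emeasure (return (count_space UNIV) a \<Otimes>\<^sub>M N) ({b} \<times> S) = indicator {b} a * emeasure N S"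
proof -
  interpret sigma_finite_measure N using assms(1) by (rule subprob_space_imp_sigma_finite)
  show ?thesis using assms(2) by (simp add: emeasure_pair_measure_Times)
qed

section \<open>The space of infinite words\<close>

lemma S_omega_closed: "S_omega \<subseteq> Pow UNIV" by simp

lemma space_Omega_omega[simp]: "space Omega_omega = UNIV"
  unfolding Omega_omega_def by (simp add: space_measure_of_conv)

lemma sets_Omega_omega: "sets Omega_omega = sigma_sets UNIV S_omega"
  unfolding Omega_omega_def by (simp add: sets_measure_of)

lemma C_omega_sets[simp]: "C_omega u \<in> sets Omega_omega"
  unfolding Omega_omega_def by (rule in_measure_of) (auto simp: S_omega_def)

lemma C_omega_Nil[simp]: "C_omega [] = UNIV"
  by (simp add: C_omega_def prefix_s_def)

lemma C_omega_Cons: "C_omega (a # u) = {s. shd s = a \<and> stl s \<in> C_omega u}"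
  by (auto simp: C_omega_def prefix_s_def)

lemma measurable_shd_omega: "shd \<in> measurable (Omega_omega :: 'a::finite stream measure) (count_space UNIV)"
proof -
  have eq: "shd -` {a} = C_omega [a]" for a :: 'a by (auto simp: C_omega_Cons)
  have "shd -` {a} \<in> sets (Omega_omega :: 'a stream measure)" for a by (subst eq) (rule C_omega_sets)
  then show ?thesis unfolding measurable_count_space_eq2_countable by simp
qed

lemma measurable_stl_omega: "stl \<in> measurable (Omega_omega :: 'a::finite stream measure) Omega_omega"
proof (rule measurable_sigma_sets[OF sets_Omega_omega S_omega_closed])
  fix A :: "'a stream set" assume "A \<in> S_omega"
  then obtain u where "A = {} \<or> A = C_omega u" by (auto simp: S_omega_def)
  moreover have "stl -` C_omega u = (\<Union>a\<in>UNIV. C_omega (a # u))" by (auto simp: C_omega_Cons)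
  moreover have "(\<Union>a\<in>UNIV. C_omega (a # u)) \<in> sets (Omega_omega :: 'a stream measure)"
    by (rule sets.finite_UN) auto
  ultimately show "stl -` A \<inter> space Omega_omega \<in> sets Omega_omega" by auto
qed simp

lemma phi_omega_meas: "phi_omega \<in> measurable (Omega_omega :: 'a::finite stream measure) (Fp Omega_omega)"
  unfolding phi_omega_def Fp_def
  by (intro measurable_Pair measurable_shd_omega measurable_stl_omega)

definition psi_omega :: "'a \<times> 'a stream \<Rightarrow> 'a stream" where
  "psi_omega p = fst p ## snd p"

lemma psi_omega_meas: "psi_omega \<in> measurable (Fp Omega_omega :: ('a::finite \<times> 'a stream) measure) Omega_omega"
proof (rule measurable_sigma_sets[OF sets_Omega_omega S_omega_closed])
  fix A :: "'a stream set" assume "A \<in> S_omega"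
  then obtain u where "A = {} \<or> A = C_omega u" by (auto simp: S_omega_def)
  moreover
  have "psi_omega -` C_omega u \<inter> space (Fp Omega_omega) \<in> sets (Fp Omega_omega :: ('a \<times> 'a stream) measure)"
  proof (cases u)
    case Nil
    then have "psi_omega -` C_omega u \<inter> space (Fp Omega_omega) = space (Fp Omega_omega :: ('a \<times> 'a stream) measure)"
      by simp
    then show ?thesis by simp
  next
    case (Cons a v)
    then have "psi_omega -` C_omega u \<inter> space (Fp Omega_omega) = {a} \<times> C_omega v"
      by (auto simp: psi_omega_def C_omega_Cons space_Fp)
    then show ?thesis by (simp add: Fp_def)
  qed
  ultimately show "psi_omega -` A \<inter> space (Fp Omega_omega) \<in> sets (Fp Omega_omega :: ('a \<times> 'a stream) measure)"
    by auto
qed (simp add: space_Fp)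

lemma psi_phi_omega: "psi_omega (phi_omega w) = w"
  by (simp add: psi_omega_def phi_omega_def)
lemma phi_psi_omega: "phi_omega (psi_omega q) = q"
  by (simp add: psi_omega_def phi_omega_def)

lemma psi_omega_pre: "psi_omega -` C_omega (a # v) \<inter> space (Fp Omega_omega) = {a} \<times> C_omega v"
  by (auto simp: psi_omega_def C_omega_Cons space_Fp)

lemma C_omega_Int: "C_omega u \<inter> C_omega v \<in> S_omega"
proof -
  have *: "C_omega u \<inter> C_omega v \<in> S_omega" if le: "length u \<le> length v" for u v :: "'b list"
  proof (cases "take (length u) v = u")
    case True
    have "C_omega v \<subseteq> C_omega u"
    proof
      fix s assume "s \<in> C_omega v"
      then have "stake (length v) s = v" by (simp add: C_omega_def prefix_s_def)
      then have "stake (length u) s = u" using le True by (metis min.absorb1 take_stake)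
      then show "s \<in> C_omega u" by (simp add: C_omega_def prefix_s_def)
    qed
    then have "C_omega u \<inter> C_omega v = C_omega v" by blast
    then show ?thesis by (auto simp: S_omega_def)
  next
    case False
    have "C_omega u \<inter> C_omega v = {}"
    proof (rule ccontr)
      assume "C_omega u \<inter> C_omega v \<noteq> {}"
      then obtain s where "stake (length u) s = u" "stake (length v) s = v" by (auto simp: C_omega_def prefix_s_def)
      then have "take (length u) v = u" using le by (metis min.absorb1 take_stake)
      with False show False by simp
    qed
    then show ?thesis by (simp add: S_omega_def)
  qed
  show ?thesis
    using *[of u v] *[of v u] by (cases "length u \<le> length v") (auto simp: Int_commute)
qed

lemma S_omega_Int_stable: "Int_stable S_omega"
  unfolding Int_stable_def S_omega_def using C_omega_Int by (auto simp: S_omega_def)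

lemma omega_eqI:
  fixes M N :: "'a stream measure"
  assumes "sets M = sets Omega_omega" "sets N = sets Omega_omega" "finite_measure M"
    and "\<And>u. emeasure M (C_omega u) = emeasure N (C_omega u)"
  shows "M = N"
proof (rule measure_eqI_generator_eq[OF S_omega_Int_stable S_omega_closed])
  show "sets M = sigma_sets UNIV S_omega" "sets N = sigma_sets UNIV S_omega"
    using assms by (simp_all add: sets_Omega_omega)
  fix X :: "'a stream set" assume "X \<in> S_omega" then show "emeasure M X = emeasure N X"
    using assms(4) by (auto simp: S_omega_def)
next
  show "range (\<lambda>_. C_omega []) \<subseteq> S_omega"
    unfolding S_omega_def by blast
  show "(\<Union>i. C_omega []) = UNIV" by simp
  fix i :: nat show "emeasure M (C_omega []) \<noteq> \<infinity>"
    using finite_measure.emeasure_finite[OF assms(3)] by simp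
qed


lemma lift_p_eq: "lift_p h = (\<lambda>p. return (count_space UNIV) (fst p) \<Otimes>\<^sub>M h (snd p))"
  by (simp add: lift_p_def lam_p_def Fmap_p_def fun_eq_iff)

lemma lift_p_meas: "h \<in> measurable X (subprob_algebra Y) \<Longrightarrow>
    lift_p h \<in> measurable (Fp X) (subprob_algebra (Fp Y :: ('a::finite \<times> 'y) measure))"
  unfolding lift_p_eq Fp_def
  by (intro measurable_pair_measure measurable_compose[OF measurable_fst return_measurable]
      measurable_compose[OF measurable_snd])

lemma lift_p_meas_prob: "h \<in> measurable X (prob_algebra Y) \<Longrightarrow>
    lift_p h \<in> measurable (Fp X) (prob_algebra (Fp Y :: ('a::finite \<times> 'y) measure))"
  unfolding lift_p_eq Fp_def
  by (intro measurable_pair_prob measurable_compose[OF measurable_fst measurable_return_prob_space]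
      measurable_compose[OF measurable_snd])

lemma kappa_omega_meas: "kappa_omega \<in> measurable (Omega_omega :: 'a::finite stream measure) (prob_algebra (Fp Omega_omega))"
proof -
  have "(\<lambda>w. return (Fp Omega_omega) (phi_omega w)) \<in> measurable (Omega_omega :: 'a stream measure) (prob_algebra (Fp Omega_omega))"
    by (rule measurable_compose[OF phi_omega_meas measurable_return_prob_space])
  then show ?thesis by (simp add: kappa_omega_def[abs_def])
qed

definition cw :: "'x measure \<Rightarrow> ('x \<Rightarrow> ('a::finite \<times> 'x) measure) \<Rightarrow> 'x \<Rightarrow> 'a list \<Rightarrow> real" where
  "cw X \<alpha> x u = enn2real (tr_cyl_p X \<alpha> u x)"

definition Uu :: "real measure" where "Uu = restrict_space lborel {0..<1}"

lemma space_Uu: "space Uu = {0..<1}" by (simp add: Uu_def space_restrict_space)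

lemma sets_Uu: "A \<subseteq> {0..<1} \<Longrightarrow> A \<in> sets borel \<Longrightarrow> A \<in> sets Uu"
  unfolding Uu_def by (subst sets_restrict_space_iff) auto

lemma emeasure_Uu: "A \<subseteq> {0..<1} \<Longrightarrow> emeasure Uu A = emeasure lborel A"
  unfolding Uu_def by (rule emeasure_restrict_space) auto

lemma emeasure_Uu_Ico: "{l..<l + c} \<subseteq> {0..<1} \<Longrightarrow> 0 \<le> c \<Longrightarrow> emeasure Uu {l..<l + c} = ennreal c"
  by (simp add: emeasure_Uu)

definition Gw :: "'x measure \<Rightarrow> ('x \<Rightarrow> ('a::finite \<times> 'x) measure) \<Rightarrow> 'x \<Rightarrow> real \<Rightarrow> 'a stream" where
  "Gw X \<alpha> x t = (case gw (cw X \<alpha> x) (\<lambda>_. 0) t of Inf s \<Rightarrow> s | Fin _ \<Rightarrow> sconst undefined)"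

definition hw :: "'x measure \<Rightarrow> ('x \<Rightarrow> ('a::finite \<times> 'x) measure) \<Rightarrow> 'x \<Rightarrow> 'a stream measure" where
  "hw X \<alpha> x = distr Uu Omega_omega (Gw X \<alpha> x)"

context
  fixes X :: "'x measure" and \<alpha> :: "'x \<Rightarrow> ('a::finite \<times> 'x) measure"
  assumes \<alpha>P: "\<alpha> \<in> measurable X (PP (Fp X))"
begin

lemma \<alpha>pr: "\<alpha> \<in> measurable X (prob_algebra (Fp X))" using \<alpha>P by (simp add: measurable_PP)
lemma \<alpha>s: "\<alpha> \<in> measurable X (subprob_algebra (Fp X))" using \<alpha>pr by (rule measurable_prob_algebraD)
lemma \<alpha>prob: "x \<in> space X \<Longrightarrow> prob_space (\<alpha> x)"
  using measurable_space[OF \<alpha>pr] by (auto simp: space_prob_algebra)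
lemma \<alpha>sets: "x \<in> space X \<Longrightarrow> sets (\<alpha> x) = sets (Fp X)"
  using measurable_space[OF \<alpha>pr] by (auto simp: space_prob_algebra)
lemma \<alpha>ne: "x \<in> space X \<Longrightarrow> space (\<alpha> x) \<noteq> {}"
  using \<alpha>prob prob_space.not_empty by blast

lemma hom_eqs:
  assumes h: "h \<in> measurable X (prob_algebra (Omega_omega :: 'a stream measure))" and x: "x \<in> space X"
  shows "kcomp (PP (Fp Omega_omega)) (Fp Omega_omega) kappa_omega h x = distr (h x) (Fp Omega_omega) phi_omega"
    and "kcomp (PP (Fp Omega_omega)) (Fp Omega_omega) (lift_p h) \<alpha> x = bind (\<alpha> x) (lift_p h)"
proof -
  have hs: "sets (h x) = sets Omega_omega" "prob_space (h x)"
    using measurable_space[OF h x] by (auto simp: space_prob_algebra)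
  have mh: "measurable (h x) = measurable Omega_omega" using hs by (auto intro!: measurable_cong_sets)
  have ne: "space (h x) \<noteq> {}" using hs prob_space.not_empty by blast
  have "kcomp (PP (Fp Omega_omega)) (Fp Omega_omega) kappa_omega h x = bind (h x) kappa_omega"
  proof (rule kcomp_bind[where f=h and x=x, OF _ _ em_PP ne])
    show "kappa_omega \<in> measurable (h x) (PP (Fp Omega_omega))"
      unfolding mh measurable_PP by (rule kappa_omega_meas)
    show "kappa_omega \<in> measurable (h x) (subprob_algebra (Fp Omega_omega))"
      unfolding mh by (rule measurable_prob_algebraD[OF kappa_omega_meas])
  qed
  also have "\<dots> = bind (h x) (\<lambda>w. return (Fp Omega_omega) (phi_omega w))"
    by (simp add: kappa_omega_def[abs_def])
  also have "\<dots> = distr (h x) (Fp Omega_omega) phi_omega"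
    by (rule bind_return_distr'[OF ne]) (simp add: mh phi_omega_meas)
  finally show "kcomp (PP (Fp Omega_omega)) (Fp Omega_omega) kappa_omega h x = distr (h x) (Fp Omega_omega) phi_omega" .
  have ma: "measurable (\<alpha> x) = measurable (Fp X)" using \<alpha>sets[OF x] by (auto intro!: measurable_cong_sets)
  show "kcomp (PP (Fp Omega_omega)) (Fp Omega_omega) (lift_p h) \<alpha> x = bind (\<alpha> x) (lift_p h)"
  proof (rule kcomp_bind[where f=\<alpha> and x=x, OF _ _ em_PP \<alpha>ne[OF x]])
    show "lift_p h \<in> measurable (\<alpha> x) (PP (Fp Omega_omega))"
      unfolding ma measurable_PP by (rule lift_p_meas_prob[OF h])
    show "lift_p h \<in> measurable (\<alpha> x) (subprob_algebra (Fp Omega_omega))"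
      unfolding ma by (rule lift_p_meas[OF measurable_prob_algebraD[OF h]])
  qed
qed

lemma B_eval:
  assumes h: "h \<in> measurable X (subprob_algebra (Omega_omega :: 'a stream measure))" and x: "x \<in> space X"
    and S: "S \<in> sets Omega_omega"
  shows "emeasure (bind (\<alpha> x) (lift_p h)) ({a} \<times> S) = (\<integral>\<^sup>+ y. emeasure (h y) S \<partial>Pa_p X \<alpha> a x)"
proof -
  have ma: "measurable (\<alpha> x) = measurable (Fp X)" using \<alpha>sets[OF x] by (auto intro!: measurable_cong_sets)
  have "emeasure (bind (\<alpha> x) (lift_p h)) ({a} \<times> S) = (\<integral>\<^sup>+ p. emeasure (lift_p h p) ({a} \<times> S) \<partial>\<alpha> x)"
  proof -
    have lm: "lift_p h \<in> measurable (\<alpha> x) (subprob_algebra (Fp (Omega_omega :: 'a stream measure)))"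
      by (simp add: ma lift_p_meas[OF h])
    have SS: "{a} \<times> S \<in> sets (Fp (Omega_omega :: 'a stream measure))" using S by (simp add: Fp_def)
    show ?thesis by (rule emeasure_bind[OF \<alpha>ne[OF x] lm SS])
  qed
  also have "\<dots> = (\<integral>\<^sup>+ p. indicator {a} (fst p) * emeasure (h (snd p)) S \<partial>\<alpha> x)"
  proof (intro nn_integral_cong)
    fix p assume p: "p \<in> space (\<alpha> x)"
    have "space (\<alpha> x) = UNIV \<times> space X"
      using sets_eq_imp_space_eq[OF \<alpha>sets[OF x]] space_Fp by simp
    then have sp: "snd p \<in> space X" using p by (simp add: mem_Times_iff)
    have sub: "subprob_space (h (snd p))" by (rule subprob_space_kernel[OF h sp])
    have "S \<in> sets (h (snd p))" using sets_kernel[OF h sp] S by simp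
    with sub show "emeasure (lift_p h p) ({a} \<times> S) = indicator {a} (fst p) * emeasure (h (snd p)) S"
      unfolding lift_p_eq by (rule emeasure_return_pair)
  qed
  also have "\<dots> = (\<integral>\<^sup>+ y. emeasure (h y) S \<partial>Pa_p X \<alpha> a x)"
    by (rule p_conv[OF \<alpha>s x, symmetric]) (rule measurable_emeasure_kernel[OF h S])
  finally show ?thesis .
qed

lemma hom_cyl:
  assumes hom: "is_hom (PP Omega_omega) (Fp Omega_omega) (PP (Fp Omega_omega)) lift_p X \<alpha> kappa_omega h"
  shows "x \<in> space X \<Longrightarrow> emeasure (h x) (C_omega u) = tr_cyl_p X \<alpha> u x"
proof (induction u arbitrary: x)
  have h: "h \<in> measurable X (prob_algebra (Omega_omega :: 'a stream measure))"
    using hom by (simp add: is_hom_def measurable_PP)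
  have hs: "h \<in> measurable X (subprob_algebra (Omega_omega :: 'a stream measure))"
    using h by (rule measurable_prob_algebraD)
  case Nil
  have "sets (h x) = sets Omega_omega" "prob_space (h x)"
    using measurable_space[OF h Nil] by (auto simp: space_prob_algebra)
  then show ?case using prob_space.emeasure_space_1[of "h x"] sets_eq_imp_space_eq[of "h x" Omega_omega] by simp
next
  have h: "h \<in> measurable X (prob_algebra (Omega_omega :: 'a stream measure))"
    using hom by (simp add: is_hom_def measurable_PP)
  have hs: "h \<in> measurable X (subprob_algebra (Omega_omega :: 'a stream measure))"
    using h by (rule measurable_prob_algebraD)
  case (Cons a v)
  have eq: "distr (h x) (Fp Omega_omega) phi_omega = bind (\<alpha> x) (lift_p h)"
    using hom Cons.prems hom_eqs[OF h Cons.prems] by (simp add: is_hom_def)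
  have "emeasure (h x) (C_omega (a # v)) =
      emeasure (distr (h x) (Fp Omega_omega) phi_omega) (psi_omega -` C_omega (a # v) \<inter> space (Fp Omega_omega))"
    by (rule iso_eval[OF phi_omega_meas psi_omega_meas psi_phi_omega])
       (use measurable_space[OF h Cons.prems] in \<open>auto simp: space_prob_algebra\<close>)
  also have "\<dots> = emeasure (bind (\<alpha> x) (lift_p h)) ({a} \<times> C_omega v)"
    by (simp add: eq psi_omega_pre)
  also have "\<dots> = (\<integral>\<^sup>+ y. emeasure (h y) (C_omega v) \<partial>Pa_p X \<alpha> a x)"
    by (rule B_eval[OF hs Cons.prems]) simp
  also have "\<dots> = (\<integral>\<^sup>+ y. tr_cyl_p X \<alpha> v y \<partial>Pa_p X \<alpha> a x)"
    by (intro nn_integral_cong) (simp add: Cons.IH)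
  finally show ?case by simp
qed

lemma hom_unique:
  assumes "is_hom (PP Omega_omega) (Fp Omega_omega) (PP (Fp Omega_omega)) lift_p X \<alpha> kappa_omega h"
    and "is_hom (PP Omega_omega) (Fp Omega_omega) (PP (Fp Omega_omega)) lift_p X \<alpha> kappa_omega h'"
    and x: "x \<in> space X"
  shows "h x = h' x"
proof (rule omega_eqI)
  have h: "h \<in> measurable X (prob_algebra (Omega_omega :: 'a stream measure))"
    "h' \<in> measurable X (prob_algebra (Omega_omega :: 'a stream measure))"
    using assms by (simp_all add: is_hom_def measurable_PP)
  show "sets (h x) = sets Omega_omega" "sets (h' x) = sets Omega_omega" "finite_measure (h x)"
    using measurable_space[OF h(1) x] measurable_space[OF h(2) x]
    by (auto simp: space_prob_algebra intro: prob_space.finite_measure)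
  fix u show "emeasure (h x) (C_omega u) = emeasure (h' x) (C_omega u)"
    using hom_cyl[OF assms(1) x] hom_cyl[OF assms(2) x] by simp
qed


lemma tr_fin: "x \<in> space X \<Longrightarrow> tr_cyl_p X \<alpha> u x < top"
  using p_le1[OF \<alpha>s, of x u] by (auto simp: top_unique intro: le_less_trans[of _ 1])

lemma cw_intv: assumes x: "x \<in> space X" shows "intv_eq (cw X \<alpha> x) (\<lambda>_. 0)"
proof -
  have eq: "(\<Sum>b\<in>UNIV. cw X \<alpha> x (u @ [b])) = cw X \<alpha> x u" for u
  proof -
    have "(\<Sum>b\<in>UNIV. cw X \<alpha> x (u @ [b])) = enn2real (\<Sum>b\<in>UNIV. tr_cyl_p X \<alpha> (u @ [b]) x)"
      unfolding cw_def by (subst enn2real_sum) (auto simp: tr_fin[OF x])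
    also have "\<dots> = cw X \<alpha> x u"
      unfolding cw_def by (simp add: p_split[OF \<alpha>s \<alpha>prob x])
    finally show ?thesis .
  qed
  have nn: "0 \<le> cw X \<alpha> x u" for u by (simp add: cw_def)
  have c0: "cw X \<alpha> x [] = 1" by (simp add: cw_def)
  show ?thesis
  proof (unfold_locales)
    fix u
    show "0 \<le> cw X \<alpha> x u" by (rule nn)
    show "(0::real) \<le> 0" by simp
    show "0 + (\<Sum>b\<in>UNIV. cw X \<alpha> x (u @ [b])) \<le> cw X \<alpha> x u" using eq by simp
    show "0 + (\<Sum>b\<in>UNIV. cw X \<alpha> x (u @ [b])) = cw X \<alpha> x u" using eq by simp
  qed (rule c0)
qed

lemma Gw_pre:
  assumes x: "x \<in> space X" and t: "t \<in> {0..<1}"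
  shows "Gw X \<alpha> x t \<in> C_omega u \<longleftrightarrow> t \<in> {lo (cw X \<alpha> x) (\<lambda>_. 0) u ..< lo (cw X \<alpha> x) (\<lambda>_. 0) u + cw X \<alpha> x u}"
proof -
  interpret intv_eq "cw X \<alpha> x" "\<lambda>_. 0" by (rule cw_intv[OF x])
  obtain s where s: "gw (cw X \<alpha> x) (\<lambda>_. 0) t = Inf s"
  proof (cases "gw (cw X \<alpha> x) (\<lambda>_. 0) t")
    case (Fin w) then show ?thesis using R1[of t w] by simp
  qed
  have "Gw X \<alpha> x t = s" using s by (simp add: Gw_def)
  moreover have "Inf s \<in> C_inf u \<longleftrightarrow> s \<in> C_omega u" by (simp add: C_inf_def C_omega_def)
  ultimately show ?thesis using R2[OF t, of u] s by simp
qed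

lemma I01: assumes x: "x \<in> space X"
  shows "{lo (cw X \<alpha> x) (\<lambda>_. 0) u ..< lo (cw X \<alpha> x) (\<lambda>_. 0) u + cw X \<alpha> x u} \<subseteq> {0..<1}"
proof -
  interpret intv_eq "cw X \<alpha> x" "\<lambda>_. 0" by (rule cw_intv[OF x])
  show ?thesis by (rule I_01)
qed

lemma Gw_pre_set: assumes x: "x \<in> space X"
  shows "Gw X \<alpha> x -` C_omega u \<inter> space Uu = {lo (cw X \<alpha> x) (\<lambda>_. 0) u ..< lo (cw X \<alpha> x) (\<lambda>_. 0) u + cw X \<alpha> x u}"
  using Gw_pre[OF x] I01[OF x, of u] unfolding space_Uu by blast

lemma Gw_meas: assumes x: "x \<in> space X" shows "Gw X \<alpha> x \<in> measurable Uu Omega_omega"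
proof (rule measurable_sigma_sets[OF sets_Omega_omega S_omega_closed])
  fix A :: "'a stream set" assume "A \<in> S_omega"
  then obtain u where "A = {} \<or> A = C_omega u" by (auto simp: S_omega_def)
  moreover have "Gw X \<alpha> x -` C_omega u \<inter> space Uu \<in> sets Uu"
    unfolding Gw_pre_set[OF x] by (rule sets_Uu[OF I01[OF x]]) simp
  ultimately show "Gw X \<alpha> x -` A \<inter> space Uu \<in> sets Uu" by auto
qed simp

lemma hw_C: assumes x: "x \<in> space X" shows "emeasure (hw X \<alpha> x) (C_omega u) = tr_cyl_p X \<alpha> u x"
proof -
  have "emeasure (hw X \<alpha> x) (C_omega u) = emeasure Uu (Gw X \<alpha> x -` C_omega u \<inter> space Uu)"
    unfolding hw_def by (rule emeasure_distr[OF Gw_meas[OF x] C_omega_sets])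
  also have "\<dots> = ennreal (cw X \<alpha> x u)"
    unfolding Gw_pre_set[OF x] by (rule emeasure_Uu_Ico[OF I01[OF x]]) (simp add: cw_def)
  also have "\<dots> = tr_cyl_p X \<alpha> u x" by (simp add: cw_def tr_fin[OF x])
  finally show ?thesis .
qed

lemma sets_hw[simp]: "sets (hw X \<alpha> x) = sets Omega_omega" by (simp add: hw_def)

lemma hw_prob: assumes x: "x \<in> space X" shows "prob_space (hw X \<alpha> x)"
proof
  have "space (hw X \<alpha> x) = C_omega []" by (simp add: hw_def)
  then show "emeasure (hw X \<alpha> x) (space (hw X \<alpha> x)) = 1" by (simp only: hw_C[OF x]) simp
qed

lemma hw_meas: "hw X \<alpha> \<in> measurable X (prob_algebra Omega_omega)"
proof (rule measurable_prob_algebra_generated[OF sets_Omega_omega S_omega_Int_stable S_omega_closed])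
  fix x assume "x \<in> space X" then show "prob_space (hw X \<alpha> x)" "sets (hw X \<alpha> x) = sets Omega_omega"
    by (simp_all add: hw_prob)
next
  fix A :: "'a stream set" assume "A \<in> S_omega"
  then obtain u where "A = {} \<or> A = C_omega u" by (auto simp: S_omega_def)
  moreover have "(\<lambda>x. emeasure (hw X \<alpha> x) (C_omega u)) \<in> borel_measurable X"
    by (subst measurable_cong[where g="\<lambda>x. tr_cyl_p X \<alpha> u x"]) (simp_all add: hw_C p_meas[OF \<alpha>s])
  ultimately show "(\<lambda>x. emeasure (hw X \<alpha> x) A) \<in> borel_measurable X" by auto
qed

lemma hw_hom: "is_hom (PP Omega_omega) (Fp Omega_omega) (PP (Fp Omega_omega)) lift_p X \<alpha> kappa_omega (hw X \<alpha>)"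
  unfolding is_hom_def
proof (intro conjI ballI)
  show "hw X \<alpha> \<in> measurable X (PP Omega_omega)" by (simp add: measurable_PP hw_meas)
  fix x assume x: "x \<in> space X"
  let ?B = "bind (\<alpha> x) (lift_p (hw X \<alpha>))"
  have lm: "lift_p (hw X \<alpha>) \<in> measurable (Fp X) (prob_algebra (Fp (Omega_omega :: 'a stream measure)))"
    by (rule lift_p_meas_prob[OF hw_meas])
  have ax: "\<alpha> x \<in> space (prob_algebra (Fp X))" by (rule measurable_space[OF \<alpha>pr x])
  have pB: "prob_space ?B" by (rule prob_space_bind'[OF ax lm])
  have sB: "sets ?B = sets (Fp (Omega_omega :: 'a stream measure))"
  proof (rule sets_bind[OF _ \<alpha>ne[OF x]])
    fix y assume "y \<in> space (\<alpha> x)"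
    then have "y \<in> space (Fp X)" using sets_eq_imp_space_eq[OF \<alpha>sets[OF x]] by simp
    then have "lift_p (hw X \<alpha>) y \<in> space (prob_algebra (Fp (Omega_omega :: 'a stream measure)))"
      by (rule measurable_space[OF lm])
    then show "sets (lift_p (hw X \<alpha>) y) = sets (Fp Omega_omega)"
      by (simp add: space_prob_algebra)
  qed
  have psiB: "psi_omega \<in> measurable ?B Omega_omega"
    using psi_omega_meas sB by (simp cong: measurable_cong_sets)
  have hx: "hw X \<alpha> x = distr ?B Omega_omega psi_omega"
  proof (rule omega_eqI)
    show "sets (hw X \<alpha> x) = sets Omega_omega" "sets (distr ?B Omega_omega psi_omega) = sets Omega_omega" by simp_all
    show "finite_measure (hw X \<alpha> x)" using hw_prob[OF x] by (rule prob_space.finite_measure)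
    fix u show "emeasure (hw X \<alpha> x) (C_omega u) = emeasure (distr ?B Omega_omega psi_omega) (C_omega u)"
    proof (cases u)
      case Nil
      have "emeasure (distr ?B Omega_omega psi_omega) (C_omega u) = emeasure ?B (space ?B)"
        unfolding emeasure_distr[OF psiB C_omega_sets] using Nil
        by (simp add: sets_eq_imp_space_eq[OF sB])
      also have "\<dots> = 1" using pB by (rule prob_space.emeasure_space_1)
      finally show ?thesis using Nil hw_C[OF x, of "[]"] by simp
    next
      case (Cons a v)
      have "emeasure (hw X \<alpha> x) (C_omega u) = (\<integral>\<^sup>+ y. tr_cyl_p X \<alpha> v y \<partial>Pa_p X \<alpha> a x)"
        using Cons hw_C[OF x] by simp
      also have "\<dots> = (\<integral>\<^sup>+ y. emeasure (hw X \<alpha> y) (C_omega v) \<partial>Pa_p X \<alpha> a x)"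
        by (intro nn_integral_cong) (simp add: hw_C)
      also have "\<dots> = emeasure ?B ({a} \<times> C_omega v)"
        by (rule B_eval[OF measurable_prob_algebraD[OF hw_meas] x, symmetric]) simp
      also have "\<dots> = emeasure (distr ?B Omega_omega psi_omega) (C_omega u)"
        unfolding emeasure_distr[OF psiB C_omega_sets] using Cons
        by (simp add: sets_eq_imp_space_eq[OF sB] psi_omega_pre)
      finally show ?thesis .
    qed
  qed
  have "distr (hw X \<alpha> x) (Fp Omega_omega) phi_omega = ?B"
    by (rule iso_distr[OF phi_omega_meas psi_omega_meas phi_psi_omega sB hx])
  then show "kcomp (PP (Fp Omega_omega)) (Fp Omega_omega) kappa_omega (hw X \<alpha>) x =
      kcomp (PP (Fp Omega_omega)) (Fp Omega_omega) (lift_p (hw X \<alpha>)) \<alpha> x"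
    using hom_eqs[OF hw_meas x] by simp
qed

end

lemma type_omega:
  fixes X :: "'x measure" and \<alpha>w :: "'x \<Rightarrow> ('a::finite \<times> 'x) measure"
  shows "(kappa_omega \<in> measurable Omega_omega (PP (Fp Omega_omega :: ('a \<times> 'a stream) measure)) \<and>
      (\<alpha>w \<in> measurable X (PP (Fp X)) \<longrightarrow>
        (\<exists>h. is_hom (PP Omega_omega) (Fp Omega_omega) (PP (Fp Omega_omega)) lift_p X \<alpha>w kappa_omega h) \<and>
        (\<forall>h h'. is_hom (PP Omega_omega) (Fp Omega_omega) (PP (Fp Omega_omega)) lift_p X \<alpha>w kappa_omega h \<and>
                is_hom (PP Omega_omega) (Fp Omega_omega) (PP (Fp Omega_omega)) lift_p X \<alpha>w kappa_omega h'
                \<longrightarrow> (\<forall>x\<in>space X. h x = h' x)) \<and>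
        (\<forall>h. is_hom (PP Omega_omega) (Fp Omega_omega) (PP (Fp Omega_omega)) lift_p X \<alpha>w kappa_omega h
              \<longrightarrow> (\<forall>x\<in>space X. \<forall>u. emeasure (h x) (C_omega u) = tr_cyl_p X \<alpha>w u x))))"
proof (intro conjI impI allI ballI)
  show "kappa_omega \<in> measurable Omega_omega (PP (Fp Omega_omega :: ('a \<times> 'a stream) measure))"
    by (simp add: measurable_PP kappa_omega_meas)
  assume a: "\<alpha>w \<in> measurable X (PP (Fp X))"
  show "\<exists>h. is_hom (PP Omega_omega) (Fp Omega_omega) (PP (Fp Omega_omega)) lift_p X \<alpha>w kappa_omega h"
    using hw_hom[OF a] by blast
  fix h h' x
  assume "is_hom (PP Omega_omega) (Fp Omega_omega) (PP (Fp Omega_omega)) lift_p X \<alpha>w kappa_omega h \<and>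
                is_hom (PP Omega_omega) (Fp Omega_omega) (PP (Fp Omega_omega)) lift_p X \<alpha>w kappa_omega h'"
    "x \<in> space X"
  then show "h x = h' x" using hom_unique[OF a] by blast
next
  fix h x u
  assume a: "\<alpha>w \<in> measurable X (PP (Fp X))"
    and "is_hom (PP Omega_omega) (Fp Omega_omega) (PP (Fp Omega_omega)) lift_p X \<alpha>w kappa_omega h" "x \<in> space X"
  then show "emeasure (h x) (C_omega u) = tr_cyl_p X \<alpha>w u x" using hom_cyl[OF a] by blast
qed


lemma lift_s_eq: "lift_s Y h q = (case q of Inl p \<Rightarrow> distr (return (count_space UNIV) (fst p) \<Otimes>\<^sub>M h (snd p)) (Fs Y) Inl
     | Inr u \<Rightarrow> return (Fs Y) (Inr ()))"
  by (cases q) (simp_all add: lift_s_def lam_s_def Fmap_s_def)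

lemma Inr_space_Fs: "Inr () \<in> space (Fs Y)" by (simp add: space_Fs)

lemma Inl_Fs_meas: "Inl \<in> measurable (count_space UNIV \<Otimes>\<^sub>M Y) (Fs Y)"
  unfolding Fs_def by (rule measurable_Inl_sum)

lemma lift_s_meas: "h \<in> measurable X (subprob_algebra Y) \<Longrightarrow>
    lift_s Y h \<in> measurable (Fs X) (subprob_algebra (Fs Y :: (('a::finite \<times> 'y) + unit) measure))"
proof -
  assume h: "h \<in> measurable X (subprob_algebra Y)"
  have pm: "(\<lambda>p. return (count_space UNIV) (fst p) \<Otimes>\<^sub>M h (snd p)) \<in> measurable (count_space UNIV \<Otimes>\<^sub>M X) (subprob_algebra (count_space (UNIV::'a set) \<Otimes>\<^sub>M Y))"
    by (intro measurable_pair_measure measurable_compose[OF measurable_fst return_measurable]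
      measurable_compose[OF measurable_snd h])
  have inl: "(\<lambda>p. distr (return (count_space UNIV) (fst p) \<Otimes>\<^sub>M h (snd p)) (Fs Y) Inl) \<in> measurable (count_space UNIV \<Otimes>\<^sub>M X) (subprob_algebra (Fs Y :: (('a::finite \<times> 'y) + unit) measure))"
    by (rule measurable_compose[OF pm measurable_distr[OF Inl_Fs_meas]])
  have inr: "(\<lambda>u::unit. return (Fs Y) (Inr ())) \<in> measurable (count_space UNIV) (subprob_algebra (Fs Y :: (('a::finite \<times> 'y) + unit) measure))"
  proof -
    have "return (Fs Y) (Inr ()) \<in> space (subprob_algebra (Fs Y :: (('a::finite \<times> 'y) + unit) measure))"
      unfolding space_subprob_algebra using subprob_space_return[OF Inr_space_Fs] by simp
    then show ?thesis by (rule measurable_const)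
  qed
  have r: "return (Fs Y) (Inr ()) \<in> space (subprob_algebra (Fs Y :: (('a::finite \<times> 'y) + unit) measure))"
    unfolding space_subprob_algebra using subprob_space_return[OF Inr_space_Fs] by simp
  show ?thesis unfolding lift_s_eq[abs_def] Fs_def[of X]
    by (rule measurable_sum_meas1) (simp_all add: inl r Pi_iff)
qed

lemma lift_s_meas_prob: "h \<in> measurable X (prob_algebra Y) \<Longrightarrow>
    lift_s Y h \<in> measurable (Fs X) (prob_algebra (Fs Y :: (('a::finite \<times> 'y) + unit) measure))"
proof -
  assume h: "h \<in> measurable X (prob_algebra Y)"
  have pm: "(\<lambda>p. return (count_space UNIV) (fst p) \<Otimes>\<^sub>M h (snd p)) \<in> measurable (count_space UNIV \<Otimes>\<^sub>M X) (prob_algebra (count_space (UNIV::'a set) \<Otimes>\<^sub>M Y))"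
    by (intro measurable_pair_prob measurable_compose[OF measurable_fst measurable_return_prob_space]
      measurable_compose[OF measurable_snd h])
  have inl: "(\<lambda>p. distr (return (count_space UNIV) (fst p) \<Otimes>\<^sub>M h (snd p)) (Fs Y) Inl) \<in> measurable (count_space UNIV \<Otimes>\<^sub>M X) (prob_algebra (Fs Y :: (('a::finite \<times> 'y) + unit) measure))"
    by (rule measurable_compose[OF pm measurable_distr_prob_space[OF Inl_Fs_meas]])
  have inr: "(\<lambda>u::unit. return (Fs Y) (Inr ())) \<in> measurable (count_space UNIV) (prob_algebra (Fs Y :: (('a::finite \<times> 'y) + unit) measure))"
  proof -
    have "return (Fs Y) (Inr ()) \<in> space (prob_algebra (Fs Y :: (('a::finite \<times> 'y) + unit) measure))"
      unfolding space_prob_algebra using prob_space_return[OF Inr_space_Fs] by simp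
    then show ?thesis by (rule measurable_const)
  qed
  have r: "return (Fs Y) (Inr ()) \<in> space (subprob_algebra (Fs Y :: (('a::finite \<times> 'y) + unit) measure))"
    unfolding space_subprob_algebra using subprob_space_return[OF Inr_space_Fs] by simp
  show ?thesis unfolding lift_s_eq[abs_def] Fs_def[of X]
    by (rule measurable_sum_meas1) (simp_all add: inl r Pi_iff space_prob_algebra prob_space_return Inr_space_Fs)
qed

lemma lift_s_Inl_eval:
  fixes a b :: "'a::finite" and N Y :: "'y measure"
  assumes "subprob_space N" "S \<in> sets N" "sets N = sets Y"
  shows "emeasure (distr (return (count_space UNIV) a \<Otimes>\<^sub>M N) (Fs Y) Inl) (Inl ` ({b} \<times> S)) = indicator {b} a * emeasure N S"
proof -
  have "sets (return (count_space UNIV) a \<Otimes>\<^sub>M N) = sets (count_space UNIV \<Otimes>\<^sub>M Y)"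
    by (rule sets_pair_measure_cong) (simp_all add: assms)
  then have m: "Inl \<in> measurable (return (count_space UNIV) a \<Otimes>\<^sub>M N) (Fs Y)"
    using Inl_Fs_meas[of Y] by (simp cong: measurable_cong_sets)
  have S: "S \<in> sets Y" using assms by simp
  have SS: "Inl ` ({b} \<times> S) \<in> sets (Fs Y)" unfolding Fs_def using S by (intro sum_measI1) simp
  have pre: "(Inl :: 'a \<times> 'y \<Rightarrow> ('a \<times> 'y) + unit) -` Inl ` ({b} \<times> S) \<inter> space (return (count_space UNIV) a \<Otimes>\<^sub>M N) = {b} \<times> S"
    using sets.sets_into_space[OF assms(2)] by (auto simp: space_pair_measure)
  have "emeasure (distr (return (count_space UNIV) a \<Otimes>\<^sub>M N) (Fs Y) Inl) (Inl ` ({b} \<times> S)) =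
      emeasure (return (count_space UNIV) a \<Otimes>\<^sub>M N) ((Inl :: 'a \<times> 'y \<Rightarrow> ('a \<times> 'y) + unit) -` Inl ` ({b} \<times> S) \<inter> space (return (count_space UNIV) a \<Otimes>\<^sub>M N))"
    by (rule emeasure_distr[OF m SS])
  also have "\<dots> = emeasure (return (count_space UNIV) a \<Otimes>\<^sub>M N) ({b} \<times> S)" by (simp only: pre)
  also have "\<dots> = indicator {b} a * emeasure N S" by (rule emeasure_return_pair[OF assms(1,2)])
  finally show ?thesis .
qed

lemma lift_s_Inl_eval_Inr:
  fixes a :: "'a::finite" and N Y :: "'y measure"
  assumes "sets N = sets Y"
  shows "emeasure (distr (return (count_space UNIV) a \<Otimes>\<^sub>M N) (Fs Y) Inl) {Inr ()} = 0"
proof -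
  have "sets (return (count_space UNIV) a \<Otimes>\<^sub>M N) = sets (count_space UNIV \<Otimes>\<^sub>M Y)"
    by (rule sets_pair_measure_cong) (simp_all add: assms)
  then have m: "Inl \<in> measurable (return (count_space UNIV) a \<Otimes>\<^sub>M N) (Fs Y)"
    using Inl_Fs_meas[of Y] by (simp cong: measurable_cong_sets)
  have "Inr ` {()} \<in> sets (sum_meas (count_space UNIV \<Otimes>\<^sub>M Y) (count_space UNIV))" by (rule sum_measI2) simp
  then have SS: "{Inr ()} \<in> sets (Fs Y)" by (simp add: Fs_def)
  have "emeasure (distr (return (count_space UNIV) a \<Otimes>\<^sub>M N) (Fs Y) Inl) {Inr ()} =
      emeasure (return (count_space UNIV) a \<Otimes>\<^sub>M N) (Inl -` {Inr ()} \<inter> space (return (count_space UNIV) a \<Otimes>\<^sub>M N))"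
    by (rule emeasure_distr[OF m SS])
  also have "\<dots> = 0"
  proof -
    have "(Inl :: 'a \<times> 'y \<Rightarrow> ('a \<times> 'y) + unit) -` {Inr ()} = {}" by auto
    then show ?thesis by simp
  qed
  finally show ?thesis .
qed

lemma Inr_sets_Fs: "{Inr ()} \<in> sets (Fs Y)"
proof -
  have "Inr ` {()} \<in> sets (sum_meas (count_space UNIV \<Otimes>\<^sub>M Y) (count_space UNIV))" by (rule sum_measI2) simp
  then show ?thesis by (simp add: Fs_def)
qed

lemma Inl_sets_Fs: "S \<in> sets Y \<Longrightarrow> Inl ` ({a} \<times> S) \<in> sets (Fs Y)"
  unfolding Fs_def by (intro sum_measI1) simp

context
  fixes X :: "'x measure" and \<alpha> :: "'x \<Rightarrow> (('a::finite \<times> 'x) + unit) measure"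
  assumes \<alpha>: "\<alpha> \<in> measurable X (subprob_algebra (Fs X))"
begin

lemma s_ne: "x \<in> space X \<Longrightarrow> space (\<alpha> x) \<noteq> {}"
  using subprob_space.subprob_not_empty[OF subprob_space_kernel[OF \<alpha>]] .

lemma s_sp: "x \<in> space X \<Longrightarrow> space (\<alpha> x) = Inl ` (UNIV \<times> space X) \<union> Inr ` UNIV"
  using sets_eq_imp_space_eq[OF sets_kernel[OF \<alpha>]] by (simp add: space_Fs)

lemma s_ma: "x \<in> space X \<Longrightarrow> measurable (\<alpha> x) = measurable (Fs X)"
  using sets_kernel[OF \<alpha>] by (auto intro!: measurable_cong_sets)

lemma Bs_eval:
  fixes Y :: "'y measure"
  assumes h: "h \<in> measurable X (subprob_algebra Y)" and x: "x \<in> space X" and S: "S \<in> sets Y"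
  shows "emeasure (bind (\<alpha> x) (lift_s Y h)) (Inl ` ({a} \<times> S)) = (\<integral>\<^sup>+ y. emeasure (h y) S \<partial>Pa_s X \<alpha> a x)"
proof -
  have lm: "lift_s Y h \<in> measurable (\<alpha> x) (subprob_algebra (Fs Y :: (('a \<times> 'y) + unit) measure))"
    unfolding s_ma[OF x] by (rule lift_s_meas[OF h])
  have "emeasure (bind (\<alpha> x) (lift_s Y h)) (Inl ` ({a} \<times> S)) = (\<integral>\<^sup>+ q. emeasure (lift_s Y h q) (Inl ` ({a} \<times> S)) \<partial>\<alpha> x)"
    by (rule emeasure_bind[OF s_ne[OF x] lm Inl_sets_Fs[OF S]])
  also have "\<dots> = (\<integral>\<^sup>+ q. Fa a (\<lambda>y. emeasure (h y) S) q \<partial>\<alpha> x)"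
  proof (intro nn_integral_cong)
    fix q assume q: "q \<in> space (\<alpha> x)"
    show "emeasure (lift_s Y h q) (Inl ` ({a} \<times> S)) = Fa a (\<lambda>y. emeasure (h y) S) q"
    proof (cases q)
      case (Inl p)
      then have sp: "snd p \<in> space X" using q s_sp[OF x] by (auto simp: mem_Times_iff)
      have sub: "subprob_space (h (snd p))" by (rule subprob_space_kernel[OF h sp])
      have ss: "sets (h (snd p)) = sets Y" by (rule sets_kernel[OF h sp])
      show ?thesis using Inl lift_s_Inl_eval[OF sub _ ss, of S] S ss by (simp add: lift_s_eq Fa_def)
    next
      case (Inr u)
      have "Inr () \<notin> Inl ` ({a} \<times> S)" by auto
      then show ?thesis using Inr by (simp add: lift_s_eq Fa_def emeasure_return[OF Inl_sets_Fs[OF S]])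
    qed
  qed
  also have "\<dots> = (\<integral>\<^sup>+ y. emeasure (h y) S \<partial>Pa_s X \<alpha> a x)"
    by (rule s_conv[OF \<alpha> x, symmetric]) (rule measurable_emeasure_kernel[OF h S])
  finally show ?thesis .
qed

lemma Bs_eval_Inr:
  fixes Y :: "'y measure"
  assumes h: "h \<in> measurable X (subprob_algebra Y)" and x: "x \<in> space X"
  shows "emeasure (bind (\<alpha> x) (lift_s Y h)) {Inr ()} = emeasure (\<alpha> x) {Inr ()}"
proof -
  have lm: "lift_s Y h \<in> measurable (\<alpha> x) (subprob_algebra (Fs Y :: (('a \<times> 'y) + unit) measure))"
    unfolding s_ma[OF x] by (rule lift_s_meas[OF h])
  have "emeasure (bind (\<alpha> x) (lift_s Y h)) {Inr ()} = (\<integral>\<^sup>+ q. emeasure (lift_s Y h q) {Inr ()} \<partial>\<alpha> x)"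
    by (rule emeasure_bind[OF s_ne[OF x] lm Inr_sets_Fs])
  also have "\<dots> = (\<integral>\<^sup>+ q. indicator {Inr ()} q \<partial>\<alpha> x)"
  proof (intro nn_integral_cong)
    fix q assume q: "q \<in> space (\<alpha> x)"
    show "emeasure (lift_s Y h q) {Inr ()} = indicator {Inr ()} q"
    proof (cases q)
      case (Inl p)
      then have sp: "snd p \<in> space X" using q s_sp[OF x] by (auto simp: mem_Times_iff)
      have ss: "sets (h (snd p)) = sets Y" by (rule sets_kernel[OF h sp])
      show ?thesis using Inl lift_s_Inl_eval_Inr[OF ss] by (simp add: lift_s_eq)
    next
      case (Inr u)
      then show ?thesis by (simp add: lift_s_eq emeasure_return[OF Inr_sets_Fs])
    qed
  qed
  also have "\<dots> = emeasure (\<alpha> x) {Inr ()}"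
    by (simp add: sets_kernel[OF \<alpha> x] Inr_sets_Fs)
  finally show ?thesis .
qed

end


section \<open>The space of finite and infinite words\<close>

lemma S_inf_closed: "S_inf \<subseteq> Pow UNIV" by simp

lemma space_Omega_inf[simp]: "space Omega_inf = UNIV"
  unfolding Omega_inf_def by (simp add: space_measure_of_conv)

lemma sets_Omega_inf: "sets Omega_inf = sigma_sets UNIV S_inf"
  unfolding Omega_inf_def by (simp add: sets_measure_of)

lemma C_inf_sets[simp]: "C_inf u \<in> sets Omega_inf"
  unfolding Omega_inf_def by (rule in_measure_of) (auto simp: S_inf_def)

lemma Fin_sets[simp]: "{Fin u} \<in> sets Omega_inf"
  unfolding Omega_inf_def by (rule in_measure_of) (auto simp: S_inf_def)

lemma sub_Fin_Nil_sets: assumes "A \<subseteq> {Fin []}" shows "A \<in> sets Omega_inf"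
proof -
  have "A = {} \<or> A = {Fin []}" using assms by (simp add: subset_singleton_iff)
  then show ?thesis by (elim disjE) simp_all
qed

lemma C_inf_Nil[simp]: "C_inf [] = UNIV"
proof -
  have "prefix_i [] w" for w :: "'a iword" by (cases w) (auto simp: prefix_s_def)
  then show ?thesis by (auto simp: C_inf_def)
qed

lemma space_Fs_UNIV: fixes Y :: "'y measure" shows "space Y = UNIV \<Longrightarrow> space (Fs Y :: ('a::finite \<times> 'y + unit) measure) = UNIV"
proof (rule set_eqI)
  assume Y: "space Y = UNIV"
  fix q :: "('a \<times> 'y) + unit"
  show "q \<in> space (Fs Y) \<longleftrightarrow> q \<in> UNIV" by (cases q) (auto simp: space_Fs Y)
qed

fun hd_i :: "'a iword \<Rightarrow> 'a" where
  "hd_i (Fin []) = undefined" | "hd_i (Fin (a # u)) = a" | "hd_i (Inf s) = shd s"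
fun tl_i :: "'a iword \<Rightarrow> 'a iword" where
  "tl_i (Fin []) = Fin []" | "tl_i (Fin (a # u)) = Fin u" | "tl_i (Inf s) = Inf (stl s)"
fun consw :: "'a \<Rightarrow> 'a iword \<Rightarrow> 'a iword" where
  "consw a (Fin u) = Fin (a # u)" | "consw a (Inf s) = Inf (a ## s)"

lemma prefix_i_Cons: "prefix_i (a # u) w \<longleftrightarrow> w \<noteq> Fin [] \<and> hd_i w = a \<and> prefix_i u (tl_i w)"
  by (cases w rule: tl_i.cases) (auto simp: prefix_s_def)

lemma prefix_i_consw: "prefix_i (a # u) (consw b w) \<longleftrightarrow> a = b \<and> prefix_i u w"
  by (cases w) (auto simp: prefix_s_def)

lemma prefix_i_Nil[simp]: "prefix_i [] w"
  by (cases w) (auto simp: prefix_s_def)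

lemma phi_inf_eq: "phi_inf w = (if w = Fin [] then Inr () else Inl (hd_i w, tl_i w))"
  by (cases w rule: phi_inf.cases) auto

lemma measurable_hd_i: "hd_i \<in> measurable (Omega_inf :: 'a::finite iword measure) (count_space UNIV)"
proof -
  have eq: "hd_i -` {a} = C_inf [a] \<union> ({Fin []} \<inter> hd_i -` {a})" for a :: 'a
    by (auto simp: C_inf_def prefix_i_Cons)
  have "hd_i -` {a} \<in> sets (Omega_inf :: 'a iword measure)" for a
    by (subst eq) (intro sets.Un C_inf_sets sub_Fin_Nil_sets; blast)
  then show ?thesis unfolding measurable_count_space_eq2_countable by simp
qed

lemma measurable_tl_i: "tl_i \<in> measurable (Omega_inf :: 'a::finite iword measure) Omega_inf"
proof (rule measurable_sigma_sets[OF sets_Omega_inf S_inf_closed])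
  fix A :: "'a iword set" assume "A \<in> S_inf"
  then consider "A = {}" | u where "A = {Fin u}" | u where "A = C_inf u" by (auto simp: S_inf_def)
  then show "tl_i -` A \<inter> space Omega_inf \<in> sets Omega_inf"
  proof cases
    case (2 u)
    have eq: "tl_i -` {Fin u} = (\<Union>a\<in>UNIV. {Fin (a # u)}) \<union> ({Fin []} \<inter> tl_i -` {Fin u})"
    proof (intro set_eqI iffI)
      fix x assume "x \<in> tl_i -` {Fin u}"
      then show "x \<in> (\<Union>a\<in>UNIV. {Fin (a # u)}) \<union> ({Fin []} \<inter> tl_i -` {Fin u})"
        by (cases x rule: tl_i.cases) auto
    qed auto
    have U: "(\<Union>a\<in>UNIV. {Fin (a # u)}) \<in> sets (Omega_inf :: 'a iword measure)"
      by (rule sets.finite_UN) auto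
    have V: "{Fin []} \<inter> tl_i -` {Fin u} \<in> sets (Omega_inf :: 'a iword measure)"
      by (rule sub_Fin_Nil_sets) blast
    have "tl_i -` A \<inter> space Omega_inf = (\<Union>a\<in>UNIV. {Fin (a # u)}) \<union> ({Fin []} \<inter> tl_i -` {Fin u})"
      unfolding 2 space_Omega_inf Int_UNIV_right by (rule eq)
    then show ?thesis using sets.Un[OF U V] by (simp only:)
  next
    case (3 u)
    have eq: "tl_i -` C_inf u = (\<Union>a\<in>UNIV. C_inf (a # u)) \<union> ({Fin []} \<inter> tl_i -` C_inf u)"
      by (auto simp: C_inf_def prefix_i_Cons)
    have U: "(\<Union>a\<in>UNIV. C_inf (a # u)) \<in> sets (Omega_inf :: 'a iword measure)"
      by (rule sets.finite_UN) auto
    have V: "{Fin []} \<inter> tl_i -` C_inf u \<in> sets (Omega_inf :: 'a iword measure)"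
      by (rule sub_Fin_Nil_sets) blast
    have "tl_i -` A \<inter> space Omega_inf = (\<Union>a\<in>UNIV. C_inf (a # u)) \<union> ({Fin []} \<inter> tl_i -` C_inf u)"
      unfolding 3 space_Omega_inf Int_UNIV_right by (rule eq)
    then show ?thesis using sets.Un[OF U V] by (simp only:)
  qed simp
qed simp

lemma phi_inf_meas: "phi_inf \<in> measurable (Omega_inf :: 'a::finite iword measure) (Fs Omega_inf)"
  unfolding Fs_def
proof (rule measurable_sum_meas2)
  show "phi_inf \<in> space Omega_inf \<rightarrow> Inl ` space (count_space UNIV \<Otimes>\<^sub>M Omega_inf) \<union> Inr ` space (count_space UNIV)"
    by (auto simp: phi_inf_eq space_pair_measure)
  fix A B assume A: "A \<in> sets (count_space (UNIV :: 'a set) \<Otimes>\<^sub>M (Omega_inf :: 'a iword measure))" and B: "B \<in> sets (count_space (UNIV :: unit set))"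
  have pm: "(\<lambda>w. (hd_i w, tl_i w)) \<in> measurable Omega_inf (count_space UNIV \<Otimes>\<^sub>M (Omega_inf :: 'a iword measure))"
    by (intro measurable_Pair measurable_hd_i measurable_tl_i)
  have "phi_inf -` (Inl ` A \<union> Inr ` B) \<inter> space Omega_inf =
     ((\<lambda>w. (hd_i w, tl_i w)) -` A \<inter> space Omega_inf - {Fin []}) \<union> ({Fin []} \<inter> {w. () \<in> B})"
  proof (intro set_eqI)
    fix w :: "'a iword"
    show "w \<in> phi_inf -` (Inl ` A \<union> Inr ` B) \<inter> space Omega_inf \<longleftrightarrow>
      w \<in> ((\<lambda>w. (hd_i w, tl_i w)) -` A \<inter> space Omega_inf - {Fin []}) \<union> ({Fin []} \<inter> {w. () \<in> B})"
      by (cases "w = Fin []") (auto simp: phi_inf_eq)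
  qed
  moreover have P: "(\<lambda>w. (hd_i w, tl_i w)) -` A \<inter> space Omega_inf \<in> sets (Omega_inf :: 'a iword measure)"
    by (rule measurable_sets[OF pm A])
  moreover have Q: "{Fin []} \<inter> {w. () \<in> B} \<in> sets (Omega_inf :: 'a iword measure)"
    by (rule sub_Fin_Nil_sets) blast
  ultimately show "phi_inf -` (Inl ` A \<union> Inr ` B) \<inter> space Omega_inf \<in> sets Omega_inf"
    using sets.Un[OF sets.Diff[OF P Fin_sets] Q] by (simp only:)
qed

definition psi_inf :: "('a \<times> 'a iword) + unit \<Rightarrow> 'a iword" where
  "psi_inf q = (case q of Inl p \<Rightarrow> consw (fst p) (snd p) | Inr u \<Rightarrow> Fin [])"

lemma psi_phi_inf: "psi_inf (phi_inf w) = w"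
  by (cases w rule: phi_inf.cases) (auto simp: psi_inf_def)

lemma phi_psi_inf: "phi_inf (psi_inf q) = q"
proof (cases q)
  case (Inl p) then show ?thesis
    by (cases p; cases "snd p") (auto simp: psi_inf_def)
qed (simp add: psi_inf_def)

lemma psi_inf_pre1: "psi_inf -` {Fin []} = {Inr ()}"
proof (intro set_eqI iffI)
  fix q :: "('a \<times> 'a iword) + unit" assume q: "q \<in> psi_inf -` {Fin []}" then show "q \<in> {Inr ()}"
  proof (cases q)
    case (Inl p) then show ?thesis using q by (cases "snd p") (auto simp: psi_inf_def)
  qed simp
qed (auto simp: psi_inf_def)

lemma psi_inf_pre2: "psi_inf -` {Fin (a # v)} = Inl ` ({a} \<times> {Fin v})"
proof (intro set_eqI iffI)
  fix q :: "('a \<times> 'a iword) + unit" assume q: "q \<in> psi_inf -` {Fin (a # v)}" then show "q \<in> Inl ` ({a} \<times> {Fin v})"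
  proof (cases q)
    case (Inl p) then show ?thesis using q by (cases p; cases "snd p") (auto simp: psi_inf_def)
  qed (simp add: psi_inf_def)
qed (auto simp: psi_inf_def)

lemma psi_inf_pre3: "psi_inf -` C_inf (a # v) = Inl ` ({a} \<times> C_inf v)"
proof (intro set_eqI iffI)
  fix q :: "('a \<times> 'a iword) + unit" assume q: "q \<in> psi_inf -` C_inf (a # v)" then show "q \<in> Inl ` ({a} \<times> C_inf v)"
  proof (cases q)
    case (Inl p) then show ?thesis using q
      by (cases p) (auto simp: psi_inf_def C_inf_def prefix_i_consw)
  qed (simp add: psi_inf_def C_inf_def)
qed (auto simp: psi_inf_def C_inf_def prefix_i_consw)

lemmas psi_inf_pre = psi_inf_pre1 psi_inf_pre2 psi_inf_pre3

lemma Inl_single_sets: "{w} \<in> sets Y \<Longrightarrow> {Inl (a, w)} \<in> sets (Fs Y)"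
  using Inl_sets_Fs[of "{w}" Y a] by simp

lemma psi_inf_meas: "psi_inf \<in> measurable (Fs Omega_inf :: ('a::finite \<times> 'a iword + unit) measure) Omega_inf"
proof (rule measurable_sigma_sets[OF sets_Omega_inf S_inf_closed])
  have sp: "space (Fs Omega_inf :: ('a \<times> 'a iword + unit) measure) = UNIV" by (rule space_Fs_UNIV) simp
  fix A :: "'a iword set" assume "A \<in> S_inf"
  then consider "A = {}" | u where "A = {Fin u}" | u where "A = C_inf u" by (auto simp: S_inf_def)
  then show "psi_inf -` A \<inter> space (Fs Omega_inf) \<in> sets (Fs Omega_inf :: ('a \<times> 'a iword + unit) measure)"
  proof cases
    case 1 then show ?thesis by simp
  next
    case (2 u) show ?thesis
    proof (cases u)
      case Nil
      then have "psi_inf -` A \<inter> space (Fs Omega_inf) = {Inr ()}" unfolding 2 sp by (simp only: psi_inf_pre Int_UNIV_right)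
      then show ?thesis by (simp only: Inr_sets_Fs)
    next
      case (Cons a v)
      then have "psi_inf -` A \<inter> space (Fs Omega_inf) = Inl ` ({a} \<times> {Fin v})" unfolding 2 sp by (simp only: psi_inf_pre Int_UNIV_right)
      then show ?thesis by (simp only: Inl_sets_Fs Fin_sets)
    qed
  next
    case (3 u) show ?thesis
    proof (cases u)
      case Nil
      then have "psi_inf -` A \<inter> space (Fs Omega_inf) = space (Fs Omega_inf)" unfolding 3 sp by simp
      then show ?thesis by (simp only: sets.top)
    next
      case (Cons a v)
      then have "psi_inf -` A \<inter> space (Fs Omega_inf) = Inl ` ({a} \<times> C_inf v)" unfolding 3 sp by (simp only: psi_inf_pre Int_UNIV_right)
      then show ?thesis by (simp only: Inl_sets_Fs C_inf_sets)
    qed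
  qed
qed simp

lemma prefix_i_comparable:
  assumes "prefix_i u w" "prefix_i v w" "length u \<le> length v" shows "prefix u v"
proof (cases w)
  case (Fin l)
  then have "prefix u l" "prefix v l" using assms by auto
  then have "prefix u v \<or> prefix v u" by (rule prefix_same_cases)
  then show ?thesis using assms(3) prefix_length_le[of v u] by (metis prefix_length_prefix prefix_order.eq_iff)
next
  case (Inf s)
  then have "stake (length u) s = u" "stake (length v) s = v" using assms by (auto simp: prefix_s_def)
  then have "take (length u) v = u" using assms(3) by (metis min.absorb1 take_stake)
  then show ?thesis by (metis take_is_prefix)
qed

lemma prefix_i_trans: "prefix u v \<Longrightarrow> prefix_i v w \<Longrightarrow> prefix_i u w"
proof (cases w)
  case (Inf s)
  assume "prefix u v" "prefix_i v w"
  then obtain z where "v = u @ z" "stake (length v) s = v" using Inf by (auto simp: prefix_def prefix_s_def)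
  then have "stake (length u) s = u" by (metis append_eq_conv_conj length_append min_def take_stake le_add1)
  then show ?thesis using Inf by (simp add: prefix_s_def)
qed (auto dest: prefix_order.trans)

lemma C_inf_Int: "C_inf u \<inter> C_inf v \<in> S_inf"
proof -
  have *: "C_inf u \<inter> C_inf v \<in> S_inf" if le: "length u \<le> length v" for u v :: "'b list"
  proof (cases "prefix u v")
    case True
    then have "C_inf v \<subseteq> C_inf u" by (auto simp: C_inf_def intro: prefix_i_trans)
    then have "C_inf u \<inter> C_inf v = C_inf v" by blast
    then show ?thesis by (auto simp: S_inf_def)
  next
    case False
    then have "C_inf u \<inter> C_inf v = {}" using prefix_i_comparable[OF _ _ le] by (auto simp: C_inf_def)
    then show ?thesis by (simp add: S_inf_def)
  qed
  show ?thesis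
    using *[of u v] *[of v u] by (cases "length u \<le> length v") (auto simp: Int_commute)
qed

lemma S_inf_Int_stable: "Int_stable S_inf"
proof (rule Int_stableI)
  fix A B :: "'a iword set" assume "A \<in> S_inf" "B \<in> S_inf"
  then consider "A = {} \<or> B = {}" | u v where "A = {Fin u}" "B = {Fin v}"
    | u v where "A = {Fin u}" "B = C_inf v" | u v where "A = C_inf u" "B = {Fin v}"
    | u v where "A = C_inf u" "B = C_inf v"
    by (auto simp: S_inf_def)
  then show "A \<inter> B \<in> S_inf"
  proof cases
    case 1 then show ?thesis by (auto simp: S_inf_def)
  next
    case (2 u v) then show ?thesis by (cases "u = v") (auto simp: S_inf_def)
  next
    case (3 u v) then show ?thesis by (cases "Fin u \<in> C_inf v") (auto simp: S_inf_def)
  next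
    case (4 u v) then show ?thesis by (cases "Fin v \<in> C_inf u") (auto simp: S_inf_def)
  next
    case (5 u v) then show ?thesis using C_inf_Int by simp
  qed
qed

lemma inf_eqI:
  fixes M N :: "'a iword measure"
  assumes "sets M = sets Omega_inf" "sets N = sets Omega_inf" "finite_measure M"
    and "\<And>u. emeasure M (C_inf u) = emeasure N (C_inf u)"
    and "\<And>u. emeasure M {Fin u} = emeasure N {Fin u}"
  shows "M = N"
proof (rule measure_eqI_generator_eq[OF S_inf_Int_stable S_inf_closed])
  show "sets M = sigma_sets UNIV S_inf" "sets N = sigma_sets UNIV S_inf"
    using assms by (simp_all add: sets_Omega_inf)
  fix X :: "'a iword set" assume "X \<in> S_inf" then show "emeasure M X = emeasure N X"
    using assms(4,5) by (auto simp: S_inf_def)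
next
  show "range (\<lambda>_. C_inf []) \<subseteq> S_inf"
    unfolding S_inf_def by blast
  show "(\<Union>i. C_inf []) = UNIV" by simp
  fix i :: nat show "emeasure M (C_inf []) \<noteq> \<infinity>"
    using finite_measure.emeasure_finite[OF assms(3)] by simp
qed

lemma kappa_inf_meas: "kappa_inf \<in> measurable (Omega_inf :: 'a::finite iword measure) (prob_algebra (Fs Omega_inf))"
proof -
  have "(\<lambda>w. return (Fs Omega_inf) (phi_inf w)) \<in> measurable (Omega_inf :: 'a iword measure) (prob_algebra (Fs Omega_inf))"
    by (rule measurable_compose[OF phi_inf_meas measurable_return_prob_space])
  then show ?thesis by (simp add: kappa_inf_def[abs_def])
qed


definition ci :: "'x measure \<Rightarrow> ('x \<Rightarrow> (('a::finite \<times> 'x) + unit) measure) \<Rightarrow> 'x \<Rightarrow> 'a list \<Rightarrow> real" where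
  "ci X \<alpha> x u = enn2real (tr_cyl_s X \<alpha> u x)"
definition di :: "'x measure \<Rightarrow> ('x \<Rightarrow> (('a::finite \<times> 'x) + unit) measure) \<Rightarrow> 'x \<Rightarrow> 'a list \<Rightarrow> real" where
  "di X \<alpha> x u = enn2real (tr_single X \<alpha> u x)"
definition hi :: "'x measure \<Rightarrow> ('x \<Rightarrow> (('a::finite \<times> 'x) + unit) measure) \<Rightarrow> 'x \<Rightarrow> 'a iword measure" where
  "hi X \<alpha> x = distr Uu Omega_inf (gw (ci X \<alpha> x) (di X \<alpha> x))"

context
  fixes X :: "'x measure" and \<alpha> :: "'x \<Rightarrow> (('a::finite \<times> 'x) + unit) measure"
  assumes \<alpha>P: "\<alpha> \<in> measurable X (PP (Fs X))"
begin

lemma i\<alpha>pr: "\<alpha> \<in> measurable X (prob_algebra (Fs X))" using \<alpha>P by (simp add: measurable_PP)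
lemma i\<alpha>s: "\<alpha> \<in> measurable X (subprob_algebra (Fs X))" using i\<alpha>pr by (rule measurable_prob_algebraD)
lemma i\<alpha>prob: "x \<in> space X \<Longrightarrow> prob_space (\<alpha> x)"
  using measurable_space[OF i\<alpha>pr] by (auto simp: space_prob_algebra)
lemma i\<alpha>sets: "x \<in> space X \<Longrightarrow> sets (\<alpha> x) = sets (Fs X)"
  using measurable_space[OF i\<alpha>pr] by (auto simp: space_prob_algebra)
lemma i\<alpha>ne: "x \<in> space X \<Longrightarrow> space (\<alpha> x) \<noteq> {}"
  using i\<alpha>prob prob_space.not_empty by blast

lemma sp_Fs_inf: "space (Fs (Omega_inf :: 'a iword measure)) = UNIV" by (rule space_Fs_UNIV) simp

lemma hom_eqs_i:
  assumes h: "h \<in> measurable X (prob_algebra (Omega_inf :: 'a iword measure))" and x: "x \<in> space X"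
  shows "kcomp (PP (Fs Omega_inf)) (Fs Omega_inf) kappa_inf h x = distr (h x) (Fs Omega_inf) phi_inf"
    and "kcomp (PP (Fs Omega_inf)) (Fs Omega_inf) (lift_s Omega_inf h) \<alpha> x = bind (\<alpha> x) (lift_s Omega_inf h)"
proof -
  have hs: "sets (h x) = sets Omega_inf" "prob_space (h x)"
    using measurable_space[OF h x] by (auto simp: space_prob_algebra)
  have mh: "measurable (h x) = measurable Omega_inf" using hs by (auto intro!: measurable_cong_sets)
  have ne: "space (h x) \<noteq> {}" using hs prob_space.not_empty by blast
  have "kcomp (PP (Fs Omega_inf)) (Fs Omega_inf) kappa_inf h x = bind (h x) kappa_inf"
  proof (rule kcomp_bind[where f=h and x=x, OF _ _ em_PP ne])
    show "kappa_inf \<in> measurable (h x) (PP (Fs Omega_inf))"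
      unfolding mh measurable_PP by (rule kappa_inf_meas)
    show "kappa_inf \<in> measurable (h x) (subprob_algebra (Fs Omega_inf))"
      unfolding mh by (rule measurable_prob_algebraD[OF kappa_inf_meas])
  qed
  also have "\<dots> = bind (h x) (\<lambda>w. return (Fs Omega_inf) (phi_inf w))"
    by (simp add: kappa_inf_def[abs_def])
  also have "\<dots> = distr (h x) (Fs Omega_inf) phi_inf"
    by (rule bind_return_distr'[OF ne]) (simp add: mh phi_inf_meas)
  finally show "kcomp (PP (Fs Omega_inf)) (Fs Omega_inf) kappa_inf h x = distr (h x) (Fs Omega_inf) phi_inf" .
  have ma: "measurable (\<alpha> x) = measurable (Fs X)" using i\<alpha>sets[OF x] by (auto intro!: measurable_cong_sets)
  show "kcomp (PP (Fs Omega_inf)) (Fs Omega_inf) (lift_s Omega_inf h) \<alpha> x = bind (\<alpha> x) (lift_s Omega_inf h)"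
  proof (rule kcomp_bind[where f=\<alpha> and x=x, OF _ _ em_PP i\<alpha>ne[OF x]])
    show "lift_s Omega_inf h \<in> measurable (\<alpha> x) (PP (Fs Omega_inf))"
      unfolding ma measurable_PP by (rule lift_s_meas_prob[OF h])
    show "lift_s Omega_inf h \<in> measurable (\<alpha> x) (subprob_algebra (Fs Omega_inf))"
      unfolding ma by (rule lift_s_meas[OF measurable_prob_algebraD[OF h]])
  qed
qed

lemma hom_vals_i:
  assumes hom: "is_hom (PP Omega_inf) (Fs Omega_inf) (PP (Fs Omega_inf)) (lift_s Omega_inf) X \<alpha> kappa_inf h"
  shows "x \<in> space X \<Longrightarrow> emeasure (h x) {Fin u} = tr_single X \<alpha> u x \<and> emeasure (h x) (C_inf u) = tr_cyl_s X \<alpha> u x"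
proof (induction u arbitrary: x)
  have h: "h \<in> measurable X (prob_algebra (Omega_inf :: 'a iword measure))"
    using hom by (simp add: is_hom_def measurable_PP)
  have hs: "h \<in> measurable X (subprob_algebra (Omega_inf :: 'a iword measure))"
    using h by (rule measurable_prob_algebraD)
  case Nil
  have eq: "distr (h x) (Fs Omega_inf) phi_inf = bind (\<alpha> x) (lift_s Omega_inf h)"
    using hom Nil hom_eqs_i[OF h Nil] by (simp add: is_hom_def)
  have shx: "sets (h x) = sets Omega_inf" "prob_space (h x)"
    using measurable_space[OF h Nil] by (auto simp: space_prob_algebra)
  have "emeasure (h x) {Fin []} =
      emeasure (distr (h x) (Fs Omega_inf) phi_inf) (psi_inf -` {Fin []} \<inter> space (Fs Omega_inf))"
    by (rule iso_eval[OF phi_inf_meas psi_inf_meas psi_phi_inf shx(1) Fin_sets])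
  also have "\<dots> = emeasure (bind (\<alpha> x) (lift_s Omega_inf h)) {Inr ()}"
    by (simp add: eq psi_inf_pre sp_Fs_inf)
  also have "\<dots> = tr_single X \<alpha> [] x"
    by (simp add: Bs_eval_Inr[OF i\<alpha>s hs Nil])
  finally have 1: "emeasure (h x) {Fin []} = tr_single X \<alpha> [] x" .
  have "emeasure (h x) (C_inf []) = 1"
    using prob_space.emeasure_space_1[OF shx(2)] sets_eq_imp_space_eq[OF shx(1)] by simp
  with 1 show ?case by simp
next
  have h: "h \<in> measurable X (prob_algebra (Omega_inf :: 'a iword measure))"
    using hom by (simp add: is_hom_def measurable_PP)
  have hs: "h \<in> measurable X (subprob_algebra (Omega_inf :: 'a iword measure))"
    using h by (rule measurable_prob_algebraD)
  case (Cons a v)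
  have eq: "distr (h x) (Fs Omega_inf) phi_inf = bind (\<alpha> x) (lift_s Omega_inf h)"
    using hom Cons.prems hom_eqs_i[OF h Cons.prems] by (simp add: is_hom_def)
  have shx: "sets (h x) = sets Omega_inf"
    using measurable_space[OF h Cons.prems] by (auto simp: space_prob_algebra)
  have "emeasure (h x) {Fin (a # v)} =
      emeasure (distr (h x) (Fs Omega_inf) phi_inf) (psi_inf -` {Fin (a # v)} \<inter> space (Fs Omega_inf))"
    by (rule iso_eval[OF phi_inf_meas psi_inf_meas psi_phi_inf shx Fin_sets])
  also have "\<dots> = emeasure (bind (\<alpha> x) (lift_s Omega_inf h)) (Inl ` ({a} \<times> {Fin v}))"
    by (simp only: eq psi_inf_pre sp_Fs_inf Int_UNIV_right)
  also have "\<dots> = (\<integral>\<^sup>+ y. emeasure (h y) {Fin v} \<partial>Pa_s X \<alpha> a x)"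
    by (rule Bs_eval[OF i\<alpha>s hs Cons.prems Fin_sets])
  also have "\<dots> = (\<integral>\<^sup>+ y. tr_single X \<alpha> v y \<partial>Pa_s X \<alpha> a x)"
    by (intro nn_integral_cong) (simp add: Cons.IH)
  finally have 1: "emeasure (h x) {Fin (a # v)} = tr_single X \<alpha> (a # v) x" by simp
  have "emeasure (h x) (C_inf (a # v)) =
      emeasure (distr (h x) (Fs Omega_inf) phi_inf) (psi_inf -` C_inf (a # v) \<inter> space (Fs Omega_inf))"
    by (rule iso_eval[OF phi_inf_meas psi_inf_meas psi_phi_inf shx C_inf_sets])
  also have "\<dots> = emeasure (bind (\<alpha> x) (lift_s Omega_inf h)) (Inl ` ({a} \<times> C_inf v))"
    by (simp only: eq psi_inf_pre sp_Fs_inf Int_UNIV_right)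
  also have "\<dots> = (\<integral>\<^sup>+ y. emeasure (h y) (C_inf v) \<partial>Pa_s X \<alpha> a x)"
    by (rule Bs_eval[OF i\<alpha>s hs Cons.prems C_inf_sets])
  also have "\<dots> = (\<integral>\<^sup>+ y. tr_cyl_s X \<alpha> v y \<partial>Pa_s X \<alpha> a x)"
    by (intro nn_integral_cong) (simp add: Cons.IH)
  finally have 2: "emeasure (h x) (C_inf (a # v)) = tr_cyl_s X \<alpha> (a # v) x" by simp
  from 1 2 show ?case by simp
qed

lemma hom_unique_i:
  assumes "is_hom (PP Omega_inf) (Fs Omega_inf) (PP (Fs Omega_inf)) (lift_s Omega_inf) X \<alpha> kappa_inf h"
    and "is_hom (PP Omega_inf) (Fs Omega_inf) (PP (Fs Omega_inf)) (lift_s Omega_inf) X \<alpha> kappa_inf h'"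
    and x: "x \<in> space X"
  shows "h x = h' x"
proof (rule inf_eqI)
  have h: "h \<in> measurable X (prob_algebra (Omega_inf :: 'a iword measure))"
    "h' \<in> measurable X (prob_algebra (Omega_inf :: 'a iword measure))"
    using assms by (simp_all add: is_hom_def measurable_PP)
  show "sets (h x) = sets Omega_inf" "sets (h' x) = sets Omega_inf" "finite_measure (h x)"
    using measurable_space[OF h(1) x] measurable_space[OF h(2) x]
    by (auto simp: space_prob_algebra intro: prob_space.finite_measure)
  fix u
  show "emeasure (h x) (C_inf u) = emeasure (h' x) (C_inf u)"
    using hom_vals_i[OF assms(1) x] hom_vals_i[OF assms(2) x] by simp
  show "emeasure (h x) {Fin u} = emeasure (h' x) {Fin u}"
    using hom_vals_i[OF assms(1) x] hom_vals_i[OF assms(2) x] by simp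
qed


lemma i_fin: assumes x: "x \<in> space X"
  shows "tr_cyl_s X \<alpha> u x < top" "tr_single X \<alpha> u x < top"
    "tr_single X \<alpha> u x + (\<Sum>b\<in>UNIV. tr_cyl_s X \<alpha> (u @ [b]) x) = tr_cyl_s X \<alpha> u x"
proof -
  have le1: "tr_cyl_s X \<alpha> u x \<le> 1" by (rule s_cyl_le1[OF i\<alpha>s x])
  then show "tr_cyl_s X \<alpha> u x < top" by (auto simp: top_unique intro: le_less_trans[of _ 1])
  show eq: "tr_single X \<alpha> u x + (\<Sum>b\<in>UNIV. tr_cyl_s X \<alpha> (u @ [b]) x) = tr_cyl_s X \<alpha> u x"
    using s_split_le[OF i\<alpha>s x, of u] i\<alpha>prob by blast
  have "tr_single X \<alpha> u x \<le> tr_single X \<alpha> u x + (\<Sum>b\<in>UNIV. tr_cyl_s X \<alpha> (u @ [b]) x)" by simp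
  then have "tr_single X \<alpha> u x \<le> 1" using eq le1 by simp
  then show "tr_single X \<alpha> u x < top" by (auto simp: top_unique intro: le_less_trans[of _ 1])
qed

lemma ci_intv: assumes x: "x \<in> space X" shows "intv_eq (ci X \<alpha> x) (di X \<alpha> x)"
proof -
  have fin: "tr_cyl_s X \<alpha> (u @ [b]) x < top" for u b using i_fin(1)[OF x] .
  have eq: "di X \<alpha> x u + (\<Sum>b\<in>UNIV. ci X \<alpha> x (u @ [b])) = ci X \<alpha> x u" for u
  proof -
    have S: "(\<Sum>b\<in>UNIV. ci X \<alpha> x (u @ [b])) = enn2real (\<Sum>b\<in>UNIV. tr_cyl_s X \<alpha> (u @ [b]) x)"
      unfolding ci_def by (subst enn2real_sum) (auto simp: fin)
    have T: "(\<Sum>b\<in>UNIV. tr_cyl_s X \<alpha> (u @ [b]) x) < top" using fin by simp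
    have "ci X \<alpha> x u = enn2real (tr_single X \<alpha> u x + (\<Sum>b\<in>UNIV. tr_cyl_s X \<alpha> (u @ [b]) x))"
      unfolding ci_def i_fin(3)[OF x] ..
    also have "\<dots> = di X \<alpha> x u + enn2real (\<Sum>b\<in>UNIV. tr_cyl_s X \<alpha> (u @ [b]) x)"
      unfolding di_def by (rule enn2real_plus[OF i_fin(2)[OF x] T])
    finally show ?thesis using S by simp
  qed
  show ?thesis
  proof (unfold_locales)
    fix u
    show "0 \<le> ci X \<alpha> x u" by (simp add: ci_def)
    show "0 \<le> di X \<alpha> x u" by (simp add: di_def)
    show "di X \<alpha> x u + (\<Sum>b\<in>UNIV. ci X \<alpha> x (u @ [b])) \<le> ci X \<alpha> x u" using eq by simp
    show "di X \<alpha> x u + (\<Sum>b\<in>UNIV. ci X \<alpha> x (u @ [b])) = ci X \<alpha> x u" using eq by simp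
  qed (simp add: ci_def)
qed


lemma gwi_pre:
  assumes x: "x \<in> space X"
  shows "gw (ci X \<alpha> x) (di X \<alpha> x) -` {Fin u} \<inter> space Uu = {lo (ci X \<alpha> x) (di X \<alpha> x) u ..< lo (ci X \<alpha> x) (di X \<alpha> x) u + di X \<alpha> x u}"
    and "gw (ci X \<alpha> x) (di X \<alpha> x) -` C_inf u \<inter> space Uu = {lo (ci X \<alpha> x) (di X \<alpha> x) u ..< lo (ci X \<alpha> x) (di X \<alpha> x) u + ci X \<alpha> x u}"
    and "{lo (ci X \<alpha> x) (di X \<alpha> x) u ..< lo (ci X \<alpha> x) (di X \<alpha> x) u + di X \<alpha> x u} \<subseteq> {0..<1}"
    and "{lo (ci X \<alpha> x) (di X \<alpha> x) u ..< lo (ci X \<alpha> x) (di X \<alpha> x) u + ci X \<alpha> x u} \<subseteq> {0..<1}"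
proof -
  interpret intv_eq "ci X \<alpha> x" "di X \<alpha> x" by (rule ci_intv[OF x])
  show "J u \<subseteq> {0..<1}" by (rule J_01)
  show "I u \<subseteq> {0..<1}" by (rule I_01)
  show "gw (ci X \<alpha> x) (di X \<alpha> x) -` {Fin u} \<inter> space Uu = J u"
    using R1[of _ u] J_01[of u] unfolding space_Uu by blast
  show "gw (ci X \<alpha> x) (di X \<alpha> x) -` C_inf u \<inter> space Uu = I u"
    using R2[of _ u] I_01[of u] unfolding space_Uu by blast
qed

lemma gwi_meas: assumes x: "x \<in> space X" shows "gw (ci X \<alpha> x) (di X \<alpha> x) \<in> measurable Uu Omega_inf"
proof (rule measurable_sigma_sets[OF sets_Omega_inf S_inf_closed])
  fix A :: "'a iword set" assume "A \<in> S_inf"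
  then consider "A = {}" | u where "A = {Fin u}" | u where "A = C_inf u" by (auto simp: S_inf_def)
  then show "gw (ci X \<alpha> x) (di X \<alpha> x) -` A \<inter> space Uu \<in> sets Uu"
  proof cases
    case (2 u) show ?thesis unfolding 2 gwi_pre(1)[OF x] by (rule sets_Uu[OF gwi_pre(3)[OF x]]) simp
  next
    case (3 u) show ?thesis unfolding 3 gwi_pre(2)[OF x] by (rule sets_Uu[OF gwi_pre(4)[OF x]]) simp
  qed simp
qed simp

lemma sets_hi[simp]: "sets (hi X \<alpha> x) = sets Omega_inf" by (simp add: hi_def)

lemma hi_vals: assumes x: "x \<in> space X"
  shows "emeasure (hi X \<alpha> x) {Fin u} = tr_single X \<alpha> u x" "emeasure (hi X \<alpha> x) (C_inf u) = tr_cyl_s X \<alpha> u x"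
proof -
  have "emeasure (hi X \<alpha> x) {Fin u} = emeasure Uu (gw (ci X \<alpha> x) (di X \<alpha> x) -` {Fin u} \<inter> space Uu)"
    unfolding hi_def by (rule emeasure_distr[OF gwi_meas[OF x] Fin_sets])
  also have "\<dots> = ennreal (di X \<alpha> x u)"
    unfolding gwi_pre(1)[OF x] by (rule emeasure_Uu_Ico[OF gwi_pre(3)[OF x]]) (simp add: di_def)
  also have "\<dots> = tr_single X \<alpha> u x" by (simp add: di_def i_fin[OF x])
  finally show "emeasure (hi X \<alpha> x) {Fin u} = tr_single X \<alpha> u x" .
  have "emeasure (hi X \<alpha> x) (C_inf u) = emeasure Uu (gw (ci X \<alpha> x) (di X \<alpha> x) -` C_inf u \<inter> space Uu)"
    unfolding hi_def by (rule emeasure_distr[OF gwi_meas[OF x] C_inf_sets])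
  also have "\<dots> = ennreal (ci X \<alpha> x u)"
    unfolding gwi_pre(2)[OF x] by (rule emeasure_Uu_Ico[OF gwi_pre(4)[OF x]]) (simp add: ci_def)
  also have "\<dots> = tr_cyl_s X \<alpha> u x" by (simp add: ci_def i_fin[OF x])
  finally show "emeasure (hi X \<alpha> x) (C_inf u) = tr_cyl_s X \<alpha> u x" .
qed

lemma hi_prob: assumes x: "x \<in> space X" shows "prob_space (hi X \<alpha> x)"
proof
  have "space (hi X \<alpha> x) = C_inf []" by (simp add: hi_def)
  then show "emeasure (hi X \<alpha> x) (space (hi X \<alpha> x)) = 1" by (simp only: hi_vals[OF x]) simp
qed

lemma hi_meas: "hi X \<alpha> \<in> measurable X (prob_algebra Omega_inf)"
proof (rule measurable_prob_algebra_generated[OF sets_Omega_inf S_inf_Int_stable S_inf_closed])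
  fix x assume "x \<in> space X" then show "prob_space (hi X \<alpha> x)" "sets (hi X \<alpha> x) = sets Omega_inf"
    by (simp_all add: hi_prob)
next
  fix A :: "'a iword set" assume "A \<in> S_inf"
  then consider "A = {}" | u where "A = {Fin u}" | u where "A = C_inf u" by (auto simp: S_inf_def)
  then show "(\<lambda>x. emeasure (hi X \<alpha> x) A) \<in> borel_measurable X"
  proof cases
    case (2 u) then show ?thesis
      by (subst measurable_cong[where g="\<lambda>x. tr_single X \<alpha> u x"]) (simp_all add: hi_vals s_meas_single[OF i\<alpha>s])
  next
    case (3 u) then show ?thesis
      by (subst measurable_cong[where g="\<lambda>x. tr_cyl_s X \<alpha> u x"]) (simp_all add: hi_vals s_meas_cyl[OF i\<alpha>s])
  qed simp
qed

lemma hi_hom: "is_hom (PP Omega_inf) (Fs Omega_inf) (PP (Fs Omega_inf)) (lift_s Omega_inf) X \<alpha> kappa_inf (hi X \<alpha>)"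
  unfolding is_hom_def
proof (intro conjI ballI)
  show "hi X \<alpha> \<in> measurable X (PP Omega_inf)" by (simp add: measurable_PP hi_meas)
  fix x assume x: "x \<in> space X"
  let ?B = "bind (\<alpha> x) (lift_s Omega_inf (hi X \<alpha>))"
  have hs: "hi X \<alpha> \<in> measurable X (subprob_algebra Omega_inf)" by (rule measurable_prob_algebraD[OF hi_meas])
  have lm: "lift_s Omega_inf (hi X \<alpha>) \<in> measurable (Fs X) (prob_algebra (Fs (Omega_inf :: 'a iword measure)))"
    by (rule lift_s_meas_prob[OF hi_meas])
  have ax: "\<alpha> x \<in> space (prob_algebra (Fs X))" by (rule measurable_space[OF i\<alpha>pr x])
  have pB: "prob_space ?B" by (rule prob_space_bind'[OF ax lm])
  have sB: "sets ?B = sets (Fs (Omega_inf :: 'a iword measure))"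
  proof (rule sets_bind[OF _ i\<alpha>ne[OF x]])
    fix y assume "y \<in> space (\<alpha> x)"
    then have "y \<in> space (Fs X)" using sets_eq_imp_space_eq[OF i\<alpha>sets[OF x]] by simp
    then have "lift_s Omega_inf (hi X \<alpha>) y \<in> space (prob_algebra (Fs (Omega_inf :: 'a iword measure)))"
      by (rule measurable_space[OF lm])
    then show "sets (lift_s Omega_inf (hi X \<alpha>) y) = sets (Fs Omega_inf)"
      by (simp add: space_prob_algebra)
  qed
  have spB: "space ?B = UNIV" using sets_eq_imp_space_eq[OF sB] sp_Fs_inf by simp
  have psiB: "psi_inf \<in> measurable ?B Omega_inf"
    using psi_inf_meas sB by (simp cong: measurable_cong_sets)
  have dB: "emeasure (distr ?B Omega_inf psi_inf) S = emeasure ?B (psi_inf -` S)" if "S \<in> sets Omega_inf" for S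
    using emeasure_distr[OF psiB that] spB by simp
  have hx: "hi X \<alpha> x = distr ?B Omega_inf psi_inf"
  proof (rule inf_eqI)
    show "sets (hi X \<alpha> x) = sets Omega_inf" "sets (distr ?B Omega_inf psi_inf) = sets Omega_inf" by simp_all
    show "finite_measure (hi X \<alpha> x)" using hi_prob[OF x] by (rule prob_space.finite_measure)
    fix u
    show "emeasure (hi X \<alpha> x) (C_inf u) = emeasure (distr ?B Omega_inf psi_inf) (C_inf u)"
    proof (cases u)
      case Nil
      have "emeasure (distr ?B Omega_inf psi_inf) (C_inf u) = emeasure ?B (space ?B)"
        using Nil dB[OF C_inf_sets[of "[]"]] spB by simp
      also have "\<dots> = 1" using pB by (rule prob_space.emeasure_space_1)
      finally show ?thesis using Nil hi_vals(2)[OF x, of "[]"] by simp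
    next
      case (Cons a v)
      have "emeasure (hi X \<alpha> x) (C_inf u) = (\<integral>\<^sup>+ y. tr_cyl_s X \<alpha> v y \<partial>Pa_s X \<alpha> a x)"
        using Cons hi_vals(2)[OF x] by simp
      also have "\<dots> = (\<integral>\<^sup>+ y. emeasure (hi X \<alpha> y) (C_inf v) \<partial>Pa_s X \<alpha> a x)"
        by (intro nn_integral_cong) (simp add: hi_vals)
      also have "\<dots> = emeasure ?B (Inl ` ({a} \<times> C_inf v))"
        by (rule Bs_eval[OF i\<alpha>s hs x C_inf_sets, symmetric])
      also have "\<dots> = emeasure (distr ?B Omega_inf psi_inf) (C_inf u)"
        using Cons by (simp only: dB[OF C_inf_sets] psi_inf_pre)
      finally show ?thesis .
    qed
    show "emeasure (hi X \<alpha> x) {Fin u} = emeasure (distr ?B Omega_inf psi_inf) {Fin u}"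
    proof (cases u)
      case Nil
      have "emeasure (hi X \<alpha> x) {Fin u} = emeasure (\<alpha> x) {Inr ()}"
        using Nil hi_vals(1)[OF x] by simp
      also have "\<dots> = emeasure ?B {Inr ()}" by (rule Bs_eval_Inr[OF i\<alpha>s hs x, symmetric])
      also have "\<dots> = emeasure (distr ?B Omega_inf psi_inf) {Fin u}"
        using Nil by (simp only: dB[OF Fin_sets] psi_inf_pre)
      finally show ?thesis .
    next
      case (Cons a v)
      have "emeasure (hi X \<alpha> x) {Fin u} = (\<integral>\<^sup>+ y. tr_single X \<alpha> v y \<partial>Pa_s X \<alpha> a x)"
        using Cons hi_vals(1)[OF x] by simp
      also have "\<dots> = (\<integral>\<^sup>+ y. emeasure (hi X \<alpha> y) {Fin v} \<partial>Pa_s X \<alpha> a x)"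
        by (intro nn_integral_cong) (simp add: hi_vals)
      also have "\<dots> = emeasure ?B (Inl ` ({a} \<times> {Fin v}))"
        by (rule Bs_eval[OF i\<alpha>s hs x Fin_sets, symmetric])
      also have "\<dots> = emeasure (distr ?B Omega_inf psi_inf) {Fin u}"
        using Cons by (simp only: dB[OF Fin_sets] psi_inf_pre)
      finally show ?thesis .
    qed
  qed
  have "distr (hi X \<alpha> x) (Fs Omega_inf) phi_inf = ?B"
    by (rule iso_distr[OF phi_inf_meas psi_inf_meas phi_psi_inf sB hx])
  then show "kcomp (PP (Fs Omega_inf)) (Fs Omega_inf) kappa_inf (hi X \<alpha>) x =
      kcomp (PP (Fs Omega_inf)) (Fs Omega_inf) (lift_s Omega_inf (hi X \<alpha>)) \<alpha> x"
    using hom_eqs_i[OF hi_meas x] by simp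
qed

end

lemma type_inf:
  fixes X :: "'x measure" and \<alpha>i :: "'x \<Rightarrow> (('a::finite \<times> 'x) + unit) measure"
  shows "(kappa_inf \<in> measurable Omega_inf (PP (Fs Omega_inf :: (('a \<times> 'a iword) + unit) measure)) \<and>
      (\<alpha>i \<in> measurable X (PP (Fs X)) \<longrightarrow>
        (\<exists>h. is_hom (PP Omega_inf) (Fs Omega_inf) (PP (Fs Omega_inf)) (lift_s Omega_inf) X \<alpha>i kappa_inf h) \<and>
        (\<forall>h h'. is_hom (PP Omega_inf) (Fs Omega_inf) (PP (Fs Omega_inf)) (lift_s Omega_inf) X \<alpha>i kappa_inf h \<and>
                is_hom (PP Omega_inf) (Fs Omega_inf) (PP (Fs Omega_inf)) (lift_s Omega_inf) X \<alpha>i kappa_inf h'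
                \<longrightarrow> (\<forall>x\<in>space X. h x = h' x)) \<and>
        (\<forall>h. is_hom (PP Omega_inf) (Fs Omega_inf) (PP (Fs Omega_inf)) (lift_s Omega_inf) X \<alpha>i kappa_inf h
              \<longrightarrow> (\<forall>x\<in>space X. (\<forall>u. emeasure (h x) {Fin u} = tr_single X \<alpha>i u x) \<and>
                                 (\<forall>u. emeasure (h x) (C_inf u) = tr_cyl_s X \<alpha>i u x)))))"
proof (intro conjI impI allI ballI)
  show "kappa_inf \<in> measurable Omega_inf (PP (Fs Omega_inf :: (('a \<times> 'a iword) + unit) measure))"
    by (simp add: measurable_PP kappa_inf_meas)
  assume a: "\<alpha>i \<in> measurable X (PP (Fs X))"
  show "\<exists>h. is_hom (PP Omega_inf) (Fs Omega_inf) (PP (Fs Omega_inf)) (lift_s Omega_inf) X \<alpha>i kappa_inf h"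
    using hi_hom[OF a] by blast
  fix h h' x
  assume "is_hom (PP Omega_inf) (Fs Omega_inf) (PP (Fs Omega_inf)) (lift_s Omega_inf) X \<alpha>i kappa_inf h \<and>
                is_hom (PP Omega_inf) (Fs Omega_inf) (PP (Fs Omega_inf)) (lift_s Omega_inf) X \<alpha>i kappa_inf h'"
    "x \<in> space X"
  then show "h x = h' x" using hom_unique_i[OF a] by blast
next
  fix h x u
  assume a: "\<alpha>i \<in> measurable X (PP (Fs X))"
    and "is_hom (PP Omega_inf) (Fs Omega_inf) (PP (Fs Omega_inf)) (lift_s Omega_inf) X \<alpha>i kappa_inf h" "x \<in> space X"
  then show "emeasure (h x) {Fin u} = tr_single X \<alpha>i u x" using hom_vals_i[OF a] by blast
next
  fix h x u
  assume a: "\<alpha>i \<in> measurable X (PP (Fs X))"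
    and "is_hom (PP Omega_inf) (Fs Omega_inf) (PP (Fs Omega_inf)) (lift_s Omega_inf) X \<alpha>i kappa_inf h" "x \<in> space X"
  then show "emeasure (h x) (C_inf u) = tr_cyl_s X \<alpha>i u x" using hom_vals_i[OF a] by blast
qed


section \<open>Finite words\<close>

lemma S_star_closed: "S_star \<subseteq> Pow UNIV" by simp

lemma space_Omega_star[simp]: "space Omega_star = UNIV"
  unfolding Omega_star_def by (simp add: space_measure_of_conv)

lemma sets_Omega_star: "sets Omega_star = sigma_sets UNIV S_star"
  unfolding Omega_star_def by (simp add: sets_measure_of)

lemma single_star_sets[simp]: "{u} \<in> sets Omega_star"
  unfolding Omega_star_def by (rule in_measure_of) (auto simp: S_star_def)

lemma all_star_sets[simp]: "A \<in> sets (Omega_star :: 'a::finite list measure)"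
proof -
  have "(\<Union>u\<in>A. {u}) \<in> sets (Omega_star :: 'a list measure)"
    by (rule sets.countable_UN'') (auto intro: countable_subset[OF _ countableI_type[where 'a="'a list"]])
  then show ?thesis by simp
qed

lemma sets_Omega_star_Pow: "sets (Omega_star :: 'a::finite list measure) = Pow UNIV"
  using sets.sets_into_space[of _ "Omega_star :: 'a list measure"] by auto

lemma measurable_from_star: "f \<in> UNIV \<rightarrow> space N \<Longrightarrow> f \<in> measurable (Omega_star :: 'a::finite list measure) N"
  unfolding measurable_def by auto

definition psi_star :: "('a \<times> 'a list) + unit \<Rightarrow> 'a list" where
  "psi_star q = (case q of Inl p \<Rightarrow> fst p # snd p | Inr u \<Rightarrow> [])"

lemma psi_phi_star: "psi_star (phi_star w) = w"
  by (cases w) (auto simp: psi_star_def)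

lemma phi_psi_star: "phi_star (psi_star q) = q"
  by (cases q) (auto simp: psi_star_def)

lemma psi_star_pre1: "psi_star -` {[]} = {Inr ()}"
proof (intro set_eqI iffI)
  fix q :: "('a \<times> 'a list) + unit" assume "q \<in> psi_star -` {[]}" then show "q \<in> {Inr ()}"
    by (cases q) (auto simp: psi_star_def)
qed (auto simp: psi_star_def)

lemma psi_star_pre2: "psi_star -` {a # v} = Inl ` ({a} \<times> {v})"
proof (intro set_eqI iffI)
  fix q :: "('a \<times> 'a list) + unit" assume "q \<in> psi_star -` {a # v}" then show "q \<in> Inl ` ({a} \<times> {v})"
    by (cases q) (auto simp: psi_star_def)
qed (auto simp: psi_star_def)

lemmas psi_star_pre = psi_star_pre1 psi_star_pre2

lemma sp_Fs_star: "space (Fs (Omega_star :: 'a::finite list measure)) = UNIV" by (rule space_Fs_UNIV) simp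

lemma psi_star_meas: "psi_star \<in> measurable (Fs Omega_star :: ('a::finite \<times> 'a list + unit) measure) Omega_star"
proof (rule measurable_sigma_sets[OF sets_Omega_star S_star_closed])
  fix A :: "'a list set" assume "A \<in> S_star"
  then consider "A = {}" | u where "A = {u}" by (auto simp: S_star_def)
  then show "psi_star -` A \<inter> space (Fs Omega_star) \<in> sets (Fs Omega_star :: ('a \<times> 'a list + unit) measure)"
  proof cases
    case (2 u) show ?thesis
    proof (cases u)
      case Nil
      then have "psi_star -` A \<inter> space (Fs Omega_star) = {Inr ()}" unfolding 2 sp_Fs_star by (simp only: psi_star_pre Int_UNIV_right)
      then show ?thesis by (simp only: Inr_sets_Fs)
    next
      case (Cons a v)
      then have "psi_star -` A \<inter> space (Fs Omega_star) = Inl ` ({a} \<times> {v})" unfolding 2 sp_Fs_star by (simp only: psi_star_pre Int_UNIV_right)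
      then show ?thesis by (simp only: Inl_sets_Fs single_star_sets)
    qed
  qed simp
qed simp

lemma phi_star_meas: "phi_star \<in> measurable (Omega_star :: 'a::finite list measure) (Fs Omega_star)"
  by (rule measurable_from_star) (simp add: sp_Fs_star)

lemma star_eqI:
  fixes M N :: "'a::finite list measure"
  assumes "sets M = sets Omega_star" "sets N = sets Omega_star"
    and "\<And>u. emeasure M {u} = emeasure N {u}"
  shows "M = N"
  by (rule measure_eqI_countable[where A=UNIV]) (use assms in \<open>simp_all add: sets_Omega_star_Pow\<close>)

lemma SP_Fs_star: "SP (Fs (Omega_star :: 'a::finite list measure)) = subprob_algebra (Fs Omega_star)"
  by (rule SP_eq) (simp add: sp_Fs_star)

lemma SP_star: "SP (Omega_star :: 'a::finite list measure) = subprob_algebra Omega_star"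
  by (rule SP_eq) simp

lemma SP_Fs: "SP (Fs X) = subprob_algebra (Fs X)"
  by (rule SP_eq) (auto simp: space_Fs)

lemma kappa_star_meas: "kappa_star \<in> measurable (Omega_star :: 'a::finite list measure) (subprob_algebra (Fs Omega_star))"
proof -
  have "(\<lambda>w. return (Fs Omega_star) (phi_star w)) \<in> measurable (Omega_star :: 'a list measure) (subprob_algebra (Fs Omega_star))"
    by (rule measurable_compose[OF phi_star_meas return_measurable])
  then show ?thesis by (simp add: kappa_star_def[abs_def])
qed


lemma S_star_Int_stable: "Int_stable S_star"
  by (rule Int_stableI) (auto simp: S_star_def)

definition Fst :: "'x measure \<Rightarrow> ('x \<Rightarrow> (('a::finite \<times> 'x) + unit) measure) \<Rightarrow> 'x \<Rightarrow> real set" where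
  "Fst X \<alpha> x = (\<Union>u. {lo (ci X \<alpha> x) (di X \<alpha> x) u ..< lo (ci X \<alpha> x) (di X \<alpha> x) u + di X \<alpha> x u})"
definition Gs :: "'x measure \<Rightarrow> ('x \<Rightarrow> (('a::finite \<times> 'x) + unit) measure) \<Rightarrow> 'x \<Rightarrow> real \<Rightarrow> 'a list" where
  "Gs X \<alpha> x t = (case gw (ci X \<alpha> x) (di X \<alpha> x) t of Fin u \<Rightarrow> u | Inf _ \<Rightarrow> [])"
definition hs :: "'x measure \<Rightarrow> ('x \<Rightarrow> (('a::finite \<times> 'x) + unit) measure) \<Rightarrow> 'x \<Rightarrow> 'a list measure" where
  "hs X \<alpha> x = distr (restrict_space lborel (Fst X \<alpha> x)) Omega_star (Gs X \<alpha> x)"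

lemma Fst_borel: "Fst X \<alpha> x \<in> sets borel"
  unfolding Fst_def by (rule sets.countable_UN'') auto

context
  fixes X :: "'x measure" and \<alpha> :: "'x \<Rightarrow> (('a::finite \<times> 'x) + unit) measure"
  assumes \<alpha>S: "\<alpha> \<in> measurable X (SP (Fs X))"
begin

lemma s\<alpha>s: "\<alpha> \<in> measurable X (subprob_algebra (Fs X))" using \<alpha>S by (simp add: SP_Fs)
lemma s\<alpha>sets: "x \<in> space X \<Longrightarrow> sets (\<alpha> x) = sets (Fs X)" by (rule sets_kernel[OF s\<alpha>s])
lemma s\<alpha>ne: "x \<in> space X \<Longrightarrow> space (\<alpha> x) \<noteq> {}"
  using subprob_space.subprob_not_empty[OF subprob_space_kernel[OF s\<alpha>s]] .

lemma hom_eqs_st: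
  assumes h: "h \<in> measurable X (subprob_algebra (Omega_star :: 'a list measure))" and x: "x \<in> space X"
  shows "kcomp (SP (Fs Omega_star)) (Fs Omega_star) kappa_star h x = distr (h x) (Fs Omega_star) phi_star"
    and "kcomp (SP (Fs Omega_star)) (Fs Omega_star) (lift_s Omega_star h) \<alpha> x = bind (\<alpha> x) (lift_s Omega_star h)"
proof -
  have hs: "sets (h x) = sets Omega_star" "subprob_space (h x)"
    using sets_kernel[OF h x] subprob_space_kernel[OF h x] by auto
  have mh: "measurable (h x) = measurable Omega_star" using hs by (auto intro!: measurable_cong_sets)
  have ne: "space (h x) \<noteq> {}" using subprob_space.subprob_not_empty[OF hs(2)] .
  have "kcomp (SP (Fs Omega_star)) (Fs Omega_star) kappa_star h x = bind (h x) kappa_star"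
    unfolding SP_Fs_star
  proof (rule kcomp_bind[where f=h and x=x, OF _ _ measurable_emeasure_subprob_algebra ne])
    show "kappa_star \<in> measurable (h x) (subprob_algebra (Fs Omega_star))"
      unfolding mh by (rule kappa_star_meas)
    then show "kappa_star \<in> measurable (h x) (subprob_algebra (Fs Omega_star))" .
  qed
  also have "\<dots> = bind (h x) (\<lambda>w. return (Fs Omega_star) (phi_star w))"
    by (simp add: kappa_star_def[abs_def])
  also have "\<dots> = distr (h x) (Fs Omega_star) phi_star"
    by (rule bind_return_distr'[OF ne]) (simp add: mh phi_star_meas)
  finally show "kcomp (SP (Fs Omega_star)) (Fs Omega_star) kappa_star h x = distr (h x) (Fs Omega_star) phi_star" .
  have ma: "measurable (\<alpha> x) = measurable (Fs X)" using s\<alpha>sets[OF x] by (auto intro!: measurable_cong_sets)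
  show "kcomp (SP (Fs Omega_star)) (Fs Omega_star) (lift_s Omega_star h) \<alpha> x = bind (\<alpha> x) (lift_s Omega_star h)"
    unfolding SP_Fs_star
  proof (rule kcomp_bind[where f=\<alpha> and x=x, OF _ _ measurable_emeasure_subprob_algebra s\<alpha>ne[OF x]])
    show "lift_s Omega_star h \<in> measurable (\<alpha> x) (subprob_algebra (Fs Omega_star))"
      unfolding ma by (rule lift_s_meas[OF h])
    then show "lift_s Omega_star h \<in> measurable (\<alpha> x) (subprob_algebra (Fs Omega_star))" .
  qed
qed

lemma hom_vals_st:
  assumes hom: "is_hom (SP Omega_star) (Fs Omega_star) (SP (Fs Omega_star)) (lift_s Omega_star) X \<alpha> kappa_star h"
  shows "x \<in> space X \<Longrightarrow> emeasure (h x) {u} = tr_single X \<alpha> u x"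
proof (induction u arbitrary: x)
  have h: "h \<in> measurable X (subprob_algebra (Omega_star :: 'a list measure))"
    using hom by (simp add: is_hom_def SP_star)
  case Nil
  have eq: "distr (h x) (Fs Omega_star) phi_star = bind (\<alpha> x) (lift_s Omega_star h)"
    using hom Nil hom_eqs_st[OF h Nil] by (simp add: is_hom_def)
  have shx: "sets (h x) = sets Omega_star" using sets_kernel[OF h Nil] .
  have "emeasure (h x) {[]} =
      emeasure (distr (h x) (Fs Omega_star) phi_star) (psi_star -` {[]} \<inter> space (Fs Omega_star))"
    by (rule iso_eval[OF phi_star_meas psi_star_meas psi_phi_star shx single_star_sets])
  also have "\<dots> = emeasure (bind (\<alpha> x) (lift_s Omega_star h)) {Inr ()}"
    by (simp only: eq psi_star_pre sp_Fs_star Int_UNIV_right)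
  also have "\<dots> = tr_single X \<alpha> [] x"
    by (simp add: Bs_eval_Inr[OF s\<alpha>s h Nil])
  finally show ?case .
next
  have h: "h \<in> measurable X (subprob_algebra (Omega_star :: 'a list measure))"
    using hom by (simp add: is_hom_def SP_star)
  case (Cons a v)
  have eq: "distr (h x) (Fs Omega_star) phi_star = bind (\<alpha> x) (lift_s Omega_star h)"
    using hom Cons.prems hom_eqs_st[OF h Cons.prems] by (simp add: is_hom_def)
  have shx: "sets (h x) = sets Omega_star" using sets_kernel[OF h Cons.prems] .
  have "emeasure (h x) {a # v} =
      emeasure (distr (h x) (Fs Omega_star) phi_star) (psi_star -` {a # v} \<inter> space (Fs Omega_star))"
    by (rule iso_eval[OF phi_star_meas psi_star_meas psi_phi_star shx single_star_sets])
  also have "\<dots> = emeasure (bind (\<alpha> x) (lift_s Omega_star h)) (Inl ` ({a} \<times> {v}))"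
    by (simp only: eq psi_star_pre sp_Fs_star Int_UNIV_right)
  also have "\<dots> = (\<integral>\<^sup>+ y. emeasure (h y) {v} \<partial>Pa_s X \<alpha> a x)"
    by (rule Bs_eval[OF s\<alpha>s h Cons.prems single_star_sets])
  also have "\<dots> = (\<integral>\<^sup>+ y. tr_single X \<alpha> v y \<partial>Pa_s X \<alpha> a x)"
    by (intro nn_integral_cong) (simp add: Cons.IH)
  finally show ?case by simp
qed

lemma hom_unique_st:
  assumes "is_hom (SP Omega_star) (Fs Omega_star) (SP (Fs Omega_star)) (lift_s Omega_star) X \<alpha> kappa_star h"
    and "is_hom (SP Omega_star) (Fs Omega_star) (SP (Fs Omega_star)) (lift_s Omega_star) X \<alpha> kappa_star h'"
    and x: "x \<in> space X"
  shows "h x = h' x"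
proof (rule star_eqI)
  have h: "h \<in> measurable X (subprob_algebra (Omega_star :: 'a list measure))"
    "h' \<in> measurable X (subprob_algebra (Omega_star :: 'a list measure))"
    using assms by (simp_all add: is_hom_def SP_star)
  show "sets (h x) = sets Omega_star" "sets (h' x) = sets Omega_star"
    using sets_kernel[OF h(1) x] sets_kernel[OF h(2) x] by auto
  fix u
  show "emeasure (h x) {u} = emeasure (h' x) {u}"
    using hom_vals_st[OF assms(1) x] hom_vals_st[OF assms(2) x] by simp
qed


lemma st_fin: assumes x: "x \<in> space X"
  shows "tr_cyl_s X \<alpha> u x < top" "tr_single X \<alpha> u x < top"
    "tr_single X \<alpha> u x + (\<Sum>b\<in>UNIV. tr_cyl_s X \<alpha> (u @ [b]) x) \<le> tr_cyl_s X \<alpha> u x"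
proof -
  have le1: "tr_cyl_s X \<alpha> u x \<le> 1" by (rule s_cyl_le1[OF s\<alpha>s x])
  then show "tr_cyl_s X \<alpha> u x < top" by (auto simp: top_unique intro: le_less_trans[of _ 1])
  show le: "tr_single X \<alpha> u x + (\<Sum>b\<in>UNIV. tr_cyl_s X \<alpha> (u @ [b]) x) \<le> tr_cyl_s X \<alpha> u x"
    using s_split_le[OF s\<alpha>s x, of u] by blast
  have "tr_single X \<alpha> u x \<le> tr_single X \<alpha> u x + (\<Sum>b\<in>UNIV. tr_cyl_s X \<alpha> (u @ [b]) x)" by simp
  then have "tr_single X \<alpha> u x \<le> 1" using le le1 by (meson order_trans)
  then show "tr_single X \<alpha> u x < top" by (auto simp: top_unique intro: le_less_trans[of _ 1])
qed

lemma cs_intv: assumes x: "x \<in> space X" shows "intv (ci X \<alpha> x) (di X \<alpha> x)"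
proof
  fix u
  show "0 \<le> ci X \<alpha> x u" by (simp add: ci_def)
  show "0 \<le> di X \<alpha> x u" by (simp add: di_def)
  have fin: "tr_cyl_s X \<alpha> (u @ [b]) x < top" for b using st_fin(1)[OF x] .
  have S: "(\<Sum>b\<in>UNIV. ci X \<alpha> x (u @ [b])) = enn2real (\<Sum>b\<in>UNIV. tr_cyl_s X \<alpha> (u @ [b]) x)"
    unfolding ci_def by (subst enn2real_sum) (auto simp: fin)
  have T: "(\<Sum>b\<in>UNIV. tr_cyl_s X \<alpha> (u @ [b]) x) < top" using fin by simp
  have "di X \<alpha> x u + (\<Sum>b\<in>UNIV. ci X \<alpha> x (u @ [b])) = enn2real (tr_single X \<alpha> u x + (\<Sum>b\<in>UNIV. tr_cyl_s X \<alpha> (u @ [b]) x))"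
    unfolding S di_def by (rule enn2real_plus[OF st_fin(2)[OF x] T, symmetric])
  also have "\<dots> \<le> ci X \<alpha> x u"
    unfolding ci_def by (rule enn2real_mono[OF st_fin(3)[OF x] st_fin(1)[OF x]])
  finally show "di X \<alpha> x u + (\<Sum>b\<in>UNIV. ci X \<alpha> x (u @ [b])) \<le> ci X \<alpha> x u" .
qed (simp add: ci_def)

lemma Jsub_Fst: "{lo (ci X \<alpha> x) (di X \<alpha> x) u ..< lo (ci X \<alpha> x) (di X \<alpha> x) u + di X \<alpha> x u} \<subseteq> Fst X \<alpha> x"
  unfolding Fst_def by blast

lemma Gs_pre:
  assumes x: "x \<in> space X"
  shows "Gs X \<alpha> x -` {u} \<inter> space (restrict_space lborel (Fst X \<alpha> x)) = {lo (ci X \<alpha> x) (di X \<alpha> x) u ..< lo (ci X \<alpha> x) (di X \<alpha> x) u + di X \<alpha> x u}"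
    and "Fst X \<alpha> x \<subseteq> {0..<1}"
proof -
  interpret intv "ci X \<alpha> x" "di X \<alpha> x" by (rule cs_intv[OF x])
  have sp: "space (restrict_space lborel (Fst X \<alpha> x)) = Fst X \<alpha> x" by (simp add: space_restrict_space)
  show "Fst X \<alpha> x \<subseteq> {0..<1}" unfolding Fst_def using J_01 by blast
  show "Gs X \<alpha> x -` {u} \<inter> space (restrict_space lborel (Fst X \<alpha> x)) = J u"
  proof (intro set_eqI iffI)
    fix t assume t: "t \<in> Gs X \<alpha> x -` {u} \<inter> space (restrict_space lborel (Fst X \<alpha> x))"
    then have "t \<in> Fst X \<alpha> x" using sp by simp
    then obtain w where w: "t \<in> J w" unfolding Fst_def by blast
    then have "gw (ci X \<alpha> x) (di X \<alpha> x) t = Fin w" using R1 by blast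
    then have "w = u" using t by (simp add: Gs_def)
    then show "t \<in> J u" using w by simp
  next
    fix t assume t: "t \<in> J u"
    then have "gw (ci X \<alpha> x) (di X \<alpha> x) t = Fin u" using R1 by blast
    then show "t \<in> Gs X \<alpha> x -` {u} \<inter> space (restrict_space lborel (Fst X \<alpha> x))"
      using t Jsub_Fst[of x u] unfolding sp by (auto simp: Gs_def)
  qed
qed

lemma Fst_sets: "Fst X \<alpha> x \<inter> space lborel \<in> sets lborel" using Fst_borel by simp

lemma Gs_meas: assumes x: "x \<in> space X" shows "Gs X \<alpha> x \<in> measurable (restrict_space lborel (Fst X \<alpha> x)) Omega_star"
proof (rule measurable_sigma_sets[OF sets_Omega_star S_star_closed])
  fix A :: "'a list set" assume "A \<in> S_star"
  then consider "A = {}" | u where "A = {u}" by (auto simp: S_star_def)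
  then show "Gs X \<alpha> x -` A \<inter> space (restrict_space lborel (Fst X \<alpha> x)) \<in> sets (restrict_space lborel (Fst X \<alpha> x))"
  proof cases
    case (2 u) show ?thesis unfolding 2 Gs_pre(1)[OF x] sets_restrict_space_iff[OF Fst_sets]
      using Jsub_Fst by simp
  qed simp
qed simp

lemma sets_hs[simp]: "sets (hs X \<alpha> x) = sets Omega_star" by (simp add: hs_def)

lemma hs_vals: assumes x: "x \<in> space X" shows "emeasure (hs X \<alpha> x) {u} = tr_single X \<alpha> u x"
proof -
  have "emeasure (hs X \<alpha> x) {u} = emeasure (restrict_space lborel (Fst X \<alpha> x)) (Gs X \<alpha> x -` {u} \<inter> space (restrict_space lborel (Fst X \<alpha> x)))"
    unfolding hs_def by (rule emeasure_distr[OF Gs_meas[OF x] single_star_sets])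
  also have "\<dots> = emeasure lborel {lo (ci X \<alpha> x) (di X \<alpha> x) u ..< lo (ci X \<alpha> x) (di X \<alpha> x) u + di X \<alpha> x u}"
    unfolding Gs_pre(1)[OF x] by (rule emeasure_restrict_space[OF Fst_sets Jsub_Fst])
  also have "\<dots> = tr_single X \<alpha> u x" by (simp add: di_def st_fin[OF x])
  finally show ?thesis .
qed

lemma hs_sub: assumes x: "x \<in> space X" shows "subprob_space (hs X \<alpha> x)"
proof
  have "emeasure (hs X \<alpha> x) (space (hs X \<alpha> x)) = emeasure (restrict_space lborel (Fst X \<alpha> x)) (Gs X \<alpha> x -` UNIV \<inter> space (restrict_space lborel (Fst X \<alpha> x)))"
    unfolding hs_def by (simp add: emeasure_distr[OF Gs_meas[OF x]])
  also have "\<dots> = emeasure lborel (Fst X \<alpha> x)"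
    by (simp add: space_restrict_space emeasure_restrict_space[OF Fst_sets])
  also have "\<dots> \<le> emeasure lborel {0..<(1::real)}"
    by (rule emeasure_mono[OF Gs_pre(2)[OF x]]) simp
  also have "\<dots> = 1" by simp
  finally show "emeasure (hs X \<alpha> x) (space (hs X \<alpha> x)) \<le> 1" .
  show "space (hs X \<alpha> x) \<noteq> {}" by (simp add: hs_def)
qed

lemma hs_meas: "hs X \<alpha> \<in> measurable X (subprob_algebra Omega_star)"
proof (rule measurable_subprob_algebra_generated[OF sets_Omega_star S_star_Int_stable S_star_closed])
  fix x assume "x \<in> space X" then show "subprob_space (hs X \<alpha> x)" "sets (hs X \<alpha> x) = sets Omega_star"
    by (simp_all add: hs_sub)
next
  fix A :: "'a list set" assume "A \<in> S_star"
  then consider "A = {}" | u where "A = {u}" by (auto simp: S_star_def)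
  then show "(\<lambda>x. emeasure (hs X \<alpha> x) A) \<in> borel_measurable X"
  proof cases
    case (2 u) then show ?thesis
      by (subst measurable_cong[where g="\<lambda>x. tr_single X \<alpha> u x"]) (simp_all add: hs_vals s_meas_single[OF s\<alpha>s])
  qed simp
next
  interpret sf: sigma_finite_measure "count_space (UNIV :: 'a list set)"
    by (rule sigma_finite_measure_count_space_countable) simp
  have "(\<lambda>p. tr_single X \<alpha> (snd p) (fst p)) \<in> borel_measurable (X \<Otimes>\<^sub>M count_space (UNIV :: 'a list set))"
    by (rule measurable_compose_countable[where f="\<lambda>u p. tr_single X \<alpha> u (fst p)" and g=snd])
       (auto intro: measurable_compose[OF measurable_fst s_meas_single[OF s\<alpha>s]])
  then have "(\<lambda>x. \<integral>\<^sup>+ u. tr_single X \<alpha> u x \<partial>count_space (UNIV :: 'a list set)) \<in> borel_measurable X"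
    by (intro sf.borel_measurable_nn_integral) (simp add: case_prod_beta')
  moreover have "emeasure (hs X \<alpha> x) UNIV = (\<integral>\<^sup>+ u. tr_single X \<alpha> u x \<partial>count_space (UNIV :: 'a list set))"
    if x: "x \<in> space X" for x
  proof -
    have "emeasure (hs X \<alpha> x) UNIV = (\<integral>\<^sup>+ u. emeasure (hs X \<alpha> x) {u} \<partial>count_space UNIV)"
      by (rule emeasure_countable_singleton) simp_all
    also have "\<dots> = (\<integral>\<^sup>+ u. tr_single X \<alpha> u x \<partial>count_space (UNIV :: 'a list set))"
      by (simp add: hs_vals[OF x])
    finally show ?thesis .
  qed
  ultimately show "(\<lambda>x. emeasure (hs X \<alpha> x) UNIV) \<in> borel_measurable X"
    by (subst measurable_cong[where g="\<lambda>x. \<integral>\<^sup>+ u. tr_single X \<alpha> u x \<partial>count_space (UNIV :: 'a list set)"]) simp_all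
qed

lemma hs_hom: "is_hom (SP Omega_star) (Fs Omega_star) (SP (Fs Omega_star)) (lift_s Omega_star) X \<alpha> kappa_star (hs X \<alpha>)"
  unfolding is_hom_def
proof (intro conjI ballI)
  show "hs X \<alpha> \<in> measurable X (SP Omega_star)" by (simp add: SP_star hs_meas)
  fix x assume x: "x \<in> space X"
  let ?B = "bind (\<alpha> x) (lift_s Omega_star (hs X \<alpha>))"
  have lm: "lift_s Omega_star (hs X \<alpha>) \<in> measurable (Fs X) (subprob_algebra (Fs (Omega_star :: 'a list measure)))"
    by (rule lift_s_meas[OF hs_meas])
  have sB: "sets ?B = sets (Fs (Omega_star :: 'a list measure))"
  proof (rule sets_bind[OF _ s\<alpha>ne[OF x]])
    fix y assume "y \<in> space (\<alpha> x)"
    then have "y \<in> space (Fs X)" using sets_eq_imp_space_eq[OF s\<alpha>sets[OF x]] by simp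
    then show "sets (lift_s Omega_star (hs X \<alpha>) y) = sets (Fs Omega_star)"
      by (rule sets_kernel[OF lm])
  qed
  have spB: "space ?B = UNIV" using sets_eq_imp_space_eq[OF sB] sp_Fs_star by simp
  have psiB: "psi_star \<in> measurable ?B Omega_star"
    using psi_star_meas sB by (simp cong: measurable_cong_sets)
  have dB: "emeasure (distr ?B Omega_star psi_star) S = emeasure ?B (psi_star -` S)" for S
    using emeasure_distr[OF psiB all_star_sets[of S]] spB by simp
  have hx: "hs X \<alpha> x = distr ?B Omega_star psi_star"
  proof (rule star_eqI)
    show "sets (hs X \<alpha> x) = sets Omega_star" "sets (distr ?B Omega_star psi_star) = sets Omega_star" by simp_all
    fix u
    show "emeasure (hs X \<alpha> x) {u} = emeasure (distr ?B Omega_star psi_star) {u}"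
    proof (cases u)
      case Nil
      have "emeasure (hs X \<alpha> x) {u} = emeasure (\<alpha> x) {Inr ()}"
        using Nil hs_vals[OF x] by simp
      also have "\<dots> = emeasure ?B {Inr ()}" by (rule Bs_eval_Inr[OF s\<alpha>s hs_meas x, symmetric])
      also have "\<dots> = emeasure (distr ?B Omega_star psi_star) {u}"
        using Nil by (simp only: dB psi_star_pre)
      finally show ?thesis .
    next
      case (Cons a v)
      have "emeasure (hs X \<alpha> x) {u} = (\<integral>\<^sup>+ y. tr_single X \<alpha> v y \<partial>Pa_s X \<alpha> a x)"
        using Cons hs_vals[OF x] by simp
      also have "\<dots> = (\<integral>\<^sup>+ y. emeasure (hs X \<alpha> y) {v} \<partial>Pa_s X \<alpha> a x)"
        by (intro nn_integral_cong) (simp add: hs_vals)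
      also have "\<dots> = emeasure ?B (Inl ` ({a} \<times> {v}))"
        by (rule Bs_eval[OF s\<alpha>s hs_meas x single_star_sets, symmetric])
      also have "\<dots> = emeasure (distr ?B Omega_star psi_star) {u}"
        using Cons by (simp only: dB psi_star_pre)
      finally show ?thesis .
    qed
  qed
  have "distr (hs X \<alpha> x) (Fs Omega_star) phi_star = ?B"
    by (rule iso_distr[OF phi_star_meas psi_star_meas phi_psi_star sB hx])
  then show "kcomp (SP (Fs Omega_star)) (Fs Omega_star) kappa_star (hs X \<alpha>) x =
      kcomp (SP (Fs Omega_star)) (Fs Omega_star) (lift_s Omega_star (hs X \<alpha>)) \<alpha> x"
    using hom_eqs_st[OF hs_meas x] by simp
qed

end

lemma type_star:
  fixes X :: "'x measure" and \<alpha>s :: "'x \<Rightarrow> (('a::finite \<times> 'x) + unit) measure"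
  shows "(kappa_star \<in> measurable Omega_star (SP (Fs Omega_star :: (('a \<times> 'a list) + unit) measure)) \<and>
      (\<alpha>s \<in> measurable X (SP (Fs X)) \<longrightarrow>
        (\<exists>h. is_hom (SP Omega_star) (Fs Omega_star) (SP (Fs Omega_star)) (lift_s Omega_star) X \<alpha>s kappa_star h) \<and>
        (\<forall>h h'. is_hom (SP Omega_star) (Fs Omega_star) (SP (Fs Omega_star)) (lift_s Omega_star) X \<alpha>s kappa_star h \<and>
                is_hom (SP Omega_star) (Fs Omega_star) (SP (Fs Omega_star)) (lift_s Omega_star) X \<alpha>s kappa_star h'
                \<longrightarrow> (\<forall>x\<in>space X. h x = h' x)) \<and>
        (\<forall>h. is_hom (SP Omega_star) (Fs Omega_star) (SP (Fs Omega_star)) (lift_s Omega_star) X \<alpha>s kappa_star h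
              \<longrightarrow> (\<forall>x\<in>space X. \<forall>u. emeasure (h x) {u} = tr_single X \<alpha>s u x))))"
proof (intro conjI impI allI ballI)
  show "kappa_star \<in> measurable Omega_star (SP (Fs Omega_star :: (('a \<times> 'a list) + unit) measure))"
    by (simp add: SP_Fs_star kappa_star_meas)
  assume a: "\<alpha>s \<in> measurable X (SP (Fs X))"
  show "\<exists>h. is_hom (SP Omega_star) (Fs Omega_star) (SP (Fs Omega_star)) (lift_s Omega_star) X \<alpha>s kappa_star h"
    using hs_hom[OF a] by blast
  fix h h' x
  assume "is_hom (SP Omega_star) (Fs Omega_star) (SP (Fs Omega_star)) (lift_s Omega_star) X \<alpha>s kappa_star h \<and>
                is_hom (SP Omega_star) (Fs Omega_star) (SP (Fs Omega_star)) (lift_s Omega_star) X \<alpha>s kappa_star h'"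
    "x \<in> space X"
  then show "h x = h' x" using hom_unique_st[OF a] by blast
next
  fix h x u
  assume a: "\<alpha>s \<in> measurable X (SP (Fs X))"
    and "is_hom (SP Omega_star) (Fs Omega_star) (SP (Fs Omega_star)) (lift_s Omega_star) X \<alpha>s kappa_star h" "x \<in> space X"
  then show "emeasure (h x) {u} = tr_single X \<alpha>s u x" using hom_vals_st[OF a] by blast
qed


lemma space_Omega0[simp]: "space Omega0 = {}"
  unfolding Omega0_def by (simp add: space_measure_of_conv)

lemma space_Fp0[simp]: "space (Fp Omega0) = {}"
  unfolding Fp_def by (simp add: space_pair_measure)

lemma kmu_empty: assumes "space Z = {}" shows "kmu Z Q = kmu Z Q'"
proof (rule measure_eqI)
  show "sets (kmu Z Q) = sets (kmu Z Q')" unfolding kmu_def by simp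
  fix A assume "A \<in> sets (kmu Z Q)"
  then have "A \<subseteq> space (kmu Z Q)" by (rule sets.sets_into_space)
  then have "A = {}" unfolding kmu_def using assms by (simp add: space_measure_of_conv)
  then show "emeasure (kmu Z Q) A = emeasure (kmu Z Q') A" by simp
qed

lemma type0:
  fixes X :: "'x measure" and \<alpha>0 :: "'x \<Rightarrow> ('a::finite \<times> 'x) measure"
  shows "(kappa0 \<in> measurable Omega0 (SP (Fp Omega0 :: ('a \<times> unit) measure)) \<and>
      (\<alpha>0 \<in> measurable X (SP (Fp X)) \<longrightarrow>
        (\<exists>h. is_hom (SP Omega0) (Fp Omega0) (SP (Fp Omega0)) lift_p X \<alpha>0 kappa0 h) \<and>
        (\<forall>h h'. is_hom (SP Omega0) (Fp Omega0) (SP (Fp Omega0)) lift_p X \<alpha>0 kappa0 h \<and>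
                is_hom (SP Omega0) (Fp Omega0) (SP (Fp Omega0)) lift_p X \<alpha>0 kappa0 h'
                \<longrightarrow> (\<forall>x\<in>space X. h x = h' x))))"
proof (intro conjI impI allI)
  show "kappa0 \<in> measurable Omega0 (SP (Fp Omega0 :: ('a \<times> unit) measure))"
    unfolding measurable_def by simp
  let ?n = "null_measure Omega0"
  have n: "?n \<in> space (SP Omega0)" by (simp add: space_SP)
  have kc: "kcomp T (Fp Omega0 :: ('a \<times> unit) measure) f g x = kcomp T (Fp Omega0) f' g' x" for T f g f' g' x
    unfolding kcomp_def by (rule kmu_empty) simp
  show "\<exists>h. is_hom (SP Omega0) (Fp Omega0) (SP (Fp Omega0)) lift_p X \<alpha>0 (kappa0 :: _ \<Rightarrow> ('a \<times> unit) measure) h"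
    by (rule exI[of _ "\<lambda>_. ?n"]) (auto simp: is_hom_def intro: kc measurable_const[OF n])
  fix h h' assume "is_hom (SP Omega0) (Fp Omega0) (SP (Fp Omega0)) lift_p X \<alpha>0 (kappa0 :: _ \<Rightarrow> ('a \<times> unit) measure) h \<and>
                is_hom (SP Omega0) (Fp Omega0) (SP (Fp Omega0)) lift_p X \<alpha>0 (kappa0 :: _ \<Rightarrow> ('a \<times> unit) measure) h'"
  then have m: "h \<in> measurable X (SP Omega0)" "h' \<in> measurable X (SP Omega0)" by (auto simp: is_hom_def)
  show "\<forall>x\<in>space X. h x = h' x"
  proof
    fix x assume x: "x \<in> space X"
    have s: "sets (h x) = sets Omega0" "sets (h' x) = sets Omega0"
      using measurable_space[OF m(1) x] measurable_space[OF m(2) x] by (auto simp: space_SP)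
    show "h x = h' x"
    proof (rule measure_eqI)
      show "sets (h x) = sets (h' x)" using s by simp
      fix A assume "A \<in> sets (h x)"
      then have "A \<subseteq> space (h x)" by (rule sets.sets_into_space)
      then have "A = {}" using sets_eq_imp_space_eq[OF s(1)] by simp
      then show "emeasure (h x) A = emeasure (h' x) A" by simp
    qed
  qed
qed


theorem mainTheorem1:
  fixes X :: "'x measure"
    and \<alpha>0 :: "'x \<Rightarrow> ('a::finite \<times> 'x) measure"
    and \<alpha>s :: "'x \<Rightarrow> (('a \<times> 'x) + unit) measure"
    and \<alpha>w :: "'x \<Rightarrow> ('a \<times> 'x) measure"
    and \<alpha>i :: "'x \<Rightarrow> (('a \<times> 'x) + unit) measure"
  shows
    \<comment> \<open>type 0\<close>
    "(kappa0 \<in> measurable Omega0 (SP (Fp Omega0 :: ('a \<times> unit) measure)) \<and>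
      (\<alpha>0 \<in> measurable X (SP (Fp X)) \<longrightarrow>
        (\<exists>h. is_hom (SP Omega0) (Fp Omega0) (SP (Fp Omega0)) lift_p X \<alpha>0 kappa0 h) \<and>
        (\<forall>h h'. is_hom (SP Omega0) (Fp Omega0) (SP (Fp Omega0)) lift_p X \<alpha>0 kappa0 h \<and>
                is_hom (SP Omega0) (Fp Omega0) (SP (Fp Omega0)) lift_p X \<alpha>0 kappa0 h'
                \<longrightarrow> (\<forall>x\<in>space X. h x = h' x)))) \<and>
    \<comment> \<open>type *\<close>
     (kappa_star \<in> measurable Omega_star (SP (Fs Omega_star :: (('a \<times> 'a list) + unit) measure)) \<and>
      (\<alpha>s \<in> measurable X (SP (Fs X)) \<longrightarrow>
        (\<exists>h. is_hom (SP Omega_star) (Fs Omega_star) (SP (Fs Omega_star)) (lift_s Omega_star) X \<alpha>s kappa_star h) \<and>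
        (\<forall>h h'. is_hom (SP Omega_star) (Fs Omega_star) (SP (Fs Omega_star)) (lift_s Omega_star) X \<alpha>s kappa_star h \<and>
                is_hom (SP Omega_star) (Fs Omega_star) (SP (Fs Omega_star)) (lift_s Omega_star) X \<alpha>s kappa_star h'
                \<longrightarrow> (\<forall>x\<in>space X. h x = h' x)) \<and>
        (\<forall>h. is_hom (SP Omega_star) (Fs Omega_star) (SP (Fs Omega_star)) (lift_s Omega_star) X \<alpha>s kappa_star h
              \<longrightarrow> (\<forall>x\<in>space X. \<forall>u. emeasure (h x) {u} = tr_single X \<alpha>s u x)))) \<and>
    \<comment> \<open>type omega\<close>
     (kappa_omega \<in> measurable Omega_omega (PP (Fp Omega_omega :: ('a \<times> 'a stream) measure)) \<and>
      (\<alpha>w \<in> measurable X (PP (Fp X)) \<longrightarrow>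
        (\<exists>h. is_hom (PP Omega_omega) (Fp Omega_omega) (PP (Fp Omega_omega)) lift_p X \<alpha>w kappa_omega h) \<and>
        (\<forall>h h'. is_hom (PP Omega_omega) (Fp Omega_omega) (PP (Fp Omega_omega)) lift_p X \<alpha>w kappa_omega h \<and>
                is_hom (PP Omega_omega) (Fp Omega_omega) (PP (Fp Omega_omega)) lift_p X \<alpha>w kappa_omega h'
                \<longrightarrow> (\<forall>x\<in>space X. h x = h' x)) \<and>
        (\<forall>h. is_hom (PP Omega_omega) (Fp Omega_omega) (PP (Fp Omega_omega)) lift_p X \<alpha>w kappa_omega h
              \<longrightarrow> (\<forall>x\<in>space X. \<forall>u. emeasure (h x) (C_omega u) = tr_cyl_p X \<alpha>w u x)))) \<and>
    \<comment> \<open>type infinity\<close>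
     (kappa_inf \<in> measurable Omega_inf (PP (Fs Omega_inf :: (('a \<times> 'a iword) + unit) measure)) \<and>
      (\<alpha>i \<in> measurable X (PP (Fs X)) \<longrightarrow>
        (\<exists>h. is_hom (PP Omega_inf) (Fs Omega_inf) (PP (Fs Omega_inf)) (lift_s Omega_inf) X \<alpha>i kappa_inf h) \<and>
        (\<forall>h h'. is_hom (PP Omega_inf) (Fs Omega_inf) (PP (Fs Omega_inf)) (lift_s Omega_inf) X \<alpha>i kappa_inf h \<and>
                is_hom (PP Omega_inf) (Fs Omega_inf) (PP (Fs Omega_inf)) (lift_s Omega_inf) X \<alpha>i kappa_inf h'
                \<longrightarrow> (\<forall>x\<in>space X. h x = h' x)) \<and>
        (\<forall>h. is_hom (PP Omega_inf) (Fs Omega_inf) (PP (Fs Omega_inf)) (lift_s Omega_inf) X \<alpha>i kappa_inf h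
              \<longrightarrow> (\<forall>x\<in>space X. (\<forall>u. emeasure (h x) {Fin u} = tr_single X \<alpha>i u x) \<and>
                                 (\<forall>u. emeasure (h x) (C_inf u) = tr_cyl_s X \<alpha>i u x)))))"
  by (rule conjI[OF type0 conjI[OF type_star conjI[OF type_omega type_inf]]])

end
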